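(* Let $\Gamma_1$ be a represented pointclass, let $\Gamma_2$ be the closure of $\Gamma_1$ under finite unions, rescaling, and union with clopen sets (with the induced representation), and let $\Gamma=\Gamma_2\cup\overline{\Gamma_2}$; assume $\Gamma_1$ and $\Gamma$ satisfy the standing assumptions. Then $\mathrm{FindWS}_{\Gamma_1}^*\times\mathrm{Win}_{\Gamma_1}^*\leq_W\mathrm{NE}^{ap}_\Gamma$.
   Context: $f\leq_W g$ iff there are computable partial $K,H$ on $\mathbb{N}^\mathbb{N}$ such that for every realizer $G$ of $g$, $p\mapsto K(\langle p,G(H(p))\rangle)$ realizes $f$. $\times$ is the product; $f^*$: $f^0=\mathrm{id}$, $f^{n+1}=f\times f^n$, $f^*(n,x)=f^n(x)$. Rescaling: $(w,A)\mapsto\{wp\mid p\in A\}$. $\overline{\Delta}=\{U^C\mid U\in\Delta\}$; a union of represented classes is named by a tag and a name in the respective class. Games: infinite sequential games with choices $\{0,1\}$, players, turn function $d:\{0,1\}^*\to A$, outcomes $O$, valuation $v$, preferences with well-founded inverses; strategy profiles $s:\{0,1\}^*\to\{0,1\}$; induced play $p_n=s(p_{<n})$; Nash equilibrium: no player can unilaterally switch strategy to get a strictly preferred outcome. Named by numbers of players/outcomes, $d$ and preferences as tables, and for each player $a$ and upper set $U$ w.r.t. $\prec_a$ a $\Gamma$-name of $v^{-1}(U)$. Win/lose games: two players, outcomes $w_1,w_2$, player $i$ prefers $w_i$. $\mathrm{Win}_\Delta$: input a win/lose game with player-1 winning set given by a $\Delta$-name; output which player has a winning strategy. $\mathrm{FindWS}_\Delta$: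 same input restricted to games where player 1 has a winning strategy; output a profile in which one strategy is winning. $\mathrm{NE}^{ap}_\Gamma$: input a two-player game with finitely many outcomes and linear antagonistic preferences; output a Nash equilibrium. Standing assumptions on a pointclass: determinacy of its win/lose games; contains $\emptyset,\{0,1\}^\mathbb{N}$; uniformly computable closure under rescaling and its inverse and intersection with clopens. *)

theory Defs
  imports Main "HOL-Library.Nat_Bijection"
begin

type_synonym baire = "nat \<Rightarrow> nat"
type_synonym cantor = "nat \<Rightarrow> bool"

definition pair_b :: "baire \<Rightarrow> baire \<Rightarrow> baire" where
  "pair_b p q = (\<lambda>n. if even n then p (n div 2) else q (n div 2))"
definition fst_b :: "baire \<Rightarrow> baire" where "fst_b p = (\<lambda>n. p (2 * n))"
definition snd_b :: "baire \<Rightarrow> baire" where "snd_b p = (\<lambda>n. p (2 * n + 1))"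

definition comp_b :: "baire \<Rightarrow> nat \<Rightarrow> baire" where
  "comp_b p i = (\<lambda>n. p (prod_encode (i, n)))"

definition wcode :: "bool list \<Rightarrow> nat" where
  "wcode w = list_encode (map (\<lambda>b. if b then 1 else 0) w)"
definition wdecode :: "nat \<Rightarrow> bool list" where
  "wdecode n = map (\<lambda>k. k \<noteq> 0) (list_decode n)"

inductive recfn :: "nat \<Rightarrow> (nat list \<Rightarrow> nat) \<Rightarrow> bool" where
  rf_zero: "recfn n (\<lambda>_. 0)"
| rf_succ: "recfn 1 (\<lambda>xs. Suc (hd xs))"
| rf_proj: "i < n \<Longrightarrow> recfn n (\<lambda>xs. xs ! i)"
| rf_comp: "recfn m g \<Longrightarrow> length fs = m \<Longrightarrow> (\<forall>i<m. recfn n (fs ! i))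
            \<Longrightarrow> recfn n (\<lambda>xs. g (map (\<lambda>f. f xs) fs))"
| rf_prim: "recfn n g \<Longrightarrow> recfn (Suc (Suc n)) h
            \<Longrightarrow> recfn (Suc n) (\<lambda>ys. case ys of [] \<Rightarrow> 0
                   | y # xs \<Rightarrow> rec_nat (g xs) (\<lambda>k r. h (k # r # xs)) y)"
| rf_min: "recfn (Suc n) g \<Longrightarrow> (\<forall>xs. length xs = n \<longrightarrow> (\<exists>y. g (y # xs) = 0))
            \<Longrightarrow> recfn n (\<lambda>xs. LEAST y. g (y # xs) = 0)"

definition total_rec1 :: "(nat \<Rightarrow> nat) \<Rightarrow> bool" where
  "total_rec1 h \<longleftrightarrow> (\<exists>f. recfn 1 f \<and> (\<forall>x. h x = f [x]))"

text \<open>A partial function on Baire space is computable if it is computed (on its domain)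
  by a computable Kleene associate h: the n-th output digit is read off from the first
  prefix of the input on which h (queried with n) is nonzero.\<close>
definition comp_partial :: "(baire \<Rightarrow> baire option) \<Rightarrow> bool" where
  "comp_partial F \<longleftrightarrow> (\<exists>h. total_rec1 h \<and>
     (\<forall>p q. F p = Some q \<longrightarrow> (\<forall>n. \<exists>k.
        h (prod_encode (n, list_encode (map p [0..<k]))) = Suc (q n) \<and>
        (\<forall>j<k. h (prod_encode (n, list_encode (map p [0..<j]))) = 0))))"

text \<open>A problem is given on names: f p is the set of admissible output names;
  p is in the domain iff f p is nonempty.\<close>
type_synonym problem = "baire \<Rightarrow> baire set"

definition realizes :: "(baire \<Rightarrow> baire option) \<Rightarrow> problem \<Rightarrow> bool" where
  "realizes G f \<longleftrightarrow> (\<forall>p. f p \<noteq> {} \<longrightarrow> (\<exists>q. G p = Some q \<and> q \<in> f p))"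

definition wred :: "problem \<Rightarrow> problem \<Rightarrow> bool" (infix "\<le>\<^sub>W" 50) where
  "f \<le>\<^sub>W g \<longleftrightarrow> (\<exists>K H. comp_partial K \<and> comp_partial H \<and>
     (\<forall>G. realizes G g \<longrightarrow>
        realizes (\<lambda>p. case H p of None \<Rightarrow> None
                     | Some r \<Rightarrow> (case G r of None \<Rightarrow> None | Some s \<Rightarrow> K (pair_b p s))) f))"

definition prod_p :: "problem \<Rightarrow> problem \<Rightarrow> problem" where
  "prod_p f g = (\<lambda>p. {pair_b q r | q r. q \<in> f (fst_b p) \<and> r \<in> g (snd_b p)})"

fun pow_p :: "problem \<Rightarrow> nat \<Rightarrow> problem" where
  "pow_p f 0 = (\<lambda>p. {p})"
| "pow_p f (Suc n) = prod_p f (pow_p f n)"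

text \<open>f^*(n,x) = f^n(x): the name starts with n, followed by a name of x.\<close>
definition star_p :: "problem \<Rightarrow> problem" where
  "star_p f = (\<lambda>p. pow_p f (p 0) (\<lambda>k. p (Suc k)))"

text \<open>A represented pointclass is given by its (partial) representation; the class is its range.\<close>
type_synonym pcls = "baire \<Rightarrow> cantor set option"

definition cls :: "pcls \<Rightarrow> cantor set set" where
  "cls \<delta> = {A. \<exists>p. \<delta> p = Some A}"

definition cat :: "bool list \<Rightarrow> cantor \<Rightarrow> cantor" where
  "cat w y = (\<lambda>n. if n < length w then w ! n else y (n - length w))"

definition resc :: "bool list \<Rightarrow> cantor set \<Rightarrow> cantor set" where
  "resc w A = {cat w y | y. y \<in> A}"

definition unresc :: "bool list \<Rightarrow> cantor set \<Rightarrow> cantor set" where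
  "unresc w A = {y. cat w y \<in> A}"

definition cyl :: "bool list \<Rightarrow> cantor set" where
  "cyl w = {x. \<forall>i<length w. x i = w ! i}"

definition clopen_code :: "nat \<Rightarrow> cantor set" where
  "clopen_code c = (\<Union>w\<in>set (list_decode c). cyl (wdecode w))"

text \<open>Players are 1..np, outcomes 1..no. A turn function d maps finite histories to players.
  A strategy profile maps histories to moves.\<close>
fun hist :: "(bool list \<Rightarrow> bool) \<Rightarrow> nat \<Rightarrow> bool list" where
  "hist s 0 = []"
| "hist s (Suc n) = hist s n @ [s (hist s n)]"

definition play :: "(bool list \<Rightarrow> bool) \<Rightarrow> cantor" where
  "play s = (\<lambda>n. s (hist s n))"

text \<open>pref a oo oo' means: player a strictly prefers oo' to oo.\<close>
definition nash :: "nat \<Rightarrow> (bool list \<Rightarrow> nat) \<Rightarrow> (nat \<Rightarrow> nat \<Rightarrow> nat \<Rightarrow> bool)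
                    \<Rightarrow> (cantor \<Rightarrow> nat) \<Rightarrow> (bool list \<Rightarrow> bool) \<Rightarrow> bool" where
  "nash np d pref v s \<longleftrightarrow> (\<forall>a\<in>{1..np}. \<forall>s'.
      \<not> pref a (v (play s)) (v (play (\<lambda>h. if d h = a then s' h else s h))))"

definition win1 :: "(bool list \<Rightarrow> nat) \<Rightarrow> cantor set \<Rightarrow> (bool list \<Rightarrow> bool) \<Rightarrow> bool" where
  "win1 d W \<sigma> \<longleftrightarrow> (\<forall>\<tau>. play (\<lambda>h. if d h = 1 then \<sigma> h else \<tau> h) \<in> W)"

definition win2 :: "(bool list \<Rightarrow> nat) \<Rightarrow> cantor set \<Rightarrow> (bool list \<Rightarrow> bool) \<Rightarrow> bool" where
  "win2 d W \<sigma> \<longleftrightarrow> (\<forall>\<tau>. play (\<lambda>h. if d h = 2 then \<sigma> h else \<tau> h) \<notin> W)"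

definition determined :: "(bool list \<Rightarrow> nat) \<Rightarrow> cantor set \<Rightarrow> bool" where
  "determined d W \<longleftrightarrow> (\<exists>\<sigma>. win1 d W \<sigma>) \<or> (\<exists>\<sigma>. win2 d W \<sigma>)"

definition standing :: "pcls \<Rightarrow> bool" where
  "standing \<delta> \<longleftrightarrow>
     (\<forall>d W. (\<forall>h. d h \<in> {1, 2}) \<longrightarrow> W \<in> cls \<delta> \<longrightarrow> determined d W) \<and>
     {} \<in> cls \<delta> \<and> UNIV \<in> cls \<delta> \<and>
     (\<exists>K. comp_partial K \<and> (\<forall>w p A. \<delta> p = Some A \<longrightarrow>
        (\<exists>q. K (pair_b (\<lambda>_. wcode w) p) = Some q \<and> \<delta> q = Some (resc w A)))) \<and>
     (\<exists>K. comp_partial K \<and> (\<forall>w p A. \<delta> p = Some A \<longrightarrow>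
        (\<exists>q. K (pair_b (\<lambda>_. wcode w) p) = Some q \<and> \<delta> q = Some (unresc w A)))) \<and>
     (\<exists>K. comp_partial K \<and> (\<forall>c p A. \<delta> p = Some A \<longrightarrow>
        (\<exists>q. K (pair_b (\<lambda>_. c) p) = Some q \<and> \<delta> q = Some (A \<inter> clopen_code c))))"

text \<open>Closure of \<delta>1 under finite unions, rescaling and union with clopens, in normal form
  C \<union> (w_0 A_0) \<union> ... \<union> (w_{n-1} A_{n-1}); a name lists n, the clopen code of C,
  the codes of the words w_i and \<delta>1-names of the A_i.\<close>
definition gamma2 :: "pcls \<Rightarrow> pcls" where
  "gamma2 \<delta> q = (if \<forall>i<comp_b q 0 0. \<delta> (comp_b (comp_b q 3) i) \<noteq> None
     then Some (clopen_code (comp_b q 1 0) \<union>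
          (\<Union>i<comp_b q 0 0. resc (wdecode (comp_b q 2 i)) (the (\<delta> (comp_b (comp_b q 3) i)))))
     else None)"

definition pc_compl :: "pcls \<Rightarrow> pcls" where
  "pc_compl \<delta> q = map_option uminus (\<delta> q)"

text \<open>Union of represented classes: a tag followed by a name in the respective class.\<close>
definition pc_union :: "pcls \<Rightarrow> pcls \<Rightarrow> pcls" where
  "pc_union \<delta>1 \<delta>2 q = (if q 0 = 0 then \<delta>1 (\<lambda>k. q (Suc k))
                      else if q 0 = 1 then \<delta>2 (\<lambda>k. q (Suc k)) else None)"

definition gamma_full :: "pcls \<Rightarrow> pcls" where
  "gamma_full \<delta> = pc_union (gamma2 \<delta>) (pc_compl (gamma2 \<delta>))"

definition prof_name :: "baire \<Rightarrow> bool" where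
  "prof_name q \<longleftrightarrow> (\<forall>w. q (wcode w) \<in> {0, 1})"

definition prof_of :: "baire \<Rightarrow> bool list \<Rightarrow> bool" where
  "prof_of q = (\<lambda>w. q (wcode w) = 1)"

text \<open>Input of Win/FindWS: a table of the turn function (values in {1,2}) paired with a
  \<delta>-name of player 1's winning set.\<close>
definition dtab :: "baire \<Rightarrow> bool list \<Rightarrow> nat" where
  "dtab p = (\<lambda>w. fst_b p (wcode w))"

definition win_input :: "pcls \<Rightarrow> baire \<Rightarrow> cantor set \<Rightarrow> bool" where
  "win_input \<delta> p W \<longleftrightarrow> (\<forall>w. dtab p w \<in> {1, 2}) \<and> \<delta> (snd_b p) = Some W"

definition Win :: "pcls \<Rightarrow> problem" where
  "Win \<delta> p = {q. \<exists>W. win_input \<delta> p W \<and>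
     ((q 0 = 1 \<and> (\<exists>\<sigma>. win1 (dtab p) W \<sigma>)) \<or> (q 0 = 2 \<and> (\<exists>\<sigma>. win2 (dtab p) W \<sigma>)))}"

definition FindWS :: "pcls \<Rightarrow> problem" where
  "FindWS \<delta> p = {q. \<exists>W. win_input \<delta> p W \<and> (\<exists>\<sigma>. win1 (dtab p) W \<sigma>) \<and>
     prof_name q \<and> win1 (dtab p) W (prof_of q)}"

definition upper :: "nat \<Rightarrow> (nat \<Rightarrow> nat \<Rightarrow> bool) \<Rightarrow> nat set \<Rightarrow> bool" where
  "upper no pr U \<longleftrightarrow> U \<subseteq> {1..no} \<and> (\<forall>oo\<in>U. \<forall>oo'\<in>{1..no}. pr oo oo' \<longrightarrow> oo' \<in> U)"

definition game_name :: "pcls \<Rightarrow> baire \<Rightarrow> nat \<Rightarrow> nat \<Rightarrow> (bool list \<Rightarrow> nat)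
     \<Rightarrow> (nat \<Rightarrow> nat \<Rightarrow> nat \<Rightarrow> bool) \<Rightarrow> (cantor \<Rightarrow> nat) \<Rightarrow> bool" where
  "game_name \<delta> p np no d pref v \<longleftrightarrow>
     comp_b p 0 0 = np \<and> comp_b p 1 0 = no \<and>
     (\<forall>w. d w = comp_b p 2 (wcode w) \<and> d w \<in> {1..np}) \<and>
     (\<forall>a\<in>{1..np}. \<forall>oo\<in>{1..no}. \<forall>oo'\<in>{1..no}.
        comp_b p 3 (prod_encode (a, prod_encode (oo, oo'))) = (if pref a oo oo' then 1 else 0)) \<and>
     (\<forall>x. v x \<in> {1..no}) \<and>
     (\<forall>a\<in>{1..np}. \<forall>U. upper no (pref a) U \<longrightarrow>
        \<delta> (comp_b (comp_b p 4) (prod_encode (a, set_encode U))) = Some (v -` U))"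

definition lin_antag :: "nat \<Rightarrow> (nat \<Rightarrow> nat \<Rightarrow> nat \<Rightarrow> bool) \<Rightarrow> bool" where
  "lin_antag no pref \<longleftrightarrow>
     (\<forall>oo\<in>{1..no}. \<not> pref 1 oo oo) \<and>
     (\<forall>oc1\<in>{1..no}. \<forall>oc2\<in>{1..no}. \<forall>oc3\<in>{1..no}. pref 1 oc1 oc2 \<longrightarrow> pref 1 oc2 oc3 \<longrightarrow> pref 1 oc1 oc3) \<and>
     (\<forall>oc1\<in>{1..no}. \<forall>oc2\<in>{1..no}. oc1 \<noteq> oc2 \<longrightarrow> pref 1 oc1 oc2 \<or> pref 1 oc2 oc1) \<and>
     (\<forall>oc1\<in>{1..no}. \<forall>oc2\<in>{1..no}. pref 2 oc1 oc2 \<longleftrightarrow> pref 1 oc2 oc1)"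

definition NEap :: "pcls \<Rightarrow> problem" where
  "NEap \<delta> p = {q. prof_name q \<and> (\<exists>no d pref v. game_name \<delta> p 2 no d pref v \<and>
      lin_antag no pref \<and> nash 2 d pref v (prof_of q))}"

end

theory Submission
  imports Defs
begin


definition rc :: "nat \<Rightarrow> (nat list \<Rightarrow> nat) \<Rightarrow> bool" where
  "rc n f \<longleftrightarrow> (\<exists>g. recfn n g \<and> (\<forall>xs. length xs = n \<longrightarrow> g xs = f xs))"

lemma rc_cong: "rc n f \<Longrightarrow> (\<And>xs. length xs = n \<Longrightarrow> f xs = g xs) \<Longrightarrow> rc n g"
  unfolding rc_def by metis

lemma rc_zero: "rc n (\<lambda>_. 0)"
  unfolding rc_def using rf_zero by blast

lemma rc_succ1: "rc 1 (\<lambda>xs. Suc (hd xs))"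
  unfolding rc_def using rf_succ by blast

lemma rc_proj: "i < n \<Longrightarrow> rc n (\<lambda>xs. xs ! i)"
  unfolding rc_def using rf_proj by blast

lemma rc_comp:
  assumes "rc m g" "length fs = m" "\<forall>i<m. rc n (fs ! i)"
  shows "rc n (\<lambda>xs. g (map (\<lambda>f. f xs) fs))"
proof -
  obtain g' where g': "recfn m g'" "\<forall>xs. length xs = m \<longrightarrow> g' xs = g xs" using assms(1) unfolding rc_def by blast
  have "\<forall>i<m. \<exists>f'. recfn n f' \<and> (\<forall>xs. length xs = n \<longrightarrow> f' xs = (fs!i) xs)"
    using assms(3) unfolding rc_def by blast
  then obtain F where F: "\<forall>i<m. recfn n (F i) \<and> (\<forall>xs. length xs = n \<longrightarrow> F i xs = (fs!i) xs)"
    by metis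
  define fs' where "fs' = map F [0..<m]"
  have "recfn n (\<lambda>xs. g' (map (\<lambda>f. f xs) fs'))"
    by (rule rf_comp[OF g'(1)]) (use F in \<open>auto simp: fs'_def\<close>)
  moreover have "\<forall>xs. length xs = n \<longrightarrow> g' (map (\<lambda>f. f xs) fs') = g (map (\<lambda>f. f xs) fs)"
  proof (intro allI impI)
    fix xs :: "nat list" assume l: "length xs = n"
    have "map (\<lambda>f. f xs) fs' = map (\<lambda>f. f xs) fs"
      using F l assms(2) by (auto simp: fs'_def intro!: nth_equalityI)
    then show "g' (map (\<lambda>f. f xs) fs') = g (map (\<lambda>f. f xs) fs)"
      using g'(2) assms(2) by simp
  qed
  ultimately show ?thesis unfolding rc_def by blast
qed

lemma rc_prim:
  assumes "rc n g" "rc (Suc (Suc n)) h"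
  shows "rc (Suc n) (\<lambda>ys. rec_nat (g (tl ys)) (\<lambda>k r. h (k # r # tl ys)) (hd ys))"
proof -
  obtain g' where g': "recfn n g'" "\<forall>xs. length xs = n \<longrightarrow> g' xs = g xs" using assms(1) unfolding rc_def by blast
  obtain h' where h': "recfn (Suc (Suc n)) h'" "\<forall>xs. length xs = Suc (Suc n) \<longrightarrow> h' xs = h xs" using assms(2) unfolding rc_def by blast
  have r: "recfn (Suc n) (\<lambda>ys. case ys of [] \<Rightarrow> 0 | y # xs \<Rightarrow> rec_nat (g' xs) (\<lambda>k r. h' (k # r # xs)) y)"
    by (rule rf_prim[OF g'(1) h'(1)])
  have "\<forall>ys. length ys = Suc n \<longrightarrow> (case ys of [] \<Rightarrow> 0 | y # xs \<Rightarrow> rec_nat (g' xs) (\<lambda>k r. h' (k # r # xs)) y)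
     = rec_nat (g (tl ys)) (\<lambda>k r. h (k # r # tl ys)) (hd ys)"
  proof (intro allI impI)
    fix ys :: "nat list" assume "length ys = Suc n"
    then obtain y xs where ys: "ys = y # xs" "length xs = n" by (cases ys) auto
    have "rec_nat (g' xs) (\<lambda>k r. h' (k # r # xs)) y' = rec_nat (g xs) (\<lambda>k r. h (k # r # xs)) y'" for y'
      by (induction y') (use g' h' ys in auto)
    then show "(case ys of [] \<Rightarrow> 0 | y # xs \<Rightarrow> rec_nat (g' xs) (\<lambda>k r. h' (k # r # xs)) y)
     = rec_nat (g (tl ys)) (\<lambda>k r. h (k # r # tl ys)) (hd ys)" using ys by simp
  qed
  with r show ?thesis unfolding rc_def by blast
qed

lemma rc_min:
  assumes "rc (Suc n) g" "\<And>xs. length xs = n \<Longrightarrow> \<exists>y. g (y # xs) = 0"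
  shows "rc n (\<lambda>xs. LEAST y. g (y # xs) = 0)"
proof -
  obtain g' where g': "recfn (Suc n) g'" "\<forall>xs. length xs = Suc n \<longrightarrow> g' xs = g xs" using assms(1) unfolding rc_def by blast
  have e: "\<forall>xs. length xs = n \<longrightarrow> (\<exists>y. g' (y # xs) = 0)" using assms(2) g'(2) by simp
  have "recfn n (\<lambda>xs. LEAST y. g' (y # xs) = 0)" by (rule rf_min[OF g'(1) e])
  moreover have "\<forall>xs. length xs = n \<longrightarrow> (LEAST y. g' (y # xs) = 0) = (LEAST y. g (y # xs) = 0)"
    using g'(2) by simp
  ultimately show ?thesis unfolding rc_def by blast
qed

lemma rc_comp1: "rc 1 g \<Longrightarrow> rc n F \<Longrightarrow> rc n (\<lambda>xs. g [F xs])"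
  using rc_comp[of 1 g "[F]" n] by (simp add: less_Suc_eq)

lemma rc_comp2: "rc 2 g \<Longrightarrow> rc n F \<Longrightarrow> rc n G \<Longrightarrow> rc n (\<lambda>xs. g [F xs, G xs])"
  using rc_comp[of 2 g "[F, G]" n] by (simp add: less_Suc_eq numeral_2_eq_2)

lemma rc_comp3: "rc 3 g \<Longrightarrow> rc n F \<Longrightarrow> rc n G \<Longrightarrow> rc n K \<Longrightarrow> rc n (\<lambda>xs. g [F xs, G xs, K xs])"
  using rc_comp[of 3 g "[F, G, K]" n] by (simp add: less_Suc_eq numeral_3_eq_3)

lemma rc_suc: "rc n F \<Longrightarrow> rc n (\<lambda>xs. Suc (F xs))"
  using rc_comp1[OF rc_succ1, of n F] by simp

lemma rc_const: "rc n (\<lambda>_. k)"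
  by (induction k) (auto intro: rc_zero dest: rc_suc)

lemma rc_drop: "rc n F \<Longrightarrow> rc (k + n) (\<lambda>ys. F (drop k ys))"
proof -
  assume F: "rc n F"
  have "rc (k + n) (\<lambda>ys. F (map (\<lambda>f. f ys) (map (\<lambda>i ys. ys ! (k + i)) [0..<n])))"
    by (rule rc_comp[OF F]) (auto intro!: rc_proj)
  then show ?thesis
    by (rule rc_cong) (auto intro!: nth_equalityI arg_cong[where f=F])
qed

lemma rc_proj_drop: "k + i < n \<Longrightarrow> rc n (\<lambda>xs. drop k xs ! i)"
  by (rule rc_cong[OF rc_proj[of "k+i" n]]) auto

lemma rc_cons_arg:
  assumes P: "rc (Suc n) P" and C: "rc n C"
  shows "rc n (\<lambda>xs. P (C xs # xs))"
proof -
  have "rc n (\<lambda>xs. P (map (\<lambda>f. f xs) (C # map (\<lambda>i xs. xs ! i) [0..<n])))"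
    by (rule rc_comp[OF P]) (auto intro!: rc_proj C simp: nth_Cons split: nat.split)
  then show ?thesis
    by (rule rc_cong) (auto intro!: nth_equalityI arg_cong[where f=P])
qed

lemma rc_rec:
  assumes "rc n A" "rc (Suc (Suc n)) (\<lambda>ys. B (ys ! 0) (ys ! 1) (drop 2 ys))" "rc n C"
  shows "rc n (\<lambda>xs. rec_nat (A xs) (\<lambda>k r. B k r xs) (C xs))"
proof -
  have p: "rc (Suc n) (\<lambda>ys. rec_nat (A (tl ys)) (\<lambda>k r. (\<lambda>ys. B (ys ! 0) (ys ! 1) (drop 2 ys)) (k # r # tl ys)) (hd ys))"
    by (rule rc_prim[OF assms(1,2)])
  from rc_cons_arg[OF p assms(3)] show ?thesis by simp
qed

lemma rc_ifz:
  assumes "rc n X" "rc n A" "rc n B"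
  shows "rc n (\<lambda>xs. if X xs = 0 then A xs else B xs)"
proof -
  have b: "rc (Suc (Suc n)) (\<lambda>ys. B (drop 2 ys))" using rc_drop[OF assms(3), of 2] by simp
  have "rc n (\<lambda>xs. rec_nat (A xs) (\<lambda>k r. B xs) (X xs))"
    by (rule rc_rec[OF assms(2) _ assms(1)]) (use b in simp)
  then show ?thesis by (rule rc_cong) (auto simp: gr0_conv_Suc)
qed

lemma rc_add: "rc n F \<Longrightarrow> rc n G \<Longrightarrow> rc n (\<lambda>xs. F xs + G xs)"
proof -
  assume F: "rc n F" and G: "rc n G"
  have "rc n (\<lambda>xs. rec_nat (F xs) (\<lambda>k r. Suc r) (G xs))"
    by (rule rc_rec[OF F _ G]) (auto intro!: rc_suc rc_proj)
  moreover have "rec_nat a (\<lambda>k r. Suc r) b = a + b" for a b :: nat by (induction b) auto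
  ultimately show ?thesis by simp
qed

lemma rc_pred: "rc n F \<Longrightarrow> rc n (\<lambda>xs. F xs - 1)"
proof -
  assume F: "rc n F"
  have "rc n (\<lambda>xs. rec_nat 0 (\<lambda>k r. k) (F xs))"
    by (rule rc_rec[OF rc_const _ F]) (auto intro!: rc_proj)
  moreover have "rec_nat 0 (\<lambda>k r. k) b = b - 1" for b :: nat by (induction b) auto
  ultimately show ?thesis by simp
qed

lemma rc_sub: "rc n F \<Longrightarrow> rc n G \<Longrightarrow> rc n (\<lambda>xs. F xs - G xs)"
proof -
  assume F: "rc n F" and G: "rc n G"
  have "rc n (\<lambda>xs. rec_nat (F xs) (\<lambda>k r. r - 1) (G xs))"
    by (rule rc_rec[OF F _ G], rule rc_pred, rule rc_proj) simp
  moreover have "rec_nat a (\<lambda>k r. r - 1) b = a - b" for a b :: nat by (induction b) auto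
  ultimately show ?thesis by simp
qed

lemma rc_mult: "rc n F \<Longrightarrow> rc n G \<Longrightarrow> rc n (\<lambda>xs. F xs * G xs)"
proof -
  assume F: "rc n F" and G: "rc n G"
  have f2: "rc (Suc (Suc n)) (\<lambda>ys. F (drop 2 ys))" using rc_drop[OF F, of 2] by simp
  have "rc n (\<lambda>xs. rec_nat 0 (\<lambda>k r. r + F xs) (G xs))"
    by (rule rc_rec[OF rc_const _ G]) (auto intro!: rc_add rc_proj f2)
  moreover have "rec_nat 0 (\<lambda>k r. r + a) b = a * b" for a b :: nat by (induction b) auto
  ultimately show ?thesis by simp
qed

lemma rc_pow: "rc n F \<Longrightarrow> rc n G \<Longrightarrow> rc n (\<lambda>xs. F xs ^ G xs)"
proof -
  assume F: "rc n F" and G: "rc n G"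
  have f2: "rc (Suc (Suc n)) (\<lambda>ys. F (drop 2 ys))" using rc_drop[OF F, of 2] by simp
  have "rc n (\<lambda>xs. rec_nat 1 (\<lambda>k r. r * F xs) (G xs))"
    by (rule rc_rec[OF rc_const _ G]) (auto intro!: rc_mult rc_proj f2)
  moreover have "rec_nat 1 (\<lambda>k r. r * a) b = a ^ b" for a b :: nat by (induction b) auto
  ultimately show ?thesis by simp
qed

definition rcb :: "nat \<Rightarrow> (nat list \<Rightarrow> bool) \<Rightarrow> bool" where
  "rcb n P \<longleftrightarrow> rc n (\<lambda>xs. if P xs then 1 else 0)"

lemma rc_if: "rcb n P \<Longrightarrow> rc n A \<Longrightarrow> rc n B \<Longrightarrow> rc n (\<lambda>xs. if P xs then A xs else B xs)"
  unfolding rcb_def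
proof -
  assume "rc n (\<lambda>xs. if P xs then 1 else 0)" "rc n A" "rc n B"
  from rc_ifz[OF this(1) this(3) this(2)]
  show "rc n (\<lambda>xs. if P xs then A xs else B xs)" by (rule rc_cong) simp
qed

lemma rcb_eq0: "rc n F \<Longrightarrow> rcb n (\<lambda>xs. F xs = 0)"
  unfolding rcb_def by (rule rc_ifz) (auto intro: rc_const)

lemma rcb_const: "rcb n (\<lambda>_. b)"
  unfolding rcb_def by (rule rc_const)

lemma rcb_not: "rcb n P \<Longrightarrow> rcb n (\<lambda>xs. \<not> P xs)"
proof -
  assume "rcb n P"
  from rc_if[OF this rc_const rc_const, of 0 1] show ?thesis unfolding rcb_def by (rule rc_cong) simp
qed

lemma rcb_conj: "rcb n P \<Longrightarrow> rcb n Q \<Longrightarrow> rcb n (\<lambda>xs. P xs \<and> Q xs)"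
  unfolding rcb_def[of n "\<lambda>xs. P xs \<and> Q xs"]
  by (drule rc_if[of n P "\<lambda>xs. if Q xs then 1 else 0" "\<lambda>_. 0"]) (auto intro: rc_const simp: rcb_def elim: rc_cong)

lemma rcb_disj: "rcb n P \<Longrightarrow> rcb n Q \<Longrightarrow> rcb n (\<lambda>xs. P xs \<or> Q xs)"
  unfolding rcb_def[of n "\<lambda>xs. P xs \<or> Q xs"]
  by (drule rc_if[of n P "\<lambda>_. 1" "\<lambda>xs. if Q xs then 1 else 0"]) (auto intro: rc_const simp: rcb_def elim: rc_cong)

lemma rcb_le: "rc n F \<Longrightarrow> rc n G \<Longrightarrow> rcb n (\<lambda>xs. F xs \<le> G xs)"
  by (drule rc_sub, assumption, drule rcb_eq0) simp

lemma rcb_less: "rc n F \<Longrightarrow> rc n G \<Longrightarrow> rcb n (\<lambda>xs. F xs < G xs)"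
  by (drule rc_suc, drule rcb_le, assumption) (simp add: Suc_le_eq)

lemma rcb_eq: "rc n F \<Longrightarrow> rc n G \<Longrightarrow> rcb n (\<lambda>xs. F xs = G xs)"
proof -
  assume "rc n F" "rc n G"
  then have "rcb n (\<lambda>xs. F xs \<le> G xs \<and> G xs \<le> F xs)" by (intro rcb_conj rcb_le)
  then show ?thesis unfolding rcb_def by (rule rc_cong) auto
qed

lemma rc_least:
  assumes "rcb (Suc n) (\<lambda>ys. P (ys ! 0) (drop 1 ys))" "rc n B"
  shows "rc n (\<lambda>xs. LEAST y. P y xs \<or> y = B xs)"
proof -
  have b: "rc (Suc n) (\<lambda>ys. B (drop 1 ys))" using rc_drop[OF assms(2), of 1] by simp
  have g: "rc (Suc n) (\<lambda>ys. if P (ys ! 0) (drop 1 ys) \<or> ys ! 0 = B (drop 1 ys) then 0 else 1)"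
    by (intro rc_if rcb_disj rcb_eq assms(1) b rc_proj rc_const) simp
  have "rc n (\<lambda>xs. LEAST y. (if P ((y # xs) ! 0) (drop 1 (y # xs)) \<or> (y # xs) ! 0 = B (drop 1 (y # xs)) then 0 else 1) = (0::nat))"
    by (rule rc_min[OF g]) auto
  then show ?thesis by (rule rc_cong) simp
qed



lemma rc_cons_drop:
  assumes P: "rc (Suc n) P" and C: "rc (k + n) C"
  shows "rc (k + n) (\<lambda>ys. P (C ys # drop k ys))"
proof -
  have "rc (k + n) (\<lambda>ys. P (map (\<lambda>f. f ys) (C # map (\<lambda>i ys. ys ! (k + i)) [0..<n])))"
    by (rule rc_comp[OF P]) (auto intro!: rc_proj C simp: nth_Cons split: nat.split)
  then show ?thesis
    by (rule rc_cong) (auto intro!: nth_equalityI arg_cong[where f=P] simp: nth_Cons split: nat.split)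
qed

lemma rc_app2:
  assumes "rc (Suc n) (\<lambda>ys. F (ys ! 0) (drop 1 ys))" "rc n C"
  shows "rc n (\<lambda>xs. F (C xs) xs)"
  using rc_cons_drop[OF assms(1), of 0 C] assms(2) by simp

lemma rc_app2_drop2:
  assumes "rc (Suc n) (\<lambda>ys. F (ys ! 0) (drop 1 ys))" "rc (Suc (Suc n)) C"
  shows "rc (Suc (Suc n)) (\<lambda>ys. F (C ys) (drop 2 ys))"
  using rc_cons_drop[OF assms(1), of 2 C] assms(2) by simp

lemma rc_triangle: "rc n F \<Longrightarrow> rc n (\<lambda>xs. triangle (F xs))"
proof -
  assume F: "rc n F"
  have "rc n (\<lambda>xs. rec_nat 0 (\<lambda>k r. r + Suc k) (F xs))"
    by (rule rc_rec[OF rc_const _ F]) (auto intro!: rc_add rc_suc rc_proj)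
  moreover have "rec_nat 0 (\<lambda>k r. r + Suc k) b = triangle b" for b by (induction b) auto
  ultimately show ?thesis by simp
qed

lemma rc_pe: "rc n F \<Longrightarrow> rc n G \<Longrightarrow> rc n (\<lambda>xs. prod_encode (F xs, G xs))"
  unfolding prod_encode_def by (simp add: rc_add rc_triangle)

definition pfst :: "nat \<Rightarrow> nat" where "pfst z = fst (prod_decode z)"
definition psnd :: "nat \<Rightarrow> nat" where "psnd z = snd (prod_decode z)"

lemma triangle_mono: "i \<le> j \<Longrightarrow> triangle i \<le> triangle j"
  by (induction j) (auto simp: le_Suc_eq)

lemma triangle_ge: "k \<le> triangle k"
  by (induction k) auto

definition psum :: "nat \<Rightarrow> nat" where "psum z = (LEAST s. z < triangle (Suc s) \<or> s = z)"

lemma psum_pe: "psum (prod_encode (a, b)) = a + b"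
proof -
  let ?z = "prod_encode (a, b)"
  have z: "?z = triangle (a + b) + a" by (simp add: prod_encode_def)
  show ?thesis unfolding psum_def
  proof (rule Least_equality)
    show "?z < triangle (Suc (a + b)) \<or> a + b = ?z" using z by simp
  next
    fix y assume "?z < triangle (Suc y) \<or> y = ?z"
    then show "a + b \<le> y"
    proof
      assume "?z < triangle (Suc y)"
      then show ?thesis using z triangle_mono[of "Suc y" "a + b"] by (cases "Suc y \<le> a + b") auto
    next
      assume "y = ?z" then show ?thesis using z triangle_ge[of "a+b"] by simp
    qed
  qed
qed

lemma pfst_pe[simp]: "pfst (prod_encode (a, b)) = a" and psnd_pe[simp]: "psnd (prod_encode (a, b)) = b"
  by (simp_all add: pfst_def psnd_def)

lemma pfst_alt: "pfst z = z - triangle (psum z)"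
proof -
  obtain a b where z: "z = prod_encode (a, b)" by (metis prod_decode_inverse surj_pair)
  show ?thesis unfolding z psum_pe pfst_pe by (simp add: prod_encode_def)
qed

lemma psnd_alt: "psnd z = psum z - pfst z"
proof -
  obtain a b where z: "z = prod_encode (a, b)" by (metis prod_decode_inverse surj_pair)
  show ?thesis unfolding z psum_pe by simp
qed

lemma rc_psum: "rc n F \<Longrightarrow> rc n (\<lambda>xs. psum (F xs))"
proof -
  assume F: "rc n F"
  have f1: "rc (Suc n) (\<lambda>ys. F (drop 1 ys))" using rc_drop[OF F, of 1] by simp
  show ?thesis unfolding psum_def
    apply (rule rc_least[OF _ F])
    unfolding rcb_def
    apply (rule rc_if)
      apply (rule rcb_less[OF f1])
      apply (rule rc_triangle, rule rc_suc, rule rc_proj, simp)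
     apply (rule rc_const)+
    done
qed

lemma rc_pfst: "rc n F \<Longrightarrow> rc n (\<lambda>xs. pfst (F xs))"
  unfolding pfst_alt by (intro rc_sub rc_triangle rc_psum)

lemma rc_psnd: "rc n F \<Longrightarrow> rc n (\<lambda>xs. psnd (F xs))"
  unfolding psnd_alt pfst_alt by (intro rc_sub rc_triangle rc_psum)

definition lhd :: "nat \<Rightarrow> nat" where "lhd z = pfst (z - 1)"
definition ltl :: "nat \<Rightarrow> nat" where "ltl z = psnd (z - 1)"
definition lcons :: "nat \<Rightarrow> nat \<Rightarrow> nat" where "lcons a z = Suc (prod_encode (a, z))"
definition ldrop :: "nat \<Rightarrow> nat \<Rightarrow> nat" where "ldrop k z = (ltl ^^ k) z"
definition lnth :: "nat \<Rightarrow> nat \<Rightarrow> nat" where "lnth z i = lhd (ldrop i z)"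
definition llen :: "nat \<Rightarrow> nat" where "llen z = (LEAST i. ldrop i z = 0 \<or> i = z)"
definition lgenb :: "nat \<Rightarrow> (nat \<Rightarrow> nat) \<Rightarrow> nat \<Rightarrow> nat" where
  "lgenb len f b = rec_nat b (\<lambda>k r. lcons (f (len - Suc k)) r) len"

lemma lcons_enc[simp]: "lcons a (list_encode xs) = list_encode (a # xs)"
  by (simp add: lcons_def)

lemma prod_decode_0[simp]: "prod_decode 0 = (0, 0)"
  by (simp add: prod_decode_def prod_decode_aux.simps)

lemma lhd_enc[simp]: "lhd (list_encode (x # xs)) = x" by (simp add: lhd_def)
lemma ltl_enc[simp]: "ltl (list_encode xs) = list_encode (tl xs)"
  by (cases xs) (auto simp: ltl_def psnd_def)

lemma ldrop_enc[simp]: "ldrop k (list_encode xs) = list_encode (drop k xs)"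
  unfolding ldrop_def by (induction k arbitrary: xs) (auto simp: drop_Suc funpow_swap1 tl_drop)

lemma lnth_enc[simp]: "i < length xs \<Longrightarrow> lnth (list_encode xs) i = xs ! i"
  by (simp add: lnth_def Cons_nth_drop_Suc[symmetric] del: list_encode.simps)

lemma length_le_enc: "length xs \<le> list_encode xs"
  by (induction xs) (auto intro: le_trans[OF _ le_prod_encode_2])

lemma list_encode_0[simp]: "list_encode xs = 0 \<longleftrightarrow> xs = []"
  by (cases xs) auto

lemma llen_enc[simp]: "llen (list_encode xs) = length xs"
  unfolding llen_def
  by (rule Least_equality) (auto simp: length_le_enc)

lemma lgenb_enc: "lgenb len f (list_encode ys) = list_encode (map f [0..<len] @ ys)"
proof -
  have "rec_nat (list_encode ys) (\<lambda>k r. lcons (f (len - Suc k)) r) k = list_encode (map f [len - k..<len] @ ys)"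
    if "k \<le> len" for k using that
  proof (induction k)
    case (Suc k)
    then have "[len - Suc k..<len] = (len - Suc k) # [len - k..<len]"
      by (simp add: Suc_diff_Suc upt_conv_Cons)
    with Suc show ?case by simp
  qed simp
  then show ?thesis unfolding lgenb_def by simp
qed

lemma rc_lcons: "rc n F \<Longrightarrow> rc n G \<Longrightarrow> rc n (\<lambda>xs. lcons (F xs) (G xs))"
  unfolding lcons_def by (intro rc_suc rc_pe)

lemma rc_lhd: "rc n F \<Longrightarrow> rc n (\<lambda>xs. lhd (F xs))"
  unfolding lhd_def by (intro rc_pfst rc_pred)

lemma rc_ltl: "rc n F \<Longrightarrow> rc n (\<lambda>xs. ltl (F xs))"
  unfolding ltl_def by (intro rc_psnd rc_pred)

lemma rc_ldrop: "rc n K \<Longrightarrow> rc n F \<Longrightarrow> rc n (\<lambda>xs. ldrop (K xs) (F xs))"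
proof -
  assume K: "rc n K" and F: "rc n F"
  have "rc n (\<lambda>xs. rec_nat (F xs) (\<lambda>k r. ltl r) (K xs))"
    by (rule rc_rec[OF F _ K]) (auto intro!: rc_ltl rc_proj)
  moreover have "rec_nat z (\<lambda>k r. ltl r) k = ldrop k z" for k z
    by (induction k) (auto simp: ldrop_def)
  ultimately show ?thesis by simp
qed

lemma rc_lnth: "rc n F \<Longrightarrow> rc n K \<Longrightarrow> rc n (\<lambda>xs. lnth (F xs) (K xs))"
  unfolding lnth_def by (intro rc_lhd rc_ldrop)

lemma rc_llen: "rc n F \<Longrightarrow> rc n (\<lambda>xs. llen (F xs))"
proof -
  assume F: "rc n F"
  have f1: "rc (Suc n) (\<lambda>ys. F (drop 1 ys))" using rc_drop[OF F, of 1] by simp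
  show ?thesis unfolding llen_def
    by (rule rc_least[OF _ F]) (unfold rcb_def, intro rc_if rcb_eq0 f1 rc_ldrop rc_proj rc_const, simp)
qed

lemma rc_lgenb:
  assumes L: "rc n L" and F: "rc (Suc n) (\<lambda>ys. F (ys ! 0) (drop 1 ys))" and B: "rc n B"
  shows "rc n (\<lambda>xs. lgenb (L xs) (\<lambda>i. F i xs) (B xs))"
proof -
  have l2: "rc (Suc (Suc n)) (\<lambda>ys. L (drop 2 ys))" using rc_drop[OF L, of 2] by simp
  have "rc (Suc (Suc n)) (\<lambda>ys. F (L (drop 2 ys) - Suc (ys ! 0)) (drop 2 ys))"
    by (rule rc_app2_drop2[OF F]) (intro rc_sub l2 rc_suc rc_proj; simp)
  then have "rc n (\<lambda>xs. rec_nat (B xs) (\<lambda>k r. lcons (F (L xs - Suc k) xs) r) (L xs))"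
    by (intro rc_rec[OF B _ L] rc_lcons) (auto intro: rc_proj)
  then show ?thesis unfolding lgenb_def .
qed

lemma div_least: "0 < y \<Longrightarrow> (LEAST q. x < Suc q * y \<or> q = x) = x div (y::nat)"
proof (rule Least_equality)
  assume y: "0 < y"
  show "x < Suc (x div y) * y \<or> x div y = x"
    using y by (metis dividend_less_div_times mult.commute times_div_less_eq_dividend
        add.commute mult_Suc linorder_not_le add_less_mono1 less_add_same_cancel2)
next
  fix q assume y: "0 < y" and "x < Suc q * y \<or> q = x"
  then show "x div y \<le> q"
    by (metis div_le_dividend less_Suc_eq_le less_mult_imp_div_less)
qed

lemma rc_div: "rc n F \<Longrightarrow> rc n G \<Longrightarrow> rc n (\<lambda>xs. F xs div G xs)"
proof -
  assume F: "rc n F" and G: "rc n G"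
  have f1: "rc (Suc n) (\<lambda>ys. F (drop 1 ys))" using rc_drop[OF F, of 1] by simp
  have g1: "rc (Suc n) (\<lambda>ys. G (drop 1 ys))" using rc_drop[OF G, of 1] by simp
  have l: "rc n (\<lambda>xs. LEAST q. F xs < Suc q * G xs \<or> q = F xs)"
    apply (rule rc_least[OF _ F])
    apply (rule rcb_less[OF f1])
    apply (rule rc_mult[OF rc_suc[OF rc_proj] g1])
    apply simp
    done
  have "rc n (\<lambda>xs. if G xs = 0 then 0 else (LEAST q. F xs < Suc q * G xs \<or> q = F xs))"
    by (rule rc_ifz[OF G rc_const l])
  moreover have "0 < y \<Longrightarrow> (LEAST q. x < y + q * y \<or> q = x) = x div (y::nat)" for x y
    using div_least[of y x] by simp
  ultimately show ?thesis by - (erule rc_cong, simp)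
qed

lemma rc_mod: "rc n F \<Longrightarrow> rc n G \<Longrightarrow> rc n (\<lambda>xs. F xs mod G xs)"
proof -
  assume F: "rc n F" and G: "rc n G"
  have "rc n (\<lambda>xs. F xs - G xs * (F xs div G xs))"
    by (intro rc_sub rc_mult rc_div F G)
  then show ?thesis by (rule rc_cong) (simp add: minus_mult_div_eq_mod)
qed

lemma rcb_odd: "rc n F \<Longrightarrow> rcb n (\<lambda>xs. odd (F xs))"
proof -
  assume F: "rc n F"
  have "rcb n (\<lambda>xs. \<not> (F xs mod 2 = 0))" by (intro rcb_not rcb_eq0 rc_mod F rc_const)
  then show ?thesis by (simp add: even_iff_mod_2_eq_zero)
qed

lemma rcb_even: "rc n F \<Longrightarrow> rcb n (\<lambda>xs. even (F xs))"
proof -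
  assume F: "rc n F"
  have "rcb n (\<lambda>xs. (F xs mod 2 = 0))" by (intro rcb_eq0 rc_mod F rc_const)
  then show ?thesis by (simp add: even_iff_mod_2_eq_zero)
qed

lemma rc_max: "rc n F \<Longrightarrow> rc n G \<Longrightarrow> rc n (\<lambda>xs. max (F xs) (G xs))"
  unfolding max_def by (intro rc_if rcb_le)

lemma rcb_imp: "rcb n P \<Longrightarrow> rcb n Q \<Longrightarrow> rcb n (\<lambda>xs. P xs \<longrightarrow> Q xs)"
  by (drule rcb_not) (drule (1) rcb_disj, simp)

lemma rc_let: "rc n (\<lambda>xs. F (G xs) xs) \<Longrightarrow> rc n (\<lambda>xs. let y = G xs in F y xs)"
  by simp

named_theorems rci
declare rc_add[rci] rc_sub[rci] rc_mult[rci] rc_pow[rci] rc_div[rci] rc_mod[rci] rc_max[rci]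
  rc_pe[rci] rc_pfst[rci] rc_psnd[rci] rc_lcons[rci] rc_lhd[rci] rc_ltl[rci] rc_ldrop[rci]
  rc_lnth[rci] rc_llen[rci] rc_suc[rci] rc_if[rci] rc_const[rci] rc_proj[rci] rc_proj_drop[rci]
  rcb_eq0[rci] rcb_const[rci] rcb_not[rci] rcb_conj[rci] rcb_disj[rci] rcb_le[rci] rcb_less[rci]
  rcb_eq[rci] rcb_odd[rci] rcb_even[rci] rcb_imp[rci] rc_triangle[rci]

definition lapp :: "nat \<Rightarrow> nat \<Rightarrow> nat" where "lapp a b = lgenb (llen a) (lnth a) b"

lemma lapp_enc[simp]: "lapp (list_encode xs) (list_encode ys) = list_encode (xs @ ys)"
proof -
  have "map (lnth (list_encode xs)) [0..<length xs] = xs"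
    by (auto intro!: nth_equalityI)
  then show ?thesis unfolding lapp_def by (simp add: lgenb_enc)
qed

lemma rc_lapp[rci]: "rc n F \<Longrightarrow> rc n G \<Longrightarrow> rc n (\<lambda>xs. lapp (F xs) (G xs))"
proof -
  assume F: "rc n F" and G: "rc n G"
  have f1: "rc (Suc n) (\<lambda>ys. F (drop 1 ys))" using rc_drop[OF F, of 1] by simp
  show ?thesis unfolding lapp_def
    by (rule rc_lgenb[OF rc_llen[OF F] _ G]) (rule rc_lnth[OF f1 rc_proj], simp)
qed

section \<open>Associates from a use principle\<close>

lemma total_rec1_rc: "rc 1 (\<lambda>xs. h (xs ! 0)) \<Longrightarrow> total_rec1 h"
  unfolding rc_def total_rec1_def by force

lemma comp_partial_use:
  fixes Phi U :: "(nat \<Rightarrow> nat) \<Rightarrow> nat \<Rightarrow> nat"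
  assumes rP: "rc 1 (\<lambda>xs. Phi (lnth (psnd (xs ! 0))) (pfst (xs ! 0)))"
    and rU: "rc 1 (\<lambda>xs. U (lnth (psnd (xs ! 0))) (pfst (xs ! 0)))"
    and use: "\<And>f g x. (\<forall>i < U f x. f i = g i) \<Longrightarrow> Phi f x = Phi g x \<and> U f x = U g x"
  shows "comp_partial (\<lambda>p. Some (\<lambda>x. Phi p x))"
proof -
  define h where "h = (\<lambda>z. if U (lnth (psnd z)) (pfst z) \<le> llen (psnd z)
     then Suc (Phi (lnth (psnd z)) (pfst z)) else 0)"
  have "rc 1 (\<lambda>xs. h (xs ! 0))" unfolding h_def
    by (intro rc_if rcb_le rU rP rc_llen rc_psnd rc_proj rc_suc rc_const) simp
  then have th: "total_rec1 h" by (rule total_rec1_rc)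
  have key: "h (prod_encode (x, list_encode (map p [0..<k]))) =
      (if U p x \<le> k then Suc (Phi p x) else 0)" for p x k
  proof -
    let ?o = "lnth (list_encode (map p [0..<k]))"
    have agree: "\<And>i. i < k \<Longrightarrow> ?o i = p i" by simp
    have "U ?o x \<le> k \<longleftrightarrow> U p x \<le> k"
    proof
      assume a: "U ?o x \<le> k"
      then have "\<forall>i < U ?o x. ?o i = p i" using agree by auto
      from use[OF this] a show "U p x \<le> k" by simp
    next
      assume a: "U p x \<le> k"
      then have "\<forall>i < U p x. p i = ?o i" using agree by auto
      from use[OF this] a show "U ?o x \<le> k" by simp
    qed
    moreover have "U p x \<le> k \<Longrightarrow> Phi ?o x = Phi p x"
    proof -
      assume a: "U p x \<le> k"
      then have "\<forall>i < U p x. p i = ?o i" using agree by auto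
      from use[OF this] show ?thesis by simp
    qed
    ultimately show ?thesis unfolding h_def by simp
  qed
  show ?thesis unfolding comp_partial_def
  proof (intro exI[of _ h] conjI th allI impI)
    fix p q x assume "Some (\<lambda>x. Phi p x) = Some q"
    then have q: "q = (\<lambda>x. Phi p x)" by simp
    show "\<exists>k. h (prod_encode (x, list_encode (map p [0..<k]))) = Suc (q x) \<and>
         (\<forall>j<k. h (prod_encode (x, list_encode (map p [0..<j]))) = 0)"
      by (rule exI[of _ "U p x"]) (simp add: key q)
  qed
qed



definition shift :: "nat \<Rightarrow> cantor \<Rightarrow> cantor" where "shift k x = (\<lambda>i. x (i + k))"

lemma cat_nth_lt[simp]: "i < length w \<Longrightarrow> cat w y i = w ! i" by (simp add: cat_def)
lemma cat_nth_ge[simp]: "length w \<le> i \<Longrightarrow> cat w y i = y (i - length w)" by (simp add: cat_def)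
lemma shift_cat[simp]: "shift (length w) (cat w y) = y" by (simp add: shift_def cat_def fun_eq_iff)
lemma cat_append: "cat (u @ w) y = cat u (cat w y)"
  by (auto simp: cat_def fun_eq_iff nth_append)
lemma cat_Nil[simp]: "cat [] y = y" by (simp add: cat_def)

lemma cyl_iff: "x \<in> cyl u \<longleftrightarrow> x = cat u (shift (length u) x)"
  by (auto simp: cyl_def cat_def shift_def fun_eq_iff)

lemma cat_in_cyl[simp]: "cat u y \<in> cyl u" by (simp add: cyl_def)

lemma cat_in_cyl_iff: "cat u y \<in> cyl w \<longleftrightarrow> (\<forall>i<length w. cat u y i = w ! i)"
  by (simp add: cyl_def)

lemma resc_iff: "x \<in> resc u A \<longleftrightarrow> x \<in> cyl u \<and> shift (length u) x \<in> A"
  by (auto simp: resc_def cyl_iff)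

lemma hist_len[simp]: "length (hist s k) = k" by (induction k) auto

lemma hist_play: "hist s k = map (play s) [0..<k]"
  by (induction k) (auto simp: play_def)

lemma play_cat:
  assumes "play s \<in> cyl u"
  shows "play s = cat u (play (\<lambda>h. s (u @ h)))"
proof -
  have hu: "hist s (length u) = u"
    using assms by (auto simp: hist_play cyl_def intro!: nth_equalityI)
  have h2: "hist s (length u + k) = u @ hist (\<lambda>h. s (u @ h)) k" for k
    by (induction k) (use hu in auto)
  show ?thesis
  proof
    fix i show "play s i = cat u (play (\<lambda>h. s (u @ h))) i"
    proof (cases "i < length u")
      case True then show ?thesis using assms by (simp add: cyl_def)
    next
      case False
      then obtain k where "i = length u + k" by (metis le_Suc_ex not_less)
      then show ?thesis by (simp add: play_def h2)
    qed
  qed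
qed

lemma play_follow:
  assumes "\<And>k. k < length u \<Longrightarrow> s (take k u) = u ! k"
  shows "play s \<in> cyl u"
proof -
  have "k \<le> length u \<Longrightarrow> hist s k = take k u" for k
    by (induction k) (use assms in \<open>auto simp: take_Suc_conv_app_nth\<close>)
  then show ?thesis using assms by (auto simp: cyl_def play_def)
qed

section \<open>The game\<close>

definition Pw :: "nat \<Rightarrow> bool list" where "Pw i = replicate i True @ [False]"
definition Dw :: "nat \<Rightarrow> bool list" where "Dw n = replicate (Suc n) True"
definition cnt :: "bool list \<Rightarrow> nat" where "cnt c = card {l. l < length c \<and> c ! l}"

lemma length_Pw[simp]: "length (Pw i) = Suc i" by (simp add: Pw_def)
lemma length_Dw[simp]: "length (Dw n) = Suc n" by (simp add: Dw_def)
lemma Pw_nth: "Pw i ! k = (k < i)" if "k \<le> i" using that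
  by (auto simp: Pw_def nth_append)

definition vout :: "nat \<Rightarrow> nat \<Rightarrow> (nat \<Rightarrow> cantor set) \<Rightarrow> (nat \<Rightarrow> cantor set) \<Rightarrow> cantor \<Rightarrow> nat" where
  "vout n m WF WW x = (let b = (LEAST b. b \<le> n \<and> \<not> x b \<or> b = Suc n) in
    if b < n then (if shift (Suc b) x \<in> WF b then m + 2 else 1)
    else if b = n then (let j = (LEAST j. j < m \<and> \<not> x (Suc n + m + j) \<or> j = m) in
      if j < m then (if x (Suc n + j) then (if shift (Suc n + m + Suc j) x \<in> WW j then m + 2 else 1)
                     else card {l. l < m \<and> x (Suc n + l)} + 2)
      else card {l. l < m \<and> x (Suc n + l)} + 2)
    else m + 2)"

lemma least_rb_Pw:
  assumes "i \<le> n" "\<forall>k\<le>i. x k = Pw i ! k"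
  shows "(LEAST b. b \<le> n \<and> \<not> x b \<or> b = Suc n) = i"
  by (rule Least_equality) (use assms in \<open>auto simp: Pw_nth not_less[symmetric]\<close>)

lemma least_rb_Dw:
  assumes "\<forall>k\<le>n. x k"
  shows "(LEAST b. b \<le> n \<and> \<not> x b \<or> b = Suc n) = Suc n"
  by (rule Least_equality) (use assms in auto)

lemma Dw_nth[simp]: "k < Suc n \<Longrightarrow> Dw n ! k"
  by (simp add: Dw_def del: replicate_Suc)

lemma vout_F:
  assumes "i < n"
  shows "vout n m WF WW (cat (Pw i) y) = (if y \<in> WF i then m + 2 else 1)"
proof -
  have "(LEAST b. b \<le> n \<and> \<not> cat (Pw i) y b \<or> b = Suc n) = i"
    by (rule least_rb_Pw) (use assms in auto)
  moreover have "shift (Suc i) (cat (Pw i) y) = y" using shift_cat[of "Pw i" y] by simp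
  ultimately show ?thesis using assms unfolding vout_def Let_def by simp
qed

lemma vout_D: "vout n m WF WW (cat (Dw n) y) = m + 2"
proof -
  have "(LEAST b. b \<le> n \<and> \<not> cat (Dw n) y b \<or> b = Suc n) = Suc n"
    by (rule least_rb_Dw) auto
  then show ?thesis unfolding vout_def Let_def by simp
qed

lemma cat3_nth:
  assumes "length c = m"
  shows "cat (Pw n @ c @ w) y k = (if k < Suc n then Pw n ! k else if k < Suc n + m then c ! (k - Suc n)
     else cat w y (k - Suc n - m))"
  using assms by (auto simp: cat_append cat_def nth_append add.assoc)

lemma vout_C:
  assumes "length c = m" "j < m"
  shows "vout n m WF WW (cat (Pw n @ c @ Pw j) y) =
    (if c ! j then (if y \<in> WW j then m + 2 else 1) else cnt c + 2)"
proof -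
  let ?x = "cat (Pw n @ c @ Pw j) y"
  have x: "?x k = (if k < Suc n then Pw n ! k else if k < Suc n + m then c ! (k - Suc n)
     else cat (Pw j) y (k - Suc n - m))" for k by (rule cat3_nth[OF assms(1)])
  have b: "(LEAST b. b \<le> n \<and> \<not> ?x b \<or> b = Suc n) = n"
    by (rule least_rb_Pw) (auto simp: x)
  have jj: "(LEAST j'. j' < m \<and> \<not> ?x (Suc n + m + j') \<or> j' = m) = j"
    by (rule Least_equality) (use assms in \<open>auto simp: x Pw_nth not_less[symmetric]\<close>)
  have c: "?x (Suc n + l) = c ! l" if "l < m" for l using that by (simp add: x)
  have cc: "{l. l < m \<and> ?x (Suc n + l)} = {l. l < length c \<and> c ! l}" using c assms by auto
  have sh: "shift (Suc n + m + Suc j) ?x = y"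
    using shift_cat[of "Pw n @ c @ Pw j" y] assms by (simp add: add.assoc)
  have cj: "?x (Suc n + j) = c ! j" by (rule c[OF assms(2)])
  show ?thesis using assms unfolding vout_def Let_def b jj sh cnt_def cc cj by simp
qed

lemma vout_E:
  assumes "length c = m"
  shows "vout n m WF WW (cat (Pw n @ c @ replicate m True) y) = cnt c + 2"
proof -
  let ?x = "cat (Pw n @ c @ replicate m True) y"
  have x: "?x k = (if k < Suc n then Pw n ! k else if k < Suc n + m then c ! (k - Suc n)
     else cat (replicate m True) y (k - Suc n - m))" for k by (rule cat3_nth[OF assms(1)])
  have b: "(LEAST b. b \<le> n \<and> \<not> ?x b \<or> b = Suc n) = n"
    by (rule least_rb_Pw) (auto simp: x)
  have jj: "(LEAST j'. j' < m \<and> \<not> ?x (Suc n + m + j') \<or> j' = m) = m"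
    by (rule Least_equality) (use assms in \<open>auto simp: x\<close>)
  have c: "?x (Suc n + l) = c ! l" if "l < m" for l using that by (simp add: x)
  have cc: "{l. l < m \<and> ?x (Suc n + l)} = {l. l < length c \<and> c ! l}" using c assms by auto
  show ?thesis unfolding vout_def Let_def b jj cnt_def cc by simp
qed

lemma regions:
  fixes x :: cantor
  obtains (F) i where "i < n" "x \<in> cyl (Pw i)"
    | (D) "x \<in> cyl (Dw n)"
    | (C) c j where "length c = m" "j < m" "x \<in> cyl (Pw n @ c @ Pw j)"
    | (E) c where "length c = m" "x \<in> cyl (Pw n @ c @ replicate m True)"
proof -
  consider (a) "\<forall>k\<le>n. x k" | (b) "\<exists>k\<le>n. \<not> x k" by blast
  then show ?thesis
  proof cases
    case a then show ?thesis using D by (auto simp: cyl_def)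
  next
    case b
    define i where "i = (LEAST k. \<not> x k)"
    have i1: "\<not> x i" unfolding i_def by (metis (mono_tags) LeastI b)
    have i2: "k < i \<Longrightarrow> x k" for k unfolding i_def using not_less_Least by blast
    have i3: "i \<le> n" using b i_def by (meson Least_le le_trans)
    have ci: "x \<in> cyl (Pw i)" using i1 i2 by (auto simp: cyl_def Pw_def nth_append less_Suc_eq)
    show ?thesis
    proof (cases "i < n")
      case True then show ?thesis using F ci by blast
    next
      case False
      then have i: "i = n" using i3 by simp
      define c where "c = map (\<lambda>l. x (Suc n + l)) [0..<m]"
      have cl: "length c = m" by (simp add: c_def)
      show ?thesis
      proof (cases "\<forall>j<m. x (Suc n + m + j)")
        case True
        have "x \<in> cyl (Pw n @ c @ replicate m True)"
          unfolding cyl_def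
        proof (intro CollectI allI impI)
          fix k assume k: "k < length (Pw n @ c @ replicate m True)"
          show "x k = (Pw n @ c @ replicate m True) ! k"
          proof (cases "k < Suc n")
            case True then show ?thesis using ci i by (simp add: cyl_def nth_append)
          next
            case F1: False
            show ?thesis
            proof (cases "k < Suc n + m")
              case True
              then have "k - Suc n < m" using F1 by simp
              then show ?thesis using F1 by (simp add: nth_append c_def cl)
            next
              case False
              then obtain q where q: "k = Suc n + m + q" by (metis le_Suc_ex not_less add.assoc)
              then have "q < m" using k cl by simp
              then show ?thesis using q \<open>\<forall>j<m. x (Suc n + m + j)\<close> cl by (simp add: nth_append)
            qed
          qed
        qed
        then show ?thesis using E cl by blast
      next
        case False
        define j where "j = (LEAST j. \<not> x (Suc n + m + j))"
        have j1: "\<not> x (Suc n + m + j)" unfolding j_def using False by (metis (mono_tags) LeastI)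
        have j2: "k < j \<Longrightarrow> x (Suc n + m + k)" for k unfolding j_def using not_less_Least by blast
        obtain j0 where j0: "j0 < m" "\<not> x (Suc n + m + j0)" using False by blast
        have j3: "j < m" using Least_le[of "\<lambda>j. \<not> x (Suc n + m + j)" j0] j0 unfolding j_def by simp
        have "x \<in> cyl (Pw n @ c @ Pw j)"
          unfolding cyl_def
        proof (intro CollectI allI impI)
          fix k assume k: "k < length (Pw n @ c @ Pw j)"
          show "x k = (Pw n @ c @ Pw j) ! k"
          proof (cases "k < Suc n")
            case True then show ?thesis using ci i by (simp add: cyl_def nth_append)
          next
            case F1: False
            show ?thesis
            proof (cases "k < Suc n + m")
              case True
              then have "k - Suc n < m" using F1 by simp
              then show ?thesis using F1 by (simp add: nth_append c_def cl)
            next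
              case False
              then obtain q where q: "k = Suc n + m + q" by (metis le_Suc_ex not_less add.assoc)
              then have "q < Suc j" using k cl by simp
              then show ?thesis using q j1 j2 cl by (auto simp: nth_append Pw_def less_Suc_eq)
            qed
          qed
        qed
        then show ?thesis using C cl j3 by blast
      qed
    qed
  qed
qed

lemma play_at: "play s \<in> cyl u \<Longrightarrow> k < length u \<Longrightarrow> s (take k u) = u ! k"
proof -
  assume a: "play s \<in> cyl u" "k < length u"
  have "take k u = hist s k" using a by (auto simp: hist_play cyl_def intro!: nth_equalityI)
  then show ?thesis using a by (simp add: cyl_def play_def)
qed

lemma cyl_prefix: "x \<in> cyl (u @ w) \<Longrightarrow> x \<in> cyl u"
  by (auto simp: cyl_def nth_append)

lemma take_Pw: "k \<le> i \<Longrightarrow> take k (Pw i) = replicate k True"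
  by (simp add: Pw_def)

lemma Pw_nth_last[simp]: "Pw i ! i = False" by (simp add: Pw_def nth_append)

lemma cyl_Pw_disj: "x \<in> cyl (Pw i) \<Longrightarrow> x \<in> cyl (Pw k) \<Longrightarrow> i = k"
proof (rule ccontr)
  assume a: "x \<in> cyl (Pw i)" "x \<in> cyl (Pw k)" "i \<noteq> k"
  show False
  proof (cases "i < k")
    case True
    then have "x i = Pw i ! i" "x i = Pw k ! i" using a by (auto simp: cyl_def)
    then show False using True by (simp add: Pw_nth)
  next
    case False
    then have "k < i" using a by simp
    then have "x k = Pw k ! k" "x k = Pw i ! k" using a by (auto simp: cyl_def)
    then show False using \<open>k < i\<close> by (simp add: Pw_nth)
  qed
qed

lemma cyl_Pw_Dw: "x \<in> cyl (Pw i) \<Longrightarrow> i \<le> n \<Longrightarrow> x \<in> cyl (Dw n) \<Longrightarrow> False"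
proof -
  assume a: "x \<in> cyl (Pw i)" "i \<le> n" "x \<in> cyl (Dw n)"
  then have "x i = Pw i ! i" "x i = Dw n ! i" by (auto simp: cyl_def)
  then show False using a(2) by simp
qed

definition clist :: "(bool list \<Rightarrow> bool) \<Rightarrow> nat \<Rightarrow> nat \<Rightarrow> bool list" where
  "clist s n k = rec_nat [] (\<lambda>_ c. c @ [s (Pw n @ c)]) k"

lemma clist_0[simp]: "clist s n 0 = []" by (simp add: clist_def)
lemma clist_Suc[simp]: "clist s n (Suc k) = clist s n k @ [s (Pw n @ clist s n k)]" by (simp add: clist_def)
lemma length_clist[simp]: "length (clist s n k) = k" by (induction k) auto
lemma take_clist: "l \<le> k \<Longrightarrow> take l (clist s n k) = clist s n l"
  by (induction k) (auto simp: le_Suc_eq)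
lemma clist_nth: "l < k \<Longrightarrow> clist s n k ! l = s (Pw n @ clist s n l)"
  by (induction k) (auto simp: nth_append less_Suc_eq)

definition dev :: "(bool list \<Rightarrow> nat) \<Rightarrow> nat \<Rightarrow> (bool list \<Rightarrow> bool) \<Rightarrow> (bool list \<Rightarrow> bool) \<Rightarrow> bool list \<Rightarrow> bool" where
  "dev d a s s' = (\<lambda>h. if d h = a then s' h else s h)"

definition prefo :: "nat \<Rightarrow> nat \<Rightarrow> nat \<Rightarrow> bool" where
  "prefo a o1 o2 = (if a = 1 then o1 < o2 else o2 < o1)"

lemma nash_iff: "nash 2 d prefo v s \<longleftrightarrow>
   (\<forall>s'. v (play (dev d 1 s s')) \<le> v (play s)) \<and> (\<forall>s'. v (play s) \<le> v (play (dev d 2 s s')))"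
proof -
  have e: "{1..2::nat} = {1, 2}" by auto
  show ?thesis unfolding nash_def dev_def prefo_def e by (auto simp: not_less)
qed

locale gm =
  fixes n m :: nat and dF dW :: "nat \<Rightarrow> bool list \<Rightarrow> nat" and WF WW :: "nat \<Rightarrow> cantor set"
    and d :: "bool list \<Rightarrow> nat"
  assumes dF12: "i < n \<Longrightarrow> dF i r \<in> {1, 2}"
    and dW12: "j < m \<Longrightarrow> dW j r \<in> {1, 2}"
    and d12: "d h \<in> {1, 2}"
    and d_root: "a \<le> n \<Longrightarrow> d (replicate a True) = 2"
    and d_F: "i < n \<Longrightarrow> d (Pw i @ r) = dF i r"
    and d_cl: "length c < m \<Longrightarrow> d (Pw n @ c) = 1"
    and d_ch: "length c = m \<Longrightarrow> a < m \<Longrightarrow> d (Pw n @ c @ replicate a True) = 2"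
    and d_W: "length c = m \<Longrightarrow> j < m \<Longrightarrow> d (Pw n @ c @ Pw j @ r) = dW j r"
    and FW: "i < n \<Longrightarrow> \<exists>\<sigma>. win1 (dF i) (WF i) \<sigma>"
    and det: "j < m \<Longrightarrow> determined (dW j) (WW j)"
begin

abbreviation "v \<equiv> vout n m WF WW"
definition "T j = (\<exists>\<sigma>. win1 (dW j) (WW j) \<sigma>)"
definition "tl0 = map T [0..<m]"
definition "val = cnt tl0 + 2"
definition "\<sigma>F i = (SOME \<sigma>. win1 (dF i) (WF i) \<sigma>)"
definition "\<sigma>W j = (SOME \<sigma>. win1 (dW j) (WW j) \<sigma>)"
definition "\<tau>W j = (SOME \<sigma>. win2 (dW j) (WW j) \<sigma>)"
definition "rbl h = (LEAST b. b \<le> n \<and> b < length h \<and> \<not> h ! b \<or> b = Suc n)"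
definition "chl z = (LEAST j. j < m \<and> j < length z \<and> \<not> z ! j \<or> j = m)"
definition "target c = (if \<exists>l<m. c ! l \<and> \<not> T l then LEAST l. l < m \<and> c ! l \<and> \<not> T l
   else if \<exists>l<m. \<not> c ! l then LEAST l. l < m \<and> \<not> c ! l else m)"
definition "sig h = (let b = rbl h in if b < n then \<sigma>F b (drop (Suc b) h)
   else if b = n then (let r = drop (Suc n) h in if length r < m then T (length r)
      else (let z = drop m r; j = chl z in if j < m then \<sigma>W j (drop (Suc j) z) else False))
   else False)"
definition "tau h = (let b = rbl h in if b < n then False
   else if b = n then (let r = drop (Suc n) h in if length r < m then False
      else (let z = drop m r; j = chl z in if j < m then \<tau>W j (drop (Suc j) z) else length z < target (take m r)))
   else length h < n)"

lemma \<sigma>F: "i < n \<Longrightarrow> win1 (dF i) (WF i) (\<sigma>F i)"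
  unfolding \<sigma>F_def using FW by (metis someI_ex)
lemma \<sigma>W: "T j \<Longrightarrow> win1 (dW j) (WW j) (\<sigma>W j)"
  unfolding \<sigma>W_def T_def by (metis someI_ex)
lemma \<tau>W: "j < m \<Longrightarrow> \<not> T j \<Longrightarrow> win2 (dW j) (WW j) (\<tau>W j)"
  unfolding \<tau>W_def T_def using det unfolding determined_def by (metis someI_ex)

lemma rbl_Pw: "i \<le> n \<Longrightarrow> rbl (Pw i @ r) = i"
  unfolding rbl_def by (rule Least_equality) (auto simp: nth_append Pw_nth not_less[symmetric])

lemma rbl_rep: "a \<le> n \<Longrightarrow> rbl (replicate a True) = Suc n"
  unfolding rbl_def by (rule Least_equality) auto

lemma chl_Pw: "j < m \<Longrightarrow> chl (Pw j @ r) = j"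
  unfolding chl_def by (rule Least_equality) (auto simp: nth_append Pw_nth not_less[symmetric])

lemma chl_rep: "chl (replicate a True) = m"
  unfolding chl_def by (rule Least_equality) auto

lemma sig_F: "i < n \<Longrightarrow> sig (Pw i @ r) = \<sigma>F i r"
  by (simp add: sig_def rbl_Pw)
lemma sig_cl: "length c < m \<Longrightarrow> sig (Pw n @ c) = T (length c)"
  by (simp add: sig_def rbl_Pw)
lemma sig_W: "length c = m \<Longrightarrow> j < m \<Longrightarrow> sig (Pw n @ c @ Pw j @ r) = \<sigma>W j r"
  by (simp add: sig_def rbl_Pw chl_Pw)

lemma tau_root: "a \<le> n \<Longrightarrow> tau (replicate a True) = (a < n)"
  by (simp add: tau_def rbl_rep)
lemma tau_ch: "length c = m \<Longrightarrow> a < m \<Longrightarrow> tau (Pw n @ c @ replicate a True) = (a < target c)"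
  by (simp add: tau_def rbl_Pw chl_rep)
lemma tau_W: "length c = m \<Longrightarrow> j < m \<Longrightarrow> tau (Pw n @ c @ Pw j @ r) = \<tau>W j r"
  by (simp add: tau_def rbl_Pw chl_Pw)

end



context gm
begin

lemma cnt_le: "length c = m \<Longrightarrow> cnt c \<le> m"
proof -
  assume "length c = m"
  then have "{l. l < length c \<and> c ! l} \<subseteq> {..<m}" by auto
  then show ?thesis unfolding cnt_def by (metis card_lessThan card_mono finite_lessThan)
qed

lemma val_le: "val \<le> m + 2" unfolding val_def using cnt_le[of tl0] by (simp add: tl0_def)

lemma cnt_mono: "length c = length c' \<Longrightarrow> (\<forall>l<length c. c ! l \<longrightarrow> c' ! l) \<Longrightarrow> cnt c \<le> cnt c'"
  unfolding cnt_def by (intro card_mono) auto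

lemma cnt_strict: "length c = length c' \<Longrightarrow> (\<forall>l<length c. c ! l \<longrightarrow> c' ! l) \<Longrightarrow> j < length c
   \<Longrightarrow> \<not> c ! j \<Longrightarrow> c' ! j \<Longrightarrow> cnt c < cnt c'"
  unfolding cnt_def by (intro psubset_card_mono) auto

lemma tl0_nth: "l < m \<Longrightarrow> tl0 ! l = T l" by (simp add: tl0_def)
lemma length_tl0[simp]: "length tl0 = m" by (simp add: tl0_def)

lemma dev_Pw_rest:
  "i < n \<Longrightarrow> (\<lambda>r. dev d 1 s sig (Pw i @ r)) = (\<lambda>r. if dF i r = 1 then \<sigma>F i r else s (Pw i @ r))"
  by (simp add: dev_def d_F sig_F)

lemma lower_claims:
  assumes x: "play (dev d 1 s sig) \<in> cyl (Pw n @ c @ w)" and cm: "length c = m"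
  shows "c = tl0"
proof -
  let ?p = "dev d 1 s sig"
  let ?u = "Pw n @ c @ w"
  have cl: "c ! l = T l" if l: "l < m" for l
  proof -
    have k: "Suc n + l < length ?u" using l cm by simp
    have tk: "take (Suc n + l) ?u = Pw n @ take l c" using l cm by simp
    have "?p (take (Suc n + l) ?u) = ?u ! (Suc n + l)" by (rule play_at[OF x k])
    then show ?thesis using l cm by (simp add: tk dev_def d_cl sig_cl nth_append)
  qed
  show "c = tl0" by (rule nth_equalityI) (simp_all only: cm length_tl0 tl0_nth cl)
qed

lemma lower: "val \<le> v (play (dev d 1 s sig))"
proof -
  let ?p = "dev d 1 s sig"
  let ?x = "play ?p"
  show ?thesis
  proof (cases ?x rule: regions[where n=n and m=m])
    case (F i)
    have x: "?x = cat (Pw i) (play (\<lambda>r. ?p (Pw i @ r)))" by (rule play_cat[OF F(2)])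
    have "play (\<lambda>r. ?p (Pw i @ r)) \<in> WF i"
      using \<sigma>F[OF F(1), unfolded win1_def, rule_format, of "\<lambda>r. s (Pw i @ r)"]
      unfolding dev_Pw_rest[OF F(1)] by simp
    then show ?thesis using val_le unfolding x by (simp add: vout_F[OF F(1)])
  next
    case D
    then show ?thesis using val_le play_cat[OF D] by (metis vout_D)
  next
    case (E c)
    have "c = tl0" by (rule lower_claims[OF E(2) E(1)])
    then show ?thesis using play_cat[OF E(2)] E(1) by (metis vout_E val_def order_refl)
  next
    case (C c j)
    let ?u = "Pw n @ c @ Pw j"
    have c: "c = tl0" by (rule lower_claims[OF C(3) C(1)])
    have cl: "c ! l = T l" if l: "l < m" for l using c l by (simp add: tl0_nth)
    have x: "?x = cat ?u (play (\<lambda>r. ?p (?u @ r)))" by (rule play_cat[OF C(3)])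
    have rest: "(\<lambda>r. ?p (?u @ r)) = (\<lambda>r. if dW j r = 1 then \<sigma>W j r else s (?u @ r))"
      using C by (simp add: dev_def d_W sig_W)
    show ?thesis
    proof (cases "T j")
      case True
      have "play (\<lambda>r. ?p (?u @ r)) \<in> WW j"
        using \<sigma>W[OF True, unfolded win1_def, rule_format, of "\<lambda>r. s (?u @ r)"] unfolding rest by simp
      then show ?thesis using val_le C True cl unfolding x by (simp add: vout_C)
    next
      case False
      then show ?thesis using C cl unfolding x by (simp add: vout_C val_def c[symmetric])
    qed
  qed
qed

lemma root_follow: "play (dev d 2 s tau) \<in> cyl (Pw n)"
proof (rule play_follow)
  fix k assume "k < length (Pw n)"
  then have k: "k \<le> n" by simp
  show "dev d 2 s tau (take k (Pw n)) = Pw n ! k"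
    using k by (simp add: take_Pw dev_def d_root tau_root Pw_nth)
qed

lemma target_cases:
  obtains (one) "target c < m" "c ! target c" "\<not> T (target c)"
  | (zero) "target c < m" "\<not> c ! target c" "\<forall>l<m. c ! l \<longrightarrow> T l"
  | (none) "target c = m" "\<forall>l<m. c ! l \<and> T l"
proof -
  consider (a) "\<exists>l<m. c ! l \<and> \<not> T l" | (b) "\<not> (\<exists>l<m. c ! l \<and> \<not> T l)" "\<exists>l<m. \<not> c ! l"
    | (c) "\<not> (\<exists>l<m. c ! l \<and> \<not> T l)" "\<not> (\<exists>l<m. \<not> c ! l)" by blast
  then show ?thesis
  proof cases
    case a
    then have "target c = (LEAST l. l < m \<and> c ! l \<and> \<not> T l)" by (simp add: target_def)
    moreover have "(LEAST l. l < m \<and> c ! l \<and> \<not> T l) < m \<and> c ! (LEAST l. l < m \<and> c ! l \<and> \<not> T l)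
       \<and> \<not> T (LEAST l. l < m \<and> c ! l \<and> \<not> T l)"
      using a by (metis (mono_tags, lifting) LeastI)
    ultimately show ?thesis using one by simp
  next
    case b
    have "target c = (LEAST l. l < m \<and> \<not> c ! l)"
      unfolding target_def by (subst if_not_P[OF b(1)], subst if_P[OF b(2)], rule refl)
    moreover have "(LEAST l. l < m \<and> \<not> c ! l) < m \<and> \<not> c ! (LEAST l. l < m \<and> \<not> c ! l)"
      using b by (metis (mono_tags, lifting) LeastI)
    ultimately show ?thesis using zero b by auto
  next
    case c
    have "target c = m"
      unfolding target_def by (subst if_not_P[OF c(1)], subst if_not_P[OF c(2)], rule refl)
    moreover have "\<forall>l<m. c ! l \<and> T l" using c by blast
    ultimately show ?thesis by (rule none)
  qed
qed

lemma upper: "v (play (dev d 2 s tau)) \<le> val"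
proof -
  let ?p = "dev d 2 s tau"
  let ?x = "play ?p"
  have xn: "?x \<in> cyl (Pw n)" by (rule root_follow)
  show ?thesis
  proof (cases ?x rule: regions[where n=n and m=m])
    case (F i)
    then show ?thesis using cyl_Pw_disj[OF F(2) xn] by simp
  next
    case D
    then show ?thesis using cyl_Pw_Dw[OF xn _ D] by simp
  next
    case (E c)
    let ?u = "Pw n @ c @ replicate m True"
    have tm: "target c = m"
    proof (rule ccontr)
      assume "target c \<noteq> m"
      then have t: "target c < m" by (cases c rule: target_cases) auto
      let ?k = "Suc n + m + target c"
      have k: "?k < length ?u" using t E by simp
      have tk: "take ?k ?u = Pw n @ c @ replicate (target c) True" using t E by simp
      have "?p (take ?k ?u) = ?u ! ?k" by (rule play_at[OF E(2) k])
      then show False using t E by (simp add: tk dev_def d_ch tau_ch nth_append)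
    qed
    have "\<forall>l<m. c ! l \<and> T l" using tm by (cases c rule: target_cases) auto
    then have "cnt c \<le> cnt tl0" using E(1) by (intro cnt_mono) (auto simp: tl0_nth)
    then show ?thesis using play_cat[OF E(2)] E(1) by (metis vout_E val_def add_le_mono1)
  next
    case (C c j)
    let ?u = "Pw n @ c @ Pw j"
    have ta: "(a < target c) = (a < j)" if a: "a \<le> j" for a
    proof -
      let ?k = "Suc n + m + a"
      have k: "?k < length ?u" using a C by simp
      have tk: "take ?k ?u = Pw n @ c @ replicate a True" using a C by (simp add: take_Pw)
      have "?p (take ?k ?u) = ?u ! ?k" by (rule play_at[OF C(3) k])
      then show ?thesis using a C by (simp add: tk dev_def d_ch tau_ch nth_append Pw_nth take_Pw)
    qed
    have tj: "target c = j"
    proof -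
      have "\<not> j < target c" using ta[of j] by simp
      moreover have "\<not> target c < j" using ta[of "target c"] by fastforce
      ultimately show ?thesis by simp
    qed
    have x: "?x = cat ?u (play (\<lambda>r. ?p (?u @ r)))" by (rule play_cat[OF C(3)])
    have rest: "(\<lambda>r. ?p (?u @ r)) = (\<lambda>r. if dW j r = 2 then \<tau>W j r else s (?u @ r))"
      using C by (simp add: dev_def d_W tau_W)
    show ?thesis
    proof (cases c rule: target_cases)
      case one
      then have nt: "\<not> T j" "c ! j" using tj by auto
      have "play (\<lambda>r. ?p (?u @ r)) \<notin> WW j"
        using \<tau>W[OF C(2) nt(1), unfolded win2_def, rule_format, of "\<lambda>r. s (?u @ r)"] unfolding rest by simp
      then show ?thesis using C nt by (simp add: x vout_C val_def)
    next
      case zero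
      then have "\<not> c ! j" using tj by auto
      moreover have "cnt c \<le> cnt tl0" using zero C by (intro cnt_mono) (auto simp: tl0_nth)
      ultimately show ?thesis using C by (simp add: x vout_C val_def)
    next
      case none
      then show ?thesis using tj C by simp
    qed
  qed
qed

definition "s0 h = (if d h = 2 then tau h else sig h)"

lemma d_cases: "d h = 1 \<or> d h = 2" using d12[of h] by auto

lemma dev1_s0: "dev d 1 s0 s' = dev d 2 s' tau"
  unfolding dev_def s0_def fun_eq_iff using d_cases by auto

lemma dev2_s0: "dev d 2 s0 s' = dev d 1 s' sig"
  unfolding dev_def s0_def fun_eq_iff using d_cases by auto

lemma s0_eq1: "s0 = dev d 2 s0 tau" unfolding dev_def s0_def fun_eq_iff by auto
lemma s0_eq2: "s0 = dev d 1 s0 sig" unfolding dev_def s0_def fun_eq_iff using d_cases by auto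

lemma v_s0: "v (play s0) = val"
  using upper[of s0] lower[of s0] s0_eq1 s0_eq2 by (metis antisym)

lemma nash_s0: "nash 2 d prefo v s0"
  unfolding nash_iff v_s0 dev1_s0 dev2_s0 using upper lower by blast

lemma ne_val:
  assumes "nash 2 d prefo v s"
  shows "val \<le> v (play s)" "\<And>s'. val \<le> v (play (dev d 2 s s'))"
proof -
  show "val \<le> v (play s)" using assms lower[of s] unfolding nash_iff by (metis le_trans)
  then show "\<And>s'. val \<le> v (play (dev d 2 s s'))" using assms unfolding nash_iff by (metis le_trans)
qed

lemma val_ge2: "2 \<le> val" by (simp add: val_def)

lemma ne_F:
  assumes ne: "nash 2 d prefo v s" and i: "i < n"
  shows "win1 (dF i) (WF i) (\<lambda>r. s (Pw i @ r))"
  unfolding win1_def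
proof
  fix \<tau> :: "bool list \<Rightarrow> bool"
  define s' where "s' h = (if length h \<le> i then length h < i else \<tau> (drop (Suc i) h))" for h
  let ?p = "dev d 2 s s'"
  have cy: "play ?p \<in> cyl (Pw i)"
  proof (rule play_follow)
    fix k assume "k < length (Pw i)"
    then have k: "k \<le> i" by simp
    show "?p (take k (Pw i)) = Pw i ! k"
      using k i by (simp add: take_Pw dev_def d_root s'_def Pw_nth)
  qed
  have rest: "(\<lambda>r. ?p (Pw i @ r)) = (\<lambda>h. if dF i h = 1 then s (Pw i @ h) else \<tau> h)"
    unfolding fun_eq_iff dev_def s'_def using i dF12[OF i] by (auto simp: d_F)
  have x: "play ?p = cat (Pw i) (play (\<lambda>r. ?p (Pw i @ r)))" by (rule play_cat[OF cy])
  show "play (\<lambda>h. if dF i h = 1 then s (Pw i @ h) else \<tau> h) \<in> WF i"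
  proof (rule ccontr)
    assume "play (\<lambda>h. if dF i h = 1 then s (Pw i @ h) else \<tau> h) \<notin> WF i"
    then have "v (play ?p) = 1" unfolding x rest by (simp add: vout_F[OF i])
    then show False using ne_val(2)[OF ne, of s'] val_ge2 by simp
  qed
qed

lemma ne_dev_ch:
  fixes s \<tau> :: "bool list \<Rightarrow> bool"
  assumes j: "j < m"
  defines "u \<equiv> Pw n @ clist s n m @ Pw j"
  shows "\<exists>s'. play (dev d 2 s s') = cat u (play (\<lambda>h. if dW j h = 2 then \<tau> h else s (u @ h)))"
proof -
  let ?c = "clist s n m"
  define s' where "s' h = (if length h \<le> n then length h < n else if length h < Suc n + m then False
     else if length h - (Suc n + m) \<le> j then length h - (Suc n + m) < j
     else \<tau> (drop (Suc n + m + Suc j) h))" for h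
  let ?p = "dev d 2 s s'"
  have cy: "play ?p \<in> cyl u"
  proof (rule play_follow)
    fix k assume k: "k < length u"
    consider (a) "k \<le> n" | (b) "Suc n \<le> k" "k < Suc n + m" | (c) a where "k = Suc n + m + a" "a \<le> j"
    proof -
      have kk: "k < Suc n + m + Suc j" using k unfolding u_def by simp
      show ?thesis
      proof (cases "k \<le> n")
        case True then show ?thesis using that(1) by blast
      next
        case F1: False
        show ?thesis
        proof (cases "k < Suc n + m")
          case True then show ?thesis using that(2) F1 by simp
        next
          case False
          then have "k = Suc n + m + (k - (Suc n + m))" "k - (Suc n + m) \<le> j" using kk by simp_all
          then show ?thesis using that(3) by blast
        qed
      qed
    qed
    then show "?p (take k u) = u ! k"
    proof cases
      case a
      then have "take k u = replicate k True" unfolding u_def by (simp add: take_Pw)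
      then show ?thesis using a unfolding u_def by (simp add: dev_def d_root s'_def Pw_nth nth_append)
    next
      case b
      then obtain l where l: "k = Suc n + l" "l < m" by (metis add_less_cancel_left le_Suc_ex)
      then have "take k u = Pw n @ clist s n l" unfolding u_def by (simp add: take_clist)
      then show ?thesis using l unfolding u_def by (simp add: dev_def d_cl nth_append clist_nth)
    next
      case c
      then have "take k u = Pw n @ ?c @ replicate a True" unfolding u_def by (simp add: take_Pw)
      then show ?thesis using c j unfolding u_def by (simp add: dev_def d_ch s'_def nth_append Pw_nth)
    qed
  qed
  have rest: "(\<lambda>r. ?p (u @ r)) = (\<lambda>h. if dW j h = 2 then \<tau> h else s (u @ h))"
    unfolding fun_eq_iff dev_def s'_def u_def using j by (auto simp: d_W)
  show ?thesis using play_cat[OF cy] rest by metis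
qed

lemma ne_claims:
  assumes ne: "nash 2 d prefo v s" and j: "j < m"
  shows "clist s n m ! j = T j"
proof -
  let ?c = "clist s n m"
  have vx: "\<And>\<tau>. val \<le> v (cat (Pw n @ ?c @ Pw j') (play (\<lambda>h. if dW j' h = 2 then \<tau> h else s ((Pw n @ ?c @ Pw j') @ h))))"
    if "j' < m" for j' using ne_dev_ch[OF that] ne_val(2)[OF ne] by metis
  have no1: "?c ! l \<longrightarrow> T l" if l: "l < m" for l
  proof
    assume cl: "?c ! l"
    show "T l"
    proof (rule ccontr)
      assume nt: "\<not> T l"
      let ?y = "play (\<lambda>h. if dW l h = 2 then \<tau>W l h else s ((Pw n @ ?c @ Pw l) @ h))"
      have "?y \<notin> WW l" using \<tau>W[OF l nt, unfolded win2_def, rule_format, of "\<lambda>h. s ((Pw n @ ?c @ Pw l) @ h)"] by simp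
      then have "v (cat (Pw n @ ?c @ Pw l) ?y) = 1" using l cl by (simp add: vout_C)
      then show False using vx[OF l, of "\<tau>W l"] val_ge2 by simp
    qed
  qed
  show ?thesis
  proof (rule ccontr)
    assume ne1: "?c ! j \<noteq> T j"
    then have "\<not> ?c ! j" "T j" using no1[OF j] by auto
    have "cnt ?c < cnt tl0"
      by (rule cnt_strict[where j=j]) (use no1 j \<open>\<not> ?c ! j\<close> \<open>T j\<close> in \<open>auto simp: tl0_nth\<close>)
    moreover have "v (cat (Pw n @ ?c @ Pw j) (play (\<lambda>h. if dW j h = 2 then \<sigma>F 0 h else s ((Pw n @ ?c @ Pw j) @ h))))
        = cnt ?c + 2" using j \<open>\<not> ?c ! j\<close> by (simp add: vout_C)
    ultimately show False using vx[OF j, of "\<sigma>F 0"] by (simp add: val_def)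
  qed
qed

end



definition b2n :: "bool \<Rightarrow> nat" where "b2n b = (if b then 1 else 0)"

lemma wcode_alt: "wcode w = list_encode (map b2n w)"
  by (simp add: wcode_def b2n_def[abs_def])

lemma wdecode_wcode[simp]: "wdecode (wcode w) = w"
  by (simp add: wcode_def wdecode_def comp_def)

lemma llen_wcode[simp]: "llen (wcode w) = length w" by (simp add: wcode_alt)
lemma lnth_wcode: "i < length w \<Longrightarrow> lnth (wcode w) i = b2n (w ! i)" by (simp add: wcode_alt)
lemma ldrop_wcode[simp]: "ldrop k (wcode w) = wcode (drop k w)" by (simp add: wcode_alt drop_map)
lemma lapp_wcode[simp]: "lapp (wcode u) (wcode w) = wcode (u @ w)" by (simp add: wcode_alt)
lemma b2n_0[simp]: "b2n b = 0 \<longleftrightarrow> \<not> b" by (simp add: b2n_def)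
lemma wcode_Nil: "wcode [] = 0" by (simp add: wcode_def)
lemma wcode_Cons: "wcode (b # w) = lcons (b2n b) (wcode w)" by (simp add: wcode_alt)

definition tf :: "nat \<Rightarrow> nat" where "tf i = lgenb i (\<lambda>_. 1) (lcons 0 0)"
definition wD :: "nat \<Rightarrow> nat" where "wD n = lgenb (Suc n) (\<lambda>_. 1) 0"
definition bitn :: "nat \<Rightarrow> nat \<Rightarrow> nat" where "bitn c l = (c div 2 ^ l) mod 2"
definition wbits :: "nat \<Rightarrow> nat \<Rightarrow> nat" where "wbits c m = lgenb m (bitn c) 0"
definition bw :: "nat \<Rightarrow> nat \<Rightarrow> bool list" where "bw c m = map (\<lambda>l. odd (c div 2 ^ l)) [0..<m]"
definition popc :: "nat \<Rightarrow> nat \<Rightarrow> nat" where "popc c m = rec_nat 0 (\<lambda>l r. r + bitn c l) m"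
definition cwd :: "nat \<Rightarrow> nat \<Rightarrow> nat \<Rightarrow> nat \<Rightarrow> nat" where
  "cwd n m ci j = lapp (tf n) (lapp (wbits ci m) (tf j))"
definition ewd :: "nat \<Rightarrow> nat \<Rightarrow> nat \<Rightarrow> nat" where
  "ewd n m ci = lapp (tf n) (lapp (wbits ci m) (lgenb m (\<lambda>_. 1) 0))"

lemma tf_eq: "tf i = wcode (Pw i)"
proof -
  have "tf i = lgenb i (\<lambda>_. 1) (list_encode [0])" by (simp add: tf_def lcons_def)
  also have "\<dots> = list_encode (map (\<lambda>_. 1) [0..<i] @ [0])" by (rule lgenb_enc)
  also have "\<dots> = wcode (Pw i)" by (simp add: wcode_alt Pw_def b2n_def map_replicate_const)
  finally show ?thesis .
qed

lemma rep_eq: "lgenb m (\<lambda>_. 1) 0 = wcode (replicate m True)"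
proof -
  have "lgenb m (\<lambda>_. 1) 0 = lgenb m (\<lambda>_. 1) (list_encode [])" by simp
  also have "\<dots> = list_encode (map (\<lambda>_. 1) [0..<m] @ [])" by (rule lgenb_enc)
  also have "\<dots> = wcode (replicate m True)" by (simp add: wcode_alt b2n_def map_replicate_const)
  finally show ?thesis .
qed

lemma wD_eq: "wD n = wcode (Dw n)"
  unfolding wD_def rep_eq Dw_def ..

lemma bitn_b2n: "bitn c l = b2n (odd (c div 2 ^ l))"
  by (simp add: bitn_def b2n_def odd_iff_mod_2_eq_one even_iff_mod_2_eq_zero)

lemma bitn_fun: "bitn c = (\<lambda>l. b2n (odd (c div 2 ^ l)))"
  by (rule ext) (rule bitn_b2n)

lemma wbits_eq: "wbits c m = wcode (bw c m)"
proof -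
  have "wbits c m = lgenb m (bitn c) (list_encode [])" by (simp add: wbits_def)
  also have "\<dots> = list_encode (map (bitn c) [0..<m] @ [])" by (rule lgenb_enc)
  also have "\<dots> = wcode (bw c m)" by (simp add: wcode_alt bw_def bitn_fun comp_def)
  finally show ?thesis .
qed

lemma length_bw[simp]: "length (bw c m) = m" by (simp add: bw_def)
lemma bw_nth: "l < m \<Longrightarrow> bw c m ! l = odd (c div 2 ^ l)" by (simp add: bw_def)

lemma popc_eq: "popc c m = cnt (bw c m)"
proof -
  have "rec_nat 0 (\<lambda>l r. r + bitn c l) k = card {l. l < k \<and> odd (c div 2 ^ l)}" for k
  proof (induction k)
    case (Suc k)
    have e: "{l. l < Suc k \<and> odd (c div 2 ^ l)} = {l. l < k \<and> odd (c div 2 ^ l)} \<union> (if odd (c div 2 ^ k) then {k} else {})"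
      by (auto simp: less_Suc_eq)
    show ?case using Suc by (simp add: e bitn_b2n b2n_def card_insert_if)
  qed simp
  moreover have "{l. l < length (bw c m) \<and> bw c m ! l} = {l. l < m \<and> odd (c div 2 ^ l)}"
    by (auto simp: bw_nth)
  ultimately show ?thesis by (simp add: popc_def cnt_def)
qed

lemma cwd_eq: "cwd n m ci j = wcode (Pw n @ bw ci m @ Pw j)"
  by (simp add: cwd_def tf_eq wbits_eq)

lemma ewd_eq: "ewd n m ci = wcode (Pw n @ bw ci m @ replicate m True)"
  unfolding ewd_def tf_eq wbits_eq rep_eq by simp

definition bnum :: "bool list \<Rightarrow> nat" where "bnum c = (\<Sum>l<length c. b2n (c ! l) * 2 ^ l)"

lemma bnum_lt: "bnum c < 2 ^ length c"
proof (induction c rule: rev_induct)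
  case (snoc b c)
  have "bnum (c @ [b]) = bnum c + b2n b * 2 ^ length c"
    by (simp add: bnum_def nth_append)
  also have "\<dots> < 2 ^ length c + 2 ^ length c" using snoc by (simp add: b2n_def)
  finally show ?case by simp
qed (simp add: bnum_def)

lemma bw_bnum: "bw (bnum c) (length c) = c"
proof (induction c rule: rev_induct)
  case (snoc b c)
  have bn: "bnum (c @ [b]) = bnum c + b2n b * 2 ^ length c"
    by (simp add: bnum_def nth_append)
  show ?case
  proof (rule nth_equalityI)
    show "length (bw (bnum (c @ [b])) (length (c @ [b]))) = length (c @ [b])" by simp
  next
    fix l assume "l < length (bw (bnum (c @ [b])) (length (c @ [b])))"
    then have l: "l < Suc (length c)" by simp
    show "bw (bnum (c @ [b])) (length (c @ [b])) ! l = (c @ [b]) ! l"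
    proof (cases "l < length c")
      case True
      have "(bnum c + b2n b * 2 ^ length c) div 2 ^ l = bnum c div 2 ^ l + b2n b * 2 ^ (length c - l)"
      proof -
        have eq: "b2n b * 2 ^ length c = (b2n b * 2 ^ (length c - l)) * 2 ^ l"
          using True by (simp add: power_add[symmetric] mult.assoc)
        show ?thesis unfolding eq by simp
      qed
      moreover have "even (b2n b * 2 ^ (length c - l))" using True by simp
      ultimately have "odd ((bnum c + b2n b * 2 ^ length c) div 2 ^ l) = odd (bnum c div 2 ^ l)"
        by simp
      moreover have "odd (bnum c div 2 ^ l) = c ! l"
        using snoc True by (metis bw_nth)
      ultimately show ?thesis using True l by (simp add: bw_nth bn nth_append)
    next
      case False
      then have ll: "l = length c" using l by simp
      have "(bnum c + b2n b * 2 ^ length c) div 2 ^ length c = b2n b"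
        using bnum_lt[of c] by simp
      then show ?thesis using ll by (simp add: bw_nth bn b2n_def)
    qed
  qed
qed (simp add: bw_def)

section \<open>Turn function\<close>

definition posF :: "nat \<Rightarrow> nat \<Rightarrow> nat" where "posF i y = 2 ^ Suc i * (2 * y + 1)"
definition posW :: "nat \<Rightarrow> nat \<Rightarrow> nat" where "posW j y = 2 ^ Suc j * (2 * y + 1) + 1"

definition rbc :: "nat \<Rightarrow> nat \<Rightarrow> nat" where
  "rbc n y = (LEAST b. (b \<le> n \<and> b < llen y \<and> lnth y b = 0) \<or> b = Suc n)"
definition chc :: "nat \<Rightarrow> nat \<Rightarrow> nat" where
  "chc m z = (LEAST j. (j < m \<and> j < llen z \<and> lnth z j = 0) \<or> j = m)"

definition dpos :: "nat \<Rightarrow> nat \<Rightarrow> nat \<Rightarrow> nat" where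
  "dpos n m y = (let b = rbc n y in if b < n then posF b (2 * ldrop (Suc b) y)
     else if b = n then (let z = ldrop m (ldrop (Suc n) y); j = chc m z in
        if j < m then posW j (2 * ldrop (Suc j) z) else 0) else 0)"

definition dfun :: "nat \<Rightarrow> nat \<Rightarrow> nat \<Rightarrow> nat \<Rightarrow> nat" where
  "dfun n m y v = (let b = rbc n y in if b = Suc n then (if llen y \<le> n then 2 else 1)
     else if b < n then v
     else (let r = ldrop (Suc n) y in if llen r < m then 1
       else (let z = ldrop m r; j = chc m z in if j = m then (if llen z < m then 2 else 1) else v)))"

definition dgame :: "baire \<Rightarrow> bool list \<Rightarrow> nat" where
  "dgame P w = dfun (P 0) (P 1) (wcode w) (P (dpos (P 0) (P 1) (wcode w)))"

lemma rbc_w: "rbc n (wcode w) = (LEAST b. (b \<le> n \<and> b < length w \<and> \<not> w ! b) \<or> b = Suc n)"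
  unfolding rbc_def llen_wcode
  by (rule arg_cong[where f=Least]) (auto simp: fun_eq_iff lnth_wcode)

lemma chc_w: "chc m (wcode w) = (LEAST j. (j < m \<and> j < length w \<and> \<not> w ! j) \<or> j = m)"
  unfolding chc_def llen_wcode
  by (rule arg_cong[where f=Least]) (auto simp: fun_eq_iff lnth_wcode)

lemma rbc_Pw: "i \<le> n \<Longrightarrow> rbc n (wcode (Pw i @ r)) = i"
  unfolding rbc_w by (rule Least_equality) (auto simp: nth_append Pw_nth not_less[symmetric])

lemma rbc_rep: "a \<le> n \<Longrightarrow> rbc n (wcode (replicate a True)) = Suc n"
  unfolding rbc_w by (rule Least_equality) auto

lemma chc_Pw: "j < m \<Longrightarrow> chc m (wcode (Pw j @ r)) = j"
  unfolding chc_w by (rule Least_equality) (auto simp: nth_append Pw_nth not_less[symmetric])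

lemma chc_rep: "chc m (wcode (replicate a True)) = m"
  unfolding chc_w by (rule Least_equality) auto

lemma rbc_le: "rbc n y \<le> Suc n"
  unfolding rbc_def by (rule Least_le) simp

lemma chc_le: "chc m z \<le> m"
  unfolding chc_def by (rule Least_le) simp

context
  fixes P :: baire
  assumes dtF: "\<And>i w. i < P 0 \<Longrightarrow> P (posF i (2 * wcode w)) \<in> {1, 2}"
    and dtW: "\<And>j w. j < P 1 \<Longrightarrow> P (posW j (2 * wcode w)) \<in> {1, 2}"
begin

lemma dgame12: "dgame P h \<in> {1, 2}"
proof -
  let ?n = "P 0" and ?m = "P 1" and ?y = "wcode h"
  define b where "b = rbc ?n ?y"
  have b: "b \<le> Suc ?n" unfolding b_def by (rule rbc_le)
  define z where "z = ldrop ?m (ldrop (Suc ?n) ?y)"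
  have z: "z = wcode (drop ?m (drop (Suc ?n) h))" unfolding z_def by simp
  define j where "j = chc ?m z"
  have j: "j \<le> ?m" unfolding j_def by (rule chc_le)
  show ?thesis
  proof (cases "b = Suc ?n")
    case True then show ?thesis unfolding dgame_def dfun_def b_def[symmetric] by simp
  next
    case F1: False
    show ?thesis
    proof (cases "b < ?n")
      case True
      have "dgame P h = P (posF b (2 * wcode (drop (Suc b) h)))"
        using True unfolding dgame_def dfun_def dpos_def b_def[symmetric] by simp
      then show ?thesis using dtF[OF True] by simp
    next
      case False
      then have bn: "b = ?n" using F1 b by simp
      show ?thesis
      proof (cases "j = ?m")
        case True
        then show ?thesis using bn unfolding dgame_def dfun_def Let_def
          unfolding b_def[symmetric] z_def[symmetric] j_def[symmetric] by simp
      next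
        case False
        then have jm: "j < ?m" using j by simp
        have "dgame P h = (if llen (ldrop (Suc ?n) ?y) < ?m then 1 else P (posW j (2 * ldrop (Suc j) z)))"
          using bn jm unfolding dgame_def dfun_def dpos_def Let_def
          unfolding b_def[symmetric] z_def[symmetric] j_def[symmetric] by simp
        then show ?thesis using dtW[OF jm] z by auto
      qed
    qed
  qed
qed

lemma dgame_root: "a \<le> P 0 \<Longrightarrow> dgame P (replicate a True) = 2"
  by (simp add: dgame_def dfun_def rbc_rep)

lemma dgame_F: "i < P 0 \<Longrightarrow> dgame P (Pw i @ r) = P (posF i (2 * wcode r))"
  by (simp add: dgame_def dfun_def dpos_def rbc_Pw)

lemma dgame_cl: "length c < P 1 \<Longrightarrow> dgame P (Pw (P 0) @ c) = 1"
  by (simp add: dgame_def dfun_def rbc_Pw)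

lemma dgame_ch: "length c = P 1 \<Longrightarrow> a < P 1 \<Longrightarrow> dgame P (Pw (P 0) @ c @ replicate a True) = 2"
  by (simp add: dgame_def dfun_def rbc_Pw chc_rep)

lemma dgame_W: "length c = P 1 \<Longrightarrow> j < P 1 \<Longrightarrow> dgame P (Pw (P 0) @ c @ Pw j @ r) = P (posW j (2 * wcode r))"
  by (simp add: dgame_def dfun_def dpos_def rbc_Pw chc_Pw)

end



definition leaf :: "nat \<Rightarrow> nat \<Rightarrow> bool list \<Rightarrow> bool" where
  "leaf n m u \<longleftrightarrow> (\<exists>i<n. u = Pw i) \<or> u = Dw n \<or> (\<exists>c j. length c = m \<and> j < m \<and> u = Pw n @ c @ Pw j)
     \<or> (\<exists>c. length c = m \<and> u = Pw n @ c @ replicate m True)"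

definition leafof :: "nat \<Rightarrow> nat \<Rightarrow> cantor \<Rightarrow> bool list" where
  "leafof n m x = (let b = (LEAST b. b \<le> n \<and> \<not> x b \<or> b = Suc n) in
     if b < n then Pw b else if b = Suc n then Dw n else
     (let c = map (\<lambda>l. x (Suc n + l)) [0..<m]; j = (LEAST j. j < m \<and> \<not> x (Suc n + m + j) \<or> j = m) in
      if j < m then Pw n @ c @ Pw j else Pw n @ c @ replicate m True))"

lemma leafof_cat:
  assumes "leaf n m u"
  shows "leafof n m (cat u y) = u"
  using assms unfolding leaf_def
proof (elim disjE exE conjE)
  fix i assume i: "i < n" "u = Pw i"
  have "(LEAST b. b \<le> n \<and> \<not> cat u y b \<or> b = Suc n) = i"
    by (rule least_rb_Pw) (use i in auto)
  then show ?thesis using i by (simp add: leafof_def)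
next
  assume u: "u = Dw n"
  have "(LEAST b. b \<le> n \<and> \<not> cat u y b \<or> b = Suc n) = Suc n"
    by (rule least_rb_Dw) (use u in auto)
  then show ?thesis using u by (simp add: leafof_def)
next
  fix c j assume cj: "length c = m" "j < m" "u = Pw n @ c @ Pw j"
  let ?x = "cat (Pw n @ c @ Pw j) y"
  have x: "?x k = (if k < Suc n then Pw n ! k else if k < Suc n + m then c ! (k - Suc n)
     else cat (Pw j) y (k - Suc n - m))" for k by (rule cat3_nth[OF cj(1)])
  have b: "(LEAST b. b \<le> n \<and> \<not> ?x b \<or> b = Suc n) = n"
    by (rule least_rb_Pw) (auto simp: x)
  have jj: "(LEAST j'. j' < m \<and> \<not> ?x (Suc n + m + j') \<or> j' = m) = j"
    by (rule Least_equality) (use cj in \<open>auto simp: x Pw_nth not_less[symmetric]\<close>)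
  have c: "map (\<lambda>l. ?x (Suc n + l)) [0..<m] = c" using cj by (auto intro!: nth_equalityI simp: x)
  show ?thesis using cj(1,2) unfolding cj(3) leafof_def Let_def b jj c by simp
next
  fix c assume cj: "length c = m" "u = Pw n @ c @ replicate m True"
  let ?x = "cat (Pw n @ c @ replicate m True) y"
  have x: "?x k = (if k < Suc n then Pw n ! k else if k < Suc n + m then c ! (k - Suc n)
     else cat (replicate m True) y (k - Suc n - m))" for k by (rule cat3_nth[OF cj(1)])
  have b: "(LEAST b. b \<le> n \<and> \<not> ?x b \<or> b = Suc n) = n"
    by (rule least_rb_Pw) (auto simp: x)
  have jj: "(LEAST j'. j' < m \<and> \<not> ?x (Suc n + m + j') \<or> j' = m) = m"
    by (rule Least_equality) (use cj in \<open>auto simp: x\<close>)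
  have c: "map (\<lambda>l. ?x (Suc n + l)) [0..<m] = c" using cj by (auto intro!: nth_equalityI simp: x)
  show ?thesis using cj(1) unfolding cj(2) leafof_def Let_def b jj c by simp
qed

lemma leaf_unique:
  assumes "leaf n m u" "leaf n m w" "x \<in> cyl u" "x \<in> cyl w"
  shows "u = w"
  using leafof_cat[OF assms(1), of "shift (length u) x"] leafof_cat[OF assms(2), of "shift (length w) x"]
    assms(3,4) by (metis cyl_iff)

lemma leaf_in_cyl_iff:
  assumes "leaf n m u" "leaf n m w" "x \<in> cyl u"
  shows "x \<in> cyl w \<longleftrightarrow> w = u"
  using leaf_unique[OF assms(1,2) assms(3)] assms(3) by auto

lemma leaf_Pw: "i < n \<Longrightarrow> leaf n m (Pw i)" by (auto simp: leaf_def)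
lemma leaf_Dw: "leaf n m (Dw n)" by (auto simp: leaf_def)
lemma leaf_C: "length c = m \<Longrightarrow> j < m \<Longrightarrow> leaf n m (Pw n @ c @ Pw j)" by (auto simp: leaf_def)
lemma leaf_E: "length c = m \<Longrightarrow> leaf n m (Pw n @ c @ replicate m True)" by (auto simp: leaf_def)

lemma Pw_eq_iff[simp]: "Pw i = Pw j \<longleftrightarrow> i = j"
  by (metis length_Pw nat.inject)

lemma Pw_ne_rep: "Pw j \<noteq> replicate k True"
  by (metis Pw_nth_last in_set_replicate nth_mem length_Pw lessI)

lemma Dw_ne_Pw: "i \<le> n \<Longrightarrow> Dw n \<noteq> Pw i @ w"
proof
  assume "i \<le> n" "Dw n = Pw i @ w"
  then have "Dw n ! i = (Pw i @ w) ! i" by simp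
  then show False using \<open>i \<le> n\<close> by (simp add: nth_append)
qed

section \<open>Preimages\<close>

definition clopW :: "nat \<Rightarrow> nat \<Rightarrow> nat \<Rightarrow> nat \<Rightarrow> bool list" where
  "clopW n m t r = (let ci = r div Suc m; j = r mod Suc m in
     if (j = m \<or> \<not> odd (ci div 2 ^ j)) \<and> t \<le> cnt (bw ci m) + 2
     then (if j = m then Pw n @ bw ci m @ replicate m True else Pw n @ bw ci m @ Pw j) else Dw n)"

definition pieceW :: "nat \<Rightarrow> nat \<Rightarrow> nat \<Rightarrow> bool list" where
  "pieceW n m pc = (if pc < n then Pw pc else (let r = pc - n; ci = r div m; j = r mod m in
     if odd (ci div 2 ^ j) then Pw n @ bw ci m @ Pw j else Dw n))"

definition pieceS :: "nat \<Rightarrow> nat \<Rightarrow> (nat \<Rightarrow> cantor set) \<Rightarrow> (nat \<Rightarrow> cantor set) \<Rightarrow> nat \<Rightarrow> cantor set" where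
  "pieceS n m WF WW pc = (if pc < n then WF pc else WW ((pc - n) mod m))"

lemma leaf_clopW: "leaf n m (clopW n m t r)"
proof -
  have "r mod Suc m < m \<or> r mod Suc m = m" using mod_less_divisor[of "Suc m" r] by linarith
  then show ?thesis unfolding clopW_def Let_def using leaf_Dw leaf_C leaf_E by auto
qed

lemma leaf_pieceW: "pc < n + 2 ^ m * m \<Longrightarrow> leaf n m (pieceW n m pc)"
proof -
  assume pc: "pc < n + 2 ^ m * m"
  show ?thesis
  proof (cases "pc < n")
    case True then show ?thesis by (simp add: pieceW_def leaf_Pw)
  next
    case False
    then have "0 < m" using pc by (cases m) auto
    then have "(pc - n) mod m < m" by simp
    then show ?thesis using False unfolding pieceW_def Let_def using leaf_Dw leaf_C by auto
  qed
qed

lemma Pw_ne_long: "i < n \<Longrightarrow> Pw i \<noteq> Pw n @ w"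
  by (metis length_Pw length_append le_add1 not_less Suc_less_eq)

lemma Pw_ne_long2: "i < n \<Longrightarrow> Pw n @ w \<noteq> Pw i"
  using Pw_ne_long by metis

lemma divmod_lt: "j < (k::nat) \<Longrightarrow> (ci * k + j) div k = ci \<and> (ci * k + j) mod k = j"
  by (simp add: add.commute)

lemma lt_bound: "ci < 2 ^ m \<Longrightarrow> j < k \<Longrightarrow> ci * k + j < 2 ^ m * (k::nat)"
proof -
  assume "ci < 2 ^ m" "j < k"
  then have "ci * k + j < ci * k + k" by simp
  also have "\<dots> = Suc ci * k" by simp
  also have "\<dots> \<le> 2 ^ m * k" using \<open>ci < 2 ^ m\<close> by (intro mult_le_mono1) simp
  finally show ?thesis .
qed

lemma preimage:
  assumes t: "2 \<le> t" "t \<le> m + 2"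
  shows "cyl (Dw n) \<union> (\<Union>r<2 ^ m * Suc m. cyl (clopW n m t r)) \<union>
     (\<Union>pc<n + 2 ^ m * m. resc (pieceW n m pc) (pieceS n m WF WW pc)) = {x. t \<le> vout n m WF WW x}"
  (is "?L = ?R")
proof (intro set_eqI)
  fix x :: cantor
  have memL: "x \<in> ?L \<longleftrightarrow> x \<in> cyl (Dw n) \<or> (\<exists>r<2 ^ m * Suc m. x \<in> cyl (clopW n m t r)) \<or>
     (\<exists>pc<n + 2 ^ m * m. x \<in> cyl (pieceW n m pc) \<and> shift (length (pieceW n m pc)) x \<in> pieceS n m WF WW pc)"
    by (auto simp: resc_iff)
  show "x \<in> ?L \<longleftrightarrow> x \<in> ?R"
  proof (cases x rule: regions[where n=n and m=m])
    case (F i)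
    let ?u = "Pw i"
    have lu: "leaf n m ?u" using F by (simp add: leaf_Pw)
    have xs: "x = cat ?u (shift (Suc i) x)" using F(2) cyl_iff by (metis length_Pw)
    have c1: "x \<notin> cyl (Dw n)" using leaf_in_cyl_iff[OF lu leaf_Dw F(2)] Dw_ne_Pw[of i n "[]"] F by auto
    have c2: "x \<notin> cyl (clopW n m t r)" for r
    proof -
      have "clopW n m t r \<noteq> Pw i"
        unfolding clopW_def Let_def using Pw_ne_long2[OF F(1)] Dw_ne_Pw[of i n "[]"] F(1) by auto
      then show ?thesis using leaf_in_cyl_iff[OF lu leaf_clopW F(2)] by simp
    qed
    have c3: "x \<in> cyl (pieceW n m pc) \<longleftrightarrow> pc = i" if "pc < n + 2 ^ m * m" for pc
    proof -
      have "pieceW n m pc = Pw i \<longleftrightarrow> pc = i"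
        unfolding pieceW_def Let_def using Pw_ne_long2[OF F(1)] Dw_ne_Pw[of i n "[]"] F(1) by auto
      then show ?thesis using leaf_in_cyl_iff[OF lu leaf_pieceW[OF that] F(2)] by simp
    qed
    have iN: "i < n + 2 ^ m * m" using F(1) by simp
    have "x \<in> ?L \<longleftrightarrow> shift (length (pieceW n m i)) x \<in> pieceS n m WF WW i"
      unfolding memL using c1 c2 c3 iN by blast
    moreover have "pieceW n m i = Pw i" "pieceS n m WF WW i = WF i" using F(1)
      by (simp_all add: pieceW_def pieceS_def)
    ultimately have "x \<in> ?L \<longleftrightarrow> shift (Suc i) x \<in> WF i" by simp
    moreover have "x \<in> ?R \<longleftrightarrow> shift (Suc i) x \<in> WF i"
      using t F(1) by (subst xs, simp add: vout_F)
    ultimately show ?thesis by simp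
  next
    case D
    have "x \<in> ?R" using t D by (simp, metis cyl_iff vout_D)
    moreover have "x \<in> ?L" using D by simp
    ultimately show ?thesis by simp
  next
    case (C c j)
    let ?u = "Pw n @ c @ Pw j"
    have lu: "leaf n m ?u" using C by (simp add: leaf_C)
    have xs: "x = cat ?u (shift (length ?u) x)" using C(3) cyl_iff by metis
    have c1: "x \<notin> cyl (Dw n)" using leaf_in_cyl_iff[OF lu leaf_Dw C(3)] Dw_ne_Pw[of n n] by auto
    have c2: "x \<notin> cyl (clopW n m t r)" if nc: "\<not> (\<not> c ! j \<and> t \<le> cnt c + 2)" for r
    proof -
      have "clopW n m t r \<noteq> ?u"
      proof
        assume eq: "clopW n m t r = ?u"
        let ?ci = "r div Suc m" and ?j = "r mod Suc m"
        have ne: "Dw n \<noteq> ?u" using Dw_ne_Pw[of n n] by simp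
        have cond: "(?j = m \<or> \<not> odd (?ci div 2 ^ ?j)) \<and> t \<le> cnt (bw ?ci m) + 2"
          using eq ne unfolding clopW_def Let_def by (auto split: if_splits)
        show False
        proof (cases "?j = m")
          case True
          then have "Pw n @ bw ?ci m @ replicate m True = ?u" using eq cond unfolding clopW_def Let_def by simp
          then show False using C(1) Pw_ne_rep[of j m] by simp
        next
          case False
          then have "Pw n @ bw ?ci m @ Pw ?j = ?u" using eq cond unfolding clopW_def Let_def by simp
          then have "bw ?ci m = c" "?j = j" using C(1) by simp_all
          then show False using nc cond False C(2) by (auto simp: bw_nth)
        qed
      qed
      then show ?thesis using leaf_in_cyl_iff[OF lu leaf_clopW C(3)] by simp
    qed
    have c3: "x \<in> cyl (pieceW n m pc) \<and> shift (length (pieceW n m pc)) x \<in> pieceS n m WF WW pc \<longleftrightarrow>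
        (\<exists>ci. ci < 2 ^ m \<and> pc = n + ci * m + j \<and> bw ci m = c \<and> c ! j \<and> shift (length ?u) x \<in> WW j)"
      if pc: "pc < n + 2 ^ m * m" for pc
    proof -
      have m0: "0 < m" using C by simp
      have "pieceW n m pc = ?u \<longleftrightarrow> (\<exists>ci. ci < 2 ^ m \<and> pc = n + ci * m + j \<and> bw ci m = c \<and> c ! j)"
      proof
        assume eq: "pieceW n m pc = ?u"
        have pn: "\<not> pc < n" using eq Pw_ne_long[of pc n] unfolding pieceW_def by auto
        let ?ci = "(pc - n) div m" and ?j = "(pc - n) mod m"
        have "odd (?ci div 2 ^ ?j)" using eq pn Dw_ne_Pw[of n n] unfolding pieceW_def Let_def by (auto split: if_splits)
        moreover have "Pw n @ bw ?ci m @ Pw ?j = ?u" using eq pn calculation unfolding pieceW_def Let_def by simp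
        ultimately have a: "bw ?ci m = c" "?j = j" "odd (?ci div 2 ^ ?j)" using C(1) by simp_all
        have "?ci < 2 ^ m" using pc pn m0 by (simp add: less_mult_imp_div_less div_less_iff_less_mult mult.commute)
        moreover have "pc = n + ?ci * m + j" using pn a(2) by (metis add.assoc le_add_diff_inverse not_less div_mult_mod_eq)
        moreover have "c ! j" using a C(2) by (metis bw_nth)
        ultimately show "\<exists>ci. ci < 2 ^ m \<and> pc = n + ci * m + j \<and> bw ci m = c \<and> c ! j" using a by blast
      next
        assume "\<exists>ci. ci < 2 ^ m \<and> pc = n + ci * m + j \<and> bw ci m = c \<and> c ! j"
        then obtain ci where ci: "ci < 2 ^ m" "pc = n + ci * m + j" "bw ci m = c" "c ! j" by blast
        have dm: "(pc - n) div m = ci" "(pc - n) mod m = j" using ci(2) C(2) by simp_all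
        have "odd (ci div 2 ^ j)" using ci C(2) by (metis bw_nth)
        then show "pieceW n m pc = ?u" using ci dm unfolding pieceW_def Let_def by simp
      qed
      moreover have pS: "pieceS n m WF WW pc = WW j" if "pc = n + ci * m + j" for ci
        using that C(2) by (simp add: pieceS_def)
      moreover note li = leaf_in_cyl_iff[OF lu leaf_pieceW[OF pc] C(3)]
      ultimately show ?thesis by metis
    qed
    have vx: "vout n m WF WW x = (if c ! j then (if shift (length ?u) x \<in> WW j then m + 2 else 1) else cnt c + 2)"
      by (subst xs, rule vout_C[OF C(1,2)])
    show ?thesis
    proof (cases "\<not> c ! j \<and> t \<le> cnt c + 2")
      case True
      let ?r = "bnum c * Suc m + j"
      have r: "?r < 2 ^ m * Suc m" using bnum_lt[of c] C by (intro lt_bound) auto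
      have dm: "?r div Suc m = bnum c" "?r mod Suc m = j" using divmod_lt[of j "Suc m" "bnum c"] C(2) by auto
      have od: "odd (bnum c div 2 ^ j) = c ! j" using bw_nth[OF C(2), of "bnum c"] bw_bnum[of c] C(1) by simp
      have "clopW n m t ?r = ?u" unfolding clopW_def Let_def dm od using True C bw_bnum[of c] by simp
      then have "x \<in> cyl (clopW n m t ?r)" using C(3) by simp
      then have "x \<in> ?L" using r by blast
      moreover have "x \<in> ?R" using True vx by simp
      ultimately show ?thesis by simp
    next
      case nc: False
      have nclop: "\<not> (\<exists>r<2 ^ m * Suc m. x \<in> cyl (clopW n m t r))"
        using c2[OF nc] by blast
      show ?thesis
      proof (cases "c ! j \<and> shift (length ?u) x \<in> WW j")
        case True
        let ?pc = "n + bnum c * m + j"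
        have pc: "?pc < n + 2 ^ m * m" using bnum_lt[of c] C by (simp add: add.assoc lt_bound)
        have "\<exists>ci. ci < 2 ^ m \<and> ?pc = n + ci * m + j \<and> bw ci m = c \<and> c ! j \<and> shift (length ?u) x \<in> WW j"
          using True bnum_lt[of c] bw_bnum[of c] C(1) by blast
        then have "x \<in> resc (pieceW n m ?pc) (pieceS n m WF WW ?pc)" using c3[OF pc] by (simp add: resc_iff)
        then have "x \<in> ?L" using pc by blast
        moreover have "x \<in> ?R" using True vx t by simp
        ultimately show ?thesis by simp
      next
        case False
        have "x \<notin> ?L" using memL c1 nclop c3 False by auto
        moreover have "x \<notin> ?R" using False nc vx t by auto
        ultimately show ?thesis by simp
      qed
    qed
  next
    case (E c)
    let ?u = "Pw n @ c @ replicate m True"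
    have lu: "leaf n m ?u" using E by (simp add: leaf_E)
    have xs: "x = cat ?u (shift (length ?u) x)" using E(2) cyl_iff by metis
    have vx: "vout n m WF WW x = cnt c + 2" by (subst xs, rule vout_E[OF E(1)])
    show ?thesis
    proof (cases "t \<le> cnt c + 2")
      case True
      let ?r = "bnum c * Suc m + m"
      have r: "?r < 2 ^ m * Suc m" using bnum_lt[of c] E by (intro lt_bound) auto
      have dm: "?r div Suc m = bnum c" "?r mod Suc m = m" using divmod_lt[of m "Suc m" "bnum c"] by auto
      have "clopW n m t ?r = ?u" unfolding clopW_def Let_def dm using True E bw_bnum[of c] by simp
      then have "x \<in> cyl (clopW n m t ?r)" using E(2) by simp
      then have "x \<in> ?L" using r by blast
      then show ?thesis using True vx by simp
    next
      case False
      have c1: "x \<notin> cyl (Dw n)" using leaf_in_cyl_iff[OF lu leaf_Dw E(2)] Dw_ne_Pw[of n n] by auto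
      have c2: "x \<notin> cyl (clopW n m t r)" for r
      proof -
        have "clopW n m t r \<noteq> ?u"
        proof
          assume eq: "clopW n m t r = ?u"
          let ?ci = "r div Suc m" and ?j = "r mod Suc m"
          have ne: "Dw n \<noteq> ?u" using Dw_ne_Pw[of n n] by simp
          have cond: "(?j = m \<or> \<not> odd (?ci div 2 ^ ?j)) \<and> t \<le> cnt (bw ?ci m) + 2"
            using eq ne unfolding clopW_def Let_def by (auto split: if_splits)
          show False
          proof (cases "?j = m")
            case True
            then have "Pw n @ bw ?ci m @ replicate m True = ?u" using eq cond unfolding clopW_def Let_def by simp
            then have "bw ?ci m = c" using E(1) by simp
            then show False using cond False by simp
          next
            case F2: False
            then have "Pw n @ bw ?ci m @ Pw ?j = ?u" using eq cond unfolding clopW_def Let_def by simp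
            then show False using E(1) Pw_ne_rep[of ?j m] by simp
          qed
        qed
        then show ?thesis using leaf_in_cyl_iff[OF lu leaf_clopW E(2)] by simp
      qed
      have c3: "x \<notin> cyl (pieceW n m pc)" if pc: "pc < n + 2 ^ m * m" for pc
      proof -
        have "pieceW n m pc \<noteq> ?u"
          unfolding pieceW_def Let_def using Pw_ne_long[of pc n] Dw_ne_Pw[of n n] E(1) Pw_ne_rep by auto
        then show ?thesis using leaf_in_cyl_iff[OF lu leaf_pieceW[OF pc] E(2)] by simp
      qed
      have "x \<notin> ?L" using memL c1 c2 c3 by auto
      then show ?thesis using False vx by simp
    qed
  qed
qed



definition cw :: "nat \<Rightarrow> nat \<Rightarrow> nat \<Rightarrow> nat \<Rightarrow> nat" where
  "cw n m t r = (let ci = r div Suc m; j = r mod Suc m in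
     if (j = m \<or> bitn ci j = 0) \<and> t \<le> popc ci m + 2
     then (if j = m then ewd n m ci else cwd n m ci j) else wD n)"

definition ccode :: "nat \<Rightarrow> nat \<Rightarrow> nat \<Rightarrow> nat" where
  "ccode n m t = lgenb (2 ^ m * Suc m) (cw n m t) (lcons (wD n) 0)"

definition pwc :: "nat \<Rightarrow> nat \<Rightarrow> nat \<Rightarrow> nat" where
  "pwc n m pc = (if pc < n then tf pc else (let r = pc - n; ci = r div m; j = r mod m in
     if bitn ci j = 1 then cwd n m ci j else wD n))"

definition Gdig :: "nat \<Rightarrow> nat \<Rightarrow> nat \<Rightarrow> nat \<Rightarrow> nat \<Rightarrow> nat" where
  "Gdig n m t x v = (if t \<le> 1 then (if pfst x = 1 then 1 else 0) else if m + 2 < t then 0 else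
     (let g = pfst x; y = psnd x in if g = 0 then n + 2 ^ m * m else if g = 1 then ccode n m t
        else if g = 2 then pwc n m y else if g = 3 then v else 0))"

definition Gpos :: "nat \<Rightarrow> nat \<Rightarrow> nat \<Rightarrow> nat \<Rightarrow> nat" where
  "Gpos n m t x = (let g = pfst x; y = psnd x; pc = pfst y; dg = psnd y in
     if 2 \<le> t \<and> t \<le> m + 2 \<and> g = 3 then (if pc < n then posF pc (2 * dg + 1)
       else posW ((pc - n) mod m) (2 * dg + 1)) else 0)"

lemma bitn_0: "bitn c l = 0 \<longleftrightarrow> \<not> odd (c div 2 ^ l)" by (simp add: bitn_b2n)
lemma bitn_1: "bitn c l = 1 \<longleftrightarrow> odd (c div 2 ^ l)" by (simp add: bitn_b2n b2n_def)

lemma cw_eq: "cw n m t r = wcode (clopW n m t r)"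
  unfolding cw_def clopW_def Let_def bitn_0 popc_eq by (simp add: ewd_eq cwd_eq wD_eq)

lemma pwc_eq: "pwc n m pc = wcode (pieceW n m pc)"
  unfolding pwc_def pieceW_def Let_def bitn_1 by (simp add: tf_eq cwd_eq wD_eq)

lemma clopen_ccode: "clopen_code (ccode n m t) = cyl (Dw n) \<union> (\<Union>r<2 ^ m * Suc m. cyl (clopW n m t r))"
proof -
  have "ccode n m t = lgenb (2 ^ m * Suc m) (cw n m t) (list_encode [wD n])"
    by (simp add: ccode_def lcons_def)
  also have "\<dots> = list_encode (map (cw n m t) [0..<2 ^ m * Suc m] @ [wD n])" by (rule lgenb_enc)
  finally have "list_decode (ccode n m t) = map (cw n m t) [0..<2 ^ m * Suc m] @ [wD n]" by simp
  then show ?thesis unfolding clopen_code_def by (auto simp: cw_eq wD_eq)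
qed

lemma clopen_code_0: "clopen_code 0 = {}" by (simp add: clopen_code_def)
lemma clopen_code_1: "clopen_code (Suc 0) = UNIV"
proof -
  have "list_decode 1 = [0]" by (metis list_decode.simps(2) list_decode.simps(1) One_nat_def prod_decode_0 case_prod_conv)
  then show ?thesis by (simp add: clopen_code_def wdecode_def cyl_def)
qed

lemma vout_range: "vout n m WF WW x \<in> {1..m + 2}"
proof -
  have "card {l. l < m \<and> x (Suc n + l)} \<le> m"
    by (metis (no_types, lifting) card_lessThan card_mono finite_lessThan lessThan_iff mem_Collect_eq subsetI)
  then show ?thesis unfolding vout_def Let_def by auto
qed

definition Gname :: "baire \<Rightarrow> nat \<Rightarrow> baire" where
  "Gname P t = (\<lambda>x. Gdig (P 0) (P 1) t x (P (Gpos (P 0) (P 1) t x)))"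

lemma gamma2_Gname:
  fixes \<delta> :: pcls and P :: baire and WF WW :: "nat \<Rightarrow> cantor set"
  assumes nF: "\<And>i. i < P 0 \<Longrightarrow> \<delta> (\<lambda>dg. P (posF i (2 * dg + 1))) = Some (WF i)"
    and nW: "\<And>j. j < P 1 \<Longrightarrow> \<delta> (\<lambda>dg. P (posW j (2 * dg + 1))) = Some (WW j)"
  shows "gamma2 \<delta> (Gname P t) = Some {x. t \<le> vout (P 0) (P 1) WF WW x}"
proof -
  let ?n = "P 0" and ?m = "P 1" and ?q = "Gname P t"
  let ?v = "vout ?n ?m WF WW"
  have cb: "comp_b ?q k i = Gname P t (prod_encode (k, i))" for k i by (simp add: comp_b_def)
  consider (lo) "t \<le> 1" | (hi) "?m + 2 < t" | (mid) "2 \<le> t" "t \<le> ?m + 2" by linarith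
  then show ?thesis
  proof cases
    case lo
    have "{x. t \<le> ?v x} = UNIV" using lo vout_range[of ?n ?m WF WW] by (auto, metis atLeastAtMost_iff le_trans)
    moreover have "gamma2 \<delta> ?q = Some UNIV"
      unfolding gamma2_def cb using lo by (simp add: Gname_def Gdig_def clopen_code_1)
    ultimately show ?thesis by simp
  next
    case hi
    have "{x. t \<le> ?v x} = {}" using hi vout_range[of ?n ?m WF WW] by (auto, metis atLeastAtMost_iff le_trans not_le)
    moreover have "gamma2 \<delta> ?q = Some {}"
      unfolding gamma2_def cb using hi by (simp add: Gname_def Gdig_def clopen_code_0)
    ultimately show ?thesis by simp
  next
    case mid
    let ?N = "?n + 2 ^ ?m * ?m"
    have N: "comp_b ?q 0 0 = ?N" unfolding cb using mid by (simp add: Gname_def Gdig_def)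
    have C: "comp_b ?q 1 0 = ccode ?n ?m t" unfolding cb using mid by (simp add: Gname_def Gdig_def)
    have Wd: "comp_b ?q 2 i = pwc ?n ?m i" for i unfolding cb using mid by (simp add: Gname_def Gdig_def)
    have nm: "comp_b (comp_b ?q 3) i = (if i < ?n then (\<lambda>dg. P (posF i (2 * dg + 1)))
        else (\<lambda>dg. P (posW ((i - ?n) mod ?m) (2 * dg + 1))))" for i
      using mid by (auto simp: comp_b_def Gname_def Gdig_def Gpos_def)
    have ps: "\<delta> (comp_b (comp_b ?q 3) i) = Some (pieceS ?n ?m WF WW i)" if i: "i < ?N" for i
    proof (cases "i < ?n")
      case True then show ?thesis using nF by (simp add: nm pieceS_def)
    next
      case False
      then have "0 < ?m" using i by (cases "P 1") auto
      then show ?thesis using False nW[of "(i - ?n) mod ?m"] by (simp add: nm pieceS_def)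
    qed
    have "gamma2 \<delta> ?q = Some (clopen_code (ccode ?n ?m t) \<union>
        (\<Union>i<?N. resc (pieceW ?n ?m i) (pieceS ?n ?m WF WW i)))"
      unfolding gamma2_def N C Wd using ps by (simp add: pwc_eq)
    also have "\<dots> = Some {x. t \<le> ?v x}"
      unfolding clopen_ccode using preimage[OF mid, of ?n WF WW] by simp
    finally show ?thesis .
  qed
qed



definition setmin :: "nat \<Rightarrow> nat" where "setmin z = (LEAST k. odd (z div 2 ^ k) \<or> k = z)"
definition setmax :: "nat \<Rightarrow> nat" where "setmax z = (LEAST k. even (z div 2 ^ Suc k) \<or> k = z)"
definition thr :: "nat \<Rightarrow> nat \<Rightarrow> nat \<Rightarrow> nat" where
  "thr m a z = (if a = 1 then (if z = 0 then m + 3 else setmin z) else (if z = 0 then 1 else Suc (setmax z)))"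
definition prefbit :: "nat \<Rightarrow> nat" where
  "prefbit y = (if (if pfst y = 1 then pfst (psnd y) < psnd (psnd y) else psnd (psnd y) < pfst (psnd y)) then 1 else 0)"

definition Hdig :: "nat \<Rightarrow> nat \<Rightarrow> nat \<Rightarrow> nat \<Rightarrow> nat" where
  "Hdig n m v x = (let g = pfst x; y = psnd x in
    if g = 0 then 2 else if g = 1 then m + 2 else if g = 2 then dfun n m y v else if g = 3 then prefbit y
    else if g = 4 then (if psnd y = 0 then (if pfst (pfst y) = 1 then 0 else 1)
        else Gdig n m (thr m (pfst (pfst y)) (psnd (pfst y))) (psnd y - 1) v)
    else 0)"

definition hpos :: "nat \<Rightarrow> nat \<Rightarrow> nat \<Rightarrow> nat" where
  "hpos n m x = (let g = pfst x; y = psnd x in if g = 2 then dpos n m y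
    else if g = 4 \<and> psnd y \<noteq> 0 then Gpos n m (thr m (pfst (pfst y)) (psnd (pfst y))) (psnd y - 1) else 0)"

definition Hname :: "baire \<Rightarrow> baire" where
  "Hname P = (\<lambda>x. Hdig (P 0) (P 1) (P (hpos (P 0) (P 1) x)) x)"

lemma set_encode_bit: "finite U \<Longrightarrow> odd (set_encode U div 2 ^ k) \<longleftrightarrow> k \<in> U"
  using set_encode_inverse[of U] unfolding set_decode_def by (metis mem_Collect_eq)

lemma set_encode_ge: "finite U \<Longrightarrow> k \<in> U \<Longrightarrow> k < set_encode U"
proof -
  assume "finite U" "k \<in> U"
  then have "2 ^ k \<le> set_encode U" unfolding set_encode_def by (intro member_le_sum) auto
  moreover have "k < 2 ^ k" by (rule less_exp)
  ultimately show ?thesis by linarith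
qed

lemma setmin_eq: "finite U \<Longrightarrow> U \<noteq> {} \<Longrightarrow> setmin (set_encode U) = Min U"
  unfolding setmin_def
proof (rule Least_equality)
  assume U: "finite U" "U \<noteq> {}"
  show "odd (set_encode U div 2 ^ Min U) \<or> Min U = set_encode U"
    using U by (simp add: set_encode_bit)
next
  fix y assume U: "finite U" "U \<noteq> {}" and y: "odd (set_encode U div 2 ^ y) \<or> y = set_encode U"
  then show "Min U \<le> y"
    by (metis Min_in Min_le less_imp_le set_encode_bit set_encode_ge le_trans)
qed

lemma setmax_eq:
  assumes "finite U" "M \<in> U" "\<And>k. 1 \<le> k \<Longrightarrow> k \<le> M \<Longrightarrow> k \<in> U" "Suc M \<notin> U"
  shows "setmax (set_encode U) = M"
  unfolding setmax_def
proof (rule Least_equality)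
  have "even (set_encode U div 2 ^ Suc M)" using assms(1,4) set_encode_bit by blast
  then show "even (set_encode U div 2 ^ Suc M) \<or> M = set_encode U" by simp
next
  fix y assume y: "even (set_encode U div 2 ^ Suc y) \<or> y = set_encode U"
  show "M \<le> y"
  proof (rule ccontr)
    assume "\<not> M \<le> y"
    then have "Suc y \<in> U" using assms(3) by simp
    then have "odd (set_encode U div 2 ^ Suc y)" using assms(1) set_encode_bit by blast
    moreover have "y < set_encode U" using set_encode_ge[OF assms(1,2)] \<open>\<not> M \<le> y\<close> by simp
    ultimately show False using y by simp
  qed
qed

lemma upper1: "upper no (prefo 1) U \<Longrightarrow> U \<noteq> {} \<Longrightarrow> U = {Min U..no}"
proof -
  assume u: "upper no (prefo 1) U" "U \<noteq> {}"
  have sub: "U \<subseteq> {1..no}" and cl: "\<And>a b. a \<in> U \<Longrightarrow> b \<in> {1..no} \<Longrightarrow> a < b \<Longrightarrow> b \<in> U"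
    using u unfolding upper_def prefo_def by auto
  have f: "finite U" using sub finite_subset by blast
  have mi: "Min U \<in> U" using f u(2) by simp
  show ?thesis
  proof
    show "U \<subseteq> {Min U..no}" using f sub by auto
  next
    show "{Min U..no} \<subseteq> U"
    proof
      fix b assume b: "b \<in> {Min U..no}"
      show "b \<in> U"
      proof (cases "b = Min U")
        case True then show ?thesis using mi by simp
      next
        case False
        then show ?thesis using cl[OF mi, of b] b mi sub by auto
      qed
    qed
  qed
qed

lemma upper2: "upper no (prefo 2) U \<Longrightarrow> U \<noteq> {} \<Longrightarrow> U = {1..Max U}"
proof -
  assume u: "upper no (prefo 2) U" "U \<noteq> {}"
  have sub: "U \<subseteq> {1..no}" and cl: "\<And>a b. a \<in> U \<Longrightarrow> b \<in> {1..no} \<Longrightarrow> b < a \<Longrightarrow> b \<in> U"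
    using u unfolding upper_def prefo_def by auto
  have f: "finite U" using sub finite_subset by blast
  have ma: "Max U \<in> U" using f u(2) by simp
  show ?thesis
  proof
    show "U \<subseteq> {1..Max U}" using f sub by auto
  next
    show "{1..Max U} \<subseteq> U"
    proof
      fix b assume b: "b \<in> {1..Max U}"
      show "b \<in> U"
      proof (cases "b = Max U")
        case True then show ?thesis using ma by simp
      next
        case False
        then show ?thesis using cl[OF ma, of b] b ma sub by auto
      qed
    qed
  qed
qed

lemma comp_b4: "comp_b (comp_b (Hname P) 4) (prod_encode (a, z)) =
   (\<lambda>x2. if x2 = 0 then (if a = 1 then 0 else 1) else Gname P (thr (P 1) a z) (x2 - 1))"
  by (auto simp: comp_b_def Hname_def Hdig_def hpos_def Gname_def fun_eq_iff)

lemma gamma_full_name: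
  fixes \<delta> :: pcls and P :: baire and WF WW :: "nat \<Rightarrow> cantor set"
  assumes nF: "\<And>i. i < P 0 \<Longrightarrow> \<delta> (\<lambda>dg. P (posF i (2 * dg + 1))) = Some (WF i)"
    and nW: "\<And>j. j < P 1 \<Longrightarrow> \<delta> (\<lambda>dg. P (posW j (2 * dg + 1))) = Some (WW j)"
    and a: "a \<in> {1..2}" and U: "upper (P 1 + 2) (prefo a) U"
  shows "gamma_full \<delta> (comp_b (comp_b (Hname P) 4) (prod_encode (a, set_encode U))) =
     Some (vout (P 0) (P 1) WF WW -` U)"
proof -
  let ?v = "vout (P 0) (P 1) WF WW"
  let ?no = "P 1 + 2"
  have g: "gamma2 \<delta> (Gname P t) = Some {x. t \<le> ?v x}" for t by (rule gamma2_Gname[where \<delta>=\<delta> and P=P and WF=WF and WW=WW, OF nF nW])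
  have rng: "1 \<le> ?v x" "?v x \<le> ?no" for x using vout_range[of "P 0" "P 1" WF WW x] by auto
  have sub: "U \<subseteq> {1..?no}" using U unfolding upper_def by auto
  have f: "finite U" using sub finite_subset by blast
  show ?thesis
  proof (cases "a = 1")
    case True
    have q: "gamma_full \<delta> (comp_b (comp_b (Hname P) 4) (prod_encode (a, set_encode U))) =
        Some {x. thr (P 1) 1 (set_encode U) \<le> ?v x}"
      unfolding comp_b4 gamma_full_def pc_union_def using True by (simp add: g)
    show ?thesis
    proof (cases "U = {}")
      case e: True
      have "thr (P 1) 1 (set_encode U) = P 1 + 3" using e by (simp add: thr_def)
      moreover have "\<not> P 1 + 3 \<le> ?v x" for x using rng(2)[of x] by linarith
      ultimately show ?thesis unfolding q using e by simp
    next
      case ne: False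
      have u: "U = {Min U..?no}" using upper1[OF U[unfolded True] ne] .
      have se: "set_encode U \<noteq> 0" using ne f by (metis set_encode_inverse set_decode_zero)
      have "thr (P 1) 1 (set_encode U) = Min U" using se setmin_eq[OF f ne] by (simp add: thr_def)
      moreover have ub: "b \<in> U \<longleftrightarrow> b \<in> {Min U..?no}" for b by (rule arg_cong[where f="\<lambda>S. b \<in> S", OF u])
      ultimately show ?thesis unfolding q using rng by (auto simp: ub)
    qed
  next
    case False
    then have a2: "a = 2" using a by auto
    have q: "gamma_full \<delta> (comp_b (comp_b (Hname P) 4) (prod_encode (a, set_encode U))) =
        Some (- {x. thr (P 1) 2 (set_encode U) \<le> ?v x})"
      unfolding comp_b4 gamma_full_def pc_union_def pc_compl_def using a2 by (simp add: g)
    show ?thesis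
    proof (cases "U = {}")
      case e: True
      then show ?thesis unfolding q using rng by (auto simp: thr_def)
    next
      case ne: False
      have u: "U = {1..Max U}" using upper2[OF U[unfolded a2] ne] .
      have se: "set_encode U \<noteq> 0" using ne f by (metis set_encode_inverse set_decode_zero)
      have ma: "Max U \<in> U" using f ne by simp
      have "setmax (set_encode U) = Max U"
      proof (rule setmax_eq[OF f ma])
        fix k assume "1 \<le> k" "k \<le> Max U" then show "k \<in> U" using arg_cong[where f="\<lambda>S. k \<in> S", OF u] by simp
      next
        show "Suc (Max U) \<notin> U" using f ne by (metis Max_ge Suc_n_not_le_n)
      qed
      then have "thr (P 1) 2 (set_encode U) = Suc (Max U)" using se by (simp add: thr_def)
      moreover have ub: "b \<in> U \<longleftrightarrow> b \<in> {1..Max U}" for b by (rule arg_cong[where f="\<lambda>S. b \<in> S", OF u])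
      ultimately show ?thesis unfolding q using rng by (auto simp: ub)
    qed
  qed
qed



lemma game_name_H:
  fixes \<delta> :: pcls and P :: baire and WF WW :: "nat \<Rightarrow> cantor set"
  assumes dtF: "\<And>i w. i < P 0 \<Longrightarrow> P (posF i (2 * wcode w)) \<in> {1, 2}"
    and dtW: "\<And>j w. j < P 1 \<Longrightarrow> P (posW j (2 * wcode w)) \<in> {1, 2}"
    and nF: "\<And>i. i < P 0 \<Longrightarrow> \<delta> (\<lambda>dg. P (posF i (2 * dg + 1))) = Some (WF i)"
    and nW: "\<And>j. j < P 1 \<Longrightarrow> \<delta> (\<lambda>dg. P (posW j (2 * dg + 1))) = Some (WW j)"
  shows "game_name (gamma_full \<delta>) (Hname P) 2 (P 1 + 2) (dgame P) prefo (vout (P 0) (P 1) WF WW)"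
  unfolding game_name_def
proof (intro conjI ballI allI impI)
  show "comp_b (Hname P) 0 0 = 2" by (simp add: comp_b_def Hname_def Hdig_def)
  show "comp_b (Hname P) 1 0 = P 1 + 2" by (simp add: comp_b_def Hname_def Hdig_def)
next
  fix w
  show "dgame P w = comp_b (Hname P) 2 (wcode w)"
    by (simp add: comp_b_def Hname_def Hdig_def hpos_def dgame_def)
  show "dgame P w \<in> {1..2}" using dgame12[OF dtF dtW, of w] by auto
next
  fix a oo oo' assume "a \<in> {1..2::nat}" "oo \<in> {1..P 1 + 2}" "oo' \<in> {1..P 1 + 2}"
  show "comp_b (Hname P) 3 (prod_encode (a, prod_encode (oo, oo'))) = (if prefo a oo oo' then 1 else 0)"
    by (simp add: comp_b_def Hname_def Hdig_def prefbit_def prefo_def)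
next
  fix x show "vout (P 0) (P 1) WF WW x \<in> {1..P 1 + 2}" by (rule vout_range)
next
  fix a U assume au: "a \<in> {1..2::nat}" "upper (P 1 + 2) (prefo a) U"
  show "gamma_full \<delta> (comp_b (comp_b (Hname P) 4) (prod_encode (a, set_encode U))) =
     Some (vout (P 0) (P 1) WF WW -` U)"
    by (rule gamma_full_name[where \<delta>=\<delta> and P=P and WF=WF and WW=WW, OF nF nW au])
qed

lemma fst_pair[simp]: "fst_b (pair_b p q) = p" by (simp add: fst_b_def pair_b_def)
lemma snd_pair[simp]: "snd_b (pair_b p q) = q" by (simp add: snd_b_def pair_b_def)
lemma pair_fst_snd: "pair_b (fst_b q) (snd_b q) = q"
  by (auto simp: fun_eq_iff pair_b_def fst_b_def snd_b_def)

lemma prod_p_iff: "q \<in> prod_p f g p \<longleftrightarrow> fst_b q \<in> f (fst_b p) \<and> snd_b q \<in> g (snd_b p)"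
  unfolding prod_p_def using pair_fst_snd by (auto, metis)

lemma pow_char: "q \<in> pow_p f k t \<longleftrightarrow>
   (\<forall>i<k. fst_b ((snd_b ^^ i) q) \<in> f (fst_b ((snd_b ^^ i) t))) \<and> (snd_b ^^ k) q = (snd_b ^^ k) t"
proof (induction k arbitrary: q t)
  case 0 then show ?case by simp
next
  case (Suc k)
  have "q \<in> pow_p f (Suc k) t \<longleftrightarrow> fst_b q \<in> f (fst_b t) \<and> snd_b q \<in> pow_p f k (snd_b t)"
    by (simp add: prod_p_iff)
  also have "\<dots> \<longleftrightarrow> fst_b q \<in> f (fst_b t) \<and> (\<forall>i<k. fst_b ((snd_b ^^ Suc i) q) \<in> f (fst_b ((snd_b ^^ Suc i) t)))
      \<and> (snd_b ^^ Suc k) q = (snd_b ^^ Suc k) t"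
    by (simp add: Suc.IH funpow_Suc_right del: funpow.simps)
  also have "\<dots> \<longleftrightarrow> (\<forall>i<Suc k. fst_b ((snd_b ^^ i) q) \<in> f (fst_b ((snd_b ^^ i) t))) \<and> (snd_b ^^ Suc k) q = (snd_b ^^ Suc k) t"
    by (auto simp: less_Suc_eq_0_disj simp del: funpow.simps)
  finally show ?case .
qed

lemma snd_pow: "(snd_b ^^ i) t y = t (2 ^ i * Suc y - 1)"
proof (induction i arbitrary: y)
  case (Suc i)
  have "(snd_b ^^ Suc i) t y = (snd_b ^^ i) t (2 * y + 1)" by (simp add: snd_b_def)
  also have "\<dots> = t (2 ^ i * Suc (2 * y + 1) - 1)" by (rule Suc.IH)
  also have "2 ^ i * Suc (2 * y + 1) = 2 ^ Suc i * Suc y" by simp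
  finally show ?case .
qed simp

lemma fst_snd_pow: "fst_b ((snd_b ^^ i) t) y = t (2 ^ i * (2 * y + 1) - 1)"
  by (simp add: fst_b_def snd_pow)

lemma pos_pos: "0 < 2 ^ i * (2 * y + 1 :: nat)" by simp

definition compF :: "baire \<Rightarrow> nat \<Rightarrow> baire" where "compF P i = (\<lambda>y. P (posF i y))"
definition compW :: "baire \<Rightarrow> nat \<Rightarrow> baire" where "compW P j = (\<lambda>y. P (posW j y))"

lemma compF_eq: "fst_b ((snd_b ^^ i) (\<lambda>k. fst_b P (Suc k))) = compF P i"
proof
  fix y
  define a where "a = (2::nat) ^ i * (2 * y + 1)"
  have a0: "Suc (a - 1) = a" unfolding a_def by simp
  have pa: "posF i y = 2 * a" unfolding a_def posF_def by simp
  have "fst_b ((snd_b ^^ i) (\<lambda>k. fst_b P (Suc k))) y = fst_b P (Suc (a - 1))"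
    unfolding a_def by (rule fst_snd_pow)
  also have "\<dots> = P (posF i y)" unfolding a0 pa by (simp add: fst_b_def)
  finally show "fst_b ((snd_b ^^ i) (\<lambda>k. fst_b P (Suc k))) y = compF P i y" by (simp add: compF_def)
qed

lemma compW_eq: "fst_b ((snd_b ^^ i) (\<lambda>k. snd_b P (Suc k))) = compW P i"
proof
  fix y
  define a where "a = (2::nat) ^ i * (2 * y + 1)"
  have a0: "Suc (a - 1) = a" unfolding a_def by simp
  have pa: "posW i y = 2 * a + 1" unfolding a_def posW_def by simp
  have "fst_b ((snd_b ^^ i) (\<lambda>k. snd_b P (Suc k))) y = snd_b P (Suc (a - 1))"
    unfolding a_def by (rule fst_snd_pow)
  also have "\<dots> = P (posW i y)" unfolding a0 pa by (simp add: snd_b_def)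
  finally show "fst_b ((snd_b ^^ i) (\<lambda>k. snd_b P (Suc k))) y = compW P i y" by (simp add: compW_def)
qed

lemma star_nonempty:
  assumes "star_p f p \<noteq> {}" "i < p 0"
  shows "f (fst_b ((snd_b ^^ i) (\<lambda>k. p (Suc k)))) \<noteq> {}"
proof -
  obtain q where "q \<in> star_p f p" using assms(1) by blast
  then have "fst_b ((snd_b ^^ i) q) \<in> f (fst_b ((snd_b ^^ i) (\<lambda>k. p (Suc k))))"
    using assms(2) unfolding star_p_def pow_char by blast
  then show ?thesis by blast
qed



definition val2 :: "nat \<Rightarrow> nat" where "val2 z = (LEAST i. odd (z div 2 ^ i) \<or> i = z)"

lemma pow_div_split: "k \<le> i \<Longrightarrow> (2 ^ i * a) div 2 ^ k = 2 ^ (i - k) * (a::nat)"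
proof -
  assume "k \<le> i"
  then have "(2::nat) ^ i = 2 ^ (i - k) * 2 ^ k" by (metis le_add_diff_inverse2 power_add)
  then have e: "2 ^ i * a = (2 ^ (i - k) * a) * 2 ^ k" by (simp add: mult.commute mult.left_commute)
  show ?thesis unfolding e by simp
qed

lemma val2_eq: "val2 (2 ^ i * (2 * y + 1)) = i"
  unfolding val2_def
proof (rule Least_equality)
  show "odd (2 ^ i * (2 * y + 1) div 2 ^ i) \<or> i = 2 ^ i * (2 * y + 1)" by simp
next
  fix k assume k: "odd (2 ^ i * (2 * y + 1) div 2 ^ k) \<or> k = 2 ^ i * (2 * y + 1)"
  show "i \<le> k"
  proof (rule ccontr)
    assume "\<not> i \<le> k"
    then have ki: "k < i" by simp
    have "2 ^ i * (2 * y + 1) div 2 ^ k = 2 ^ (i - k) * (2 * y + 1)" by (rule pow_div_split) (use ki in simp)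
    then have "even (2 ^ i * (2 * y + 1) div 2 ^ k)" using ki by simp
    moreover have "k < 2 ^ i * (2 * y + 1)"
    proof -
      have "i < 2 ^ i" by (rule less_exp)
      moreover have "(2::nat) ^ i \<le> 2 ^ i * (2 * y + 1)" by simp
      ultimately show ?thesis using ki by linarith
    qed
    ultimately show False using k by simp
  qed
qed

lemma val2_ge: "n \<le> val2 (2 ^ n * Suc y)"
  unfolding val2_def
proof (rule LeastI2_wellorder[of _ "2 ^ n * Suc y"])
  show "odd (2 ^ n * Suc y div 2 ^ (2 ^ n * Suc y)) \<or> 2 ^ n * Suc y = 2 ^ n * Suc y" by simp
next
  fix a assume a: "odd (2 ^ n * Suc y div 2 ^ a) \<or> a = 2 ^ n * Suc y"
  show "n \<le> a"
  proof (rule ccontr)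
    assume "\<not> n \<le> a"
    then have an: "a < n" by simp
    have "2 ^ n * Suc y div 2 ^ a = 2 ^ (n - a) * Suc y" by (rule pow_div_split) (use an in simp)
    then have "even (2 ^ n * Suc y div 2 ^ a)" using an by simp
    moreover have "a < 2 ^ n * Suc y"
    proof -
      have "n < 2 ^ n" by (rule less_exp)
      moreover have "(2::nat) ^ n \<le> 2 ^ n * Suc y" by simp
      ultimately show ?thesis using an by linarith
    qed
    ultimately show False using a by simp
  qed
qed

lemma div_Suc_i: "2 ^ i * (2 * y + 1) div 2 ^ Suc i = (y::nat)"
proof -
  have p: "(2::nat) ^ Suc i = 2 ^ i * 2" by simp
  have "2 ^ i * (2 * y + 1) div 2 ^ i = 2 * y + 1" by simp
  then show ?thesis unfolding p div_mult2_eq by simp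
qed

definition wnorm :: "nat \<Rightarrow> nat" where
  "wnorm z = lgenb (llen z) (\<lambda>k. if lnth z k = 0 then 0 else 1) 0"

lemma wnorm_eq: "wnorm z = wcode (wdecode z)"
proof -
  obtain xs where z: "z = list_encode xs" by (metis list_decode_inverse)
  have "wnorm z = lgenb (length xs) (\<lambda>k. if lnth z k = 0 then 0 else 1) (list_encode [])"
    by (simp add: wnorm_def z)
  also have "\<dots> = list_encode (map (\<lambda>k. if lnth z k = 0 then 0 else 1) [0..<length xs] @ [])" by (rule lgenb_enc)
  also have "\<dots> = wcode (wdecode z)"
    unfolding wcode_alt wdecode_def z by (auto simp: b2n_def intro!: arg_cong[where f=list_encode] nth_equalityI)
  finally show ?thesis .
qed

definition cn :: "(nat \<Rightarrow> nat) \<Rightarrow> nat \<Rightarrow> nat \<Rightarrow> nat" where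
  "cn f n j = rec_nat (tf n) (\<lambda>k w. lapp w (lcons (if f (2 * w + 1) = 1 then 1 else 0) 0)) j"

lemma cn_0[simp]: "cn f n 0 = tf n" by (simp add: cn_def)
lemma cn_Suc[simp]: "cn f n (Suc j) = lapp (cn f n j) (lcons (if f (2 * cn f n j + 1) = 1 then 1 else 0) 0)"
  by (simp add: cn_def)

lemma pair_odd[simp]: "pair_b P S (Suc (2 * k)) = S k" by (simp add: pair_b_def)
lemma pair_even[simp]: "pair_b P S (2 * k) = P k" by (simp add: pair_b_def)
lemma pair_0[simp]: "pair_b P S 0 = P 0" by (simp add: pair_b_def)
lemma pair_2[simp]: "pair_b P S 2 = P 1" by (simp add: pair_b_def)

lemma cn_eq: "cn (pair_b P S) n j = wcode (Pw n @ clist (prof_of S) n j)"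
proof (induction j)
  case 0 then show ?case by (simp add: tf_eq)
next
  case (Suc j)
  let ?u = "Pw n @ clist (prof_of S) n j"
  have e: "lcons (if pair_b P S (2 * wcode ?u + 1) = 1 then 1 else 0) 0 = wcode [prof_of S ?u]"
    by (simp add: prof_of_def wcode_Cons wcode_Nil b2n_def)
  have "cn (pair_b P S) n (Suc j) = lapp (wcode ?u) (wcode [prof_of S ?u])"
    unfolding cn_Suc Suc.IH e ..
  then show ?case by simp
qed

definition Kphi :: "(nat \<Rightarrow> nat) \<Rightarrow> nat \<Rightarrow> nat" where
  "Kphi f x = (let x' = x div 2; i = val2 (Suc x'); y = Suc x' div 2 ^ Suc i in
    if even x then (if i < f 0 then (if f (2 * lapp (tf i) (wnorm y) + 1) = 1 then 1 else 0) else f (2 * (2 * x' + 2)))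
    else (if i < f 2 then (if y = 0 then (if f (2 * cn f (f 0) i + 1) = 1 then 1 else 2) else 0)
          else f (2 * (2 * x' + 3))))"

definition Kout :: "baire \<Rightarrow> baire \<Rightarrow> baire" where "Kout P S = (\<lambda>x. Kphi (pair_b P S) x)"

lemma Suc_a: "Suc (2 ^ i * (2 * y + 1) - 1) = 2 ^ i * (2 * (y::nat) + 1)" by simp
lemma Suc_b: "Suc (2 ^ i * Suc y - 1) = 2 ^ i * Suc (y::nat)" by simp

lemma Kout_even: "fst_b (Kout P S) z = Kphi (pair_b P S) (2 * z)" by (simp add: fst_b_def Kout_def)
lemma Kout_odd: "snd_b (Kout P S) z = Kphi (pair_b P S) (Suc (2 * z))" by (simp add: snd_b_def Kout_def)

lemma KF: "i < P 0 \<Longrightarrow> fst_b ((snd_b ^^ i) (fst_b (Kout P S))) y =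
   (if S (wcode (Pw i @ wdecode y)) = 1 then 1 else 0)"
proof -
  assume i: "i < P 0"
  define a where "a = 2 ^ i * (2 * y + 1) - 1"
  have sa: "Suc a = 2 ^ i * (2 * y + 1)" unfolding a_def by simp
  have va: "val2 (Suc a) = i" unfolding sa by (rule val2_eq)
  have dv0: "Suc a div 2 ^ Suc i = y" unfolding sa by (rule div_Suc_i)
  then have dv: "Suc a div (2 * 2 ^ i) = y" by simp
  have "fst_b ((snd_b ^^ i) (fst_b (Kout P S))) y = Kphi (pair_b P S) (2 * a)"
    unfolding fst_snd_pow Kout_even a_def ..
  also have "\<dots> = (if S (wcode (Pw i @ wdecode y)) = 1 then 1 else 0)"
    unfolding Kphi_def Let_def using i by (simp add: va dv wnorm_eq tf_eq)
  finally show ?thesis .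
qed

lemma KFt: "(snd_b ^^ P 0) (fst_b (Kout P S)) = (snd_b ^^ P 0) (\<lambda>k. fst_b P (Suc k))"
proof
  fix y
  define a where "a = 2 ^ P 0 * Suc y - 1"
  have sa: "Suc a = 2 ^ P 0 * Suc y" unfolding a_def by simp
  have va: "\<not> val2 (Suc a) < P 0" unfolding sa using val2_ge[of "P 0" y] by simp
  have "(snd_b ^^ P 0) (fst_b (Kout P S)) y = Kphi (pair_b P S) (2 * a)"
    unfolding snd_pow Kout_even a_def ..
  also have "\<dots> = P (2 * a + 2)" unfolding Kphi_def Let_def using va by (simp add: pair_b_def)
  also have "\<dots> = (snd_b ^^ P 0) (\<lambda>k. fst_b P (Suc k)) y"
    unfolding snd_pow a_def[symmetric] by (simp add: fst_b_def)
  finally show "(snd_b ^^ P 0) (fst_b (Kout P S)) y = (snd_b ^^ P 0) (\<lambda>k. fst_b P (Suc k)) y" .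
qed

lemma KW: "j < P 1 \<Longrightarrow> fst_b ((snd_b ^^ j) (snd_b (Kout P S))) y =
   (if y = 0 then (if S (cn (pair_b P S) (P 0) j) = 1 then 1 else 2) else 0)"
proof -
  assume j: "j < P 1"
  define a where "a = 2 ^ j * (2 * y + 1) - 1"
  have sa: "Suc a = 2 ^ j * (2 * y + 1)" unfolding a_def by simp
  have va: "val2 (Suc a) = j" unfolding sa by (rule val2_eq)
  have dv0: "Suc a div 2 ^ Suc j = y" unfolding sa by (rule div_Suc_i)
  then have dv: "Suc a div (2 * 2 ^ j) = y" by simp
  have "fst_b ((snd_b ^^ j) (snd_b (Kout P S))) y = Kphi (pair_b P S) (Suc (2 * a))"
    unfolding fst_snd_pow Kout_odd a_def ..
  also have "\<dots> = (if y = 0 then (if S (cn (pair_b P S) (P 0) j) = 1 then 1 else 2) else 0)"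
    unfolding Kphi_def Let_def using j by (simp add: va dv)
  finally show ?thesis .
qed

lemma KWt: "(snd_b ^^ P 1) (snd_b (Kout P S)) = (snd_b ^^ P 1) (\<lambda>k. snd_b P (Suc k))"
proof
  fix y
  define a where "a = 2 ^ P 1 * Suc y - 1"
  have sa: "Suc a = 2 ^ P 1 * Suc y" unfolding a_def by simp
  have va: "\<not> val2 (Suc a) < P 1" unfolding sa using val2_ge[of "P 1" y] by simp
  have "(snd_b ^^ P 1) (snd_b (Kout P S)) y = Kphi (pair_b P S) (Suc (2 * a))"
    unfolding snd_pow Kout_odd a_def ..
  also have "\<dots> = P (2 * a + 3)" unfolding Kphi_def Let_def using va by (simp add: pair_b_def)
  also have "\<dots> = (snd_b ^^ P 1) (\<lambda>k. snd_b P (Suc k)) y"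
    unfolding snd_pow a_def[symmetric] by (simp add: snd_b_def, rule arg_cong[where f=P], simp)
  finally show "(snd_b ^^ P 1) (snd_b (Kout P S)) y = (snd_b ^^ P 1) (\<lambda>k. snd_b P (Suc k)) y" .
qed



lemma dtab_compF: "dtab (compF P i) = (\<lambda>w. P (posF i (2 * wcode w)))"
  by (simp add: dtab_def fst_b_def compF_def fun_eq_iff)
lemma dtab_compW: "dtab (compW P j) = (\<lambda>w. P (posW j (2 * wcode w)))"
  by (simp add: dtab_def fst_b_def compW_def fun_eq_iff)
lemma snd_compF: "snd_b (compF P i) = (\<lambda>dg. P (posF i (2 * dg + 1)))"
  by (simp add: snd_b_def compF_def fun_eq_iff)
lemma snd_compW: "snd_b (compW P j) = (\<lambda>dg. P (posW j (2 * dg + 1)))"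
  by (simp add: snd_b_def compW_def fun_eq_iff)

lemma lin_antag_prefo: "lin_antag no prefo"
  unfolding lin_antag_def prefo_def by auto

lemma gn_no: "game_name \<delta> p np no d pref v \<Longrightarrow> comp_b p 1 0 = no"
  apply (unfold game_name_def) apply (elim conjE) apply assumption done
lemma gn_d: "game_name \<delta> p np no d pref v \<Longrightarrow> d w = comp_b p 2 (wcode w)"
  apply (unfold game_name_def) apply (elim conjE) apply (erule allE[of _ w]) apply (erule conjunct1) done
lemma gn_pref: "game_name \<delta> p np no d pref v \<Longrightarrow> a \<in> {1..np} \<Longrightarrow> oo \<in> {1..no} \<Longrightarrow> oo' \<in> {1..no} \<Longrightarrow>
   comp_b p 3 (prod_encode (a, prod_encode (oo, oo'))) = (if pref a oo oo' then 1 else 0)"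
  apply (unfold game_name_def) apply (elim conjE)
  apply blast done
lemma gn_v: "game_name \<delta> p np no d pref v \<Longrightarrow> v x \<in> {1..no}"
  apply (unfold game_name_def) apply (elim conjE) apply (erule spec) done
lemma gn_U: "game_name \<delta> p np no d pref v \<Longrightarrow> a \<in> {1..np} \<Longrightarrow> upper no (pref a) U \<Longrightarrow>
   \<delta> (comp_b (comp_b p 4) (prod_encode (a, set_encode U))) = Some (v -` U)"
  apply (unfold game_name_def) apply (elim conjE)
  apply blast done

locale stp =
  fixes \<delta>1 :: pcls and P :: baire
  assumes st: "standing \<delta>1"
    and ne: "prod_p (star_p (FindWS \<delta>1)) (star_p (Win \<delta>1)) P \<noteq> {}"
begin

abbreviation "n \<equiv> P 0"
abbreviation "m \<equiv> P 1"
definition "WF i = the (\<delta>1 (\<lambda>dg. P (posF i (2 * dg + 1))))"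
definition "WW j = the (\<delta>1 (\<lambda>dg. P (posW j (2 * dg + 1))))"
definition "dF i r = P (posF i (2 * wcode r))"
definition "dW j r = P (posW j (2 * wcode r))"

lemma dW_eq: "dW j = (\<lambda>w. P (posW j (2 * wcode w)))" by (simp add: dW_def fun_eq_iff)
lemma dF_eq: "dF i = (\<lambda>w. P (posF i (2 * wcode w)))" by (simp add: dF_def fun_eq_iff)

lemma neF: "i < n \<Longrightarrow> FindWS \<delta>1 (compF P i) \<noteq> {}"
proof -
  assume i: "i < n"
  obtain q where "q \<in> prod_p (star_p (FindWS \<delta>1)) (star_p (Win \<delta>1)) P" using ne by blast
  then have "star_p (FindWS \<delta>1) (fst_b P) \<noteq> {}" by (auto simp: prod_p_iff)
  moreover have "i < fst_b P 0" using i by (simp add: fst_b_def)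
  ultimately have "FindWS \<delta>1 (fst_b ((snd_b ^^ i) (\<lambda>k. fst_b P (Suc k)))) \<noteq> {}" by (rule star_nonempty)
  then show ?thesis unfolding compF_eq .
qed

lemma neW: "j < m \<Longrightarrow> Win \<delta>1 (compW P j) \<noteq> {}"
proof -
  assume j: "j < m"
  obtain q where "q \<in> prod_p (star_p (FindWS \<delta>1)) (star_p (Win \<delta>1)) P" using ne by blast
  then have "star_p (Win \<delta>1) (snd_b P) \<noteq> {}" by (auto simp: prod_p_iff)
  moreover have "j < snd_b P 0" using j by (simp add: snd_b_def)
  ultimately have "Win \<delta>1 (fst_b ((snd_b ^^ j) (\<lambda>k. snd_b P (Suc k)))) \<noteq> {}" by (rule star_nonempty)
  then show ?thesis unfolding compW_eq .
qed

lemma inF: "i < n \<Longrightarrow> win_input \<delta>1 (compF P i) (WF i) \<and> (\<exists>\<sigma>. win1 (dF i) (WF i) \<sigma>)"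
proof -
  assume i: "i < n"
  obtain q where "q \<in> FindWS \<delta>1 (compF P i)" using neF[OF i] by blast
  then obtain W where "win_input \<delta>1 (compF P i) W" "\<exists>\<sigma>. win1 (dtab (compF P i)) W \<sigma>"
    unfolding FindWS_def by blast
  moreover then have "W = WF i" unfolding win_input_def WF_def snd_compF by simp
  ultimately show ?thesis by (simp add: dtab_compF dF_def[abs_def])
qed

lemma inW: "j < m \<Longrightarrow> win_input \<delta>1 (compW P j) (WW j)"
proof -
  assume j: "j < m"
  obtain q where "q \<in> Win \<delta>1 (compW P j)" using neW[OF j] by blast
  then obtain W where "win_input \<delta>1 (compW P j) W" unfolding Win_def by blast
  moreover then have "W = WW j" unfolding win_input_def WW_def snd_compW by simp
  ultimately show ?thesis by simp
qed

lemma dtF: "i < n \<Longrightarrow> P (posF i (2 * wcode w)) \<in> {1, 2}"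
  using inF[of i] unfolding win_input_def dtab_compF by blast
lemma dtW: "j < m \<Longrightarrow> P (posW j (2 * wcode w)) \<in> {1, 2}"
  using inW[of j] unfolding win_input_def dtab_compW by blast
lemma nF: "i < n \<Longrightarrow> \<delta>1 (\<lambda>dg. P (posF i (2 * dg + 1))) = Some (WF i)"
  using inF[of i] unfolding win_input_def snd_compF by blast
lemma nW: "j < m \<Longrightarrow> \<delta>1 (\<lambda>dg. P (posW j (2 * dg + 1))) = Some (WW j)"
  using inW[of j] unfolding win_input_def snd_compW by blast

lemma is_gm: "gm n m dF dW WF WW (dgame P)"
proof
  fix i r assume "i < n" then show "dF i r \<in> {1, 2}" unfolding dF_def by (rule dtF)
next
  fix j r assume "j < m" then show "dW j r \<in> {1, 2}" unfolding dW_def by (rule dtW)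
next
  fix h show "dgame P h \<in> {1, 2}" by (rule dgame12[OF dtF dtW])
next
  fix a assume a: "a \<le> n" show "dgame P (replicate a True) = 2" using dgame_root[OF dtF dtW a] by simp
next
  fix i r assume i: "i < n" show "dgame P (Pw i @ r) = dF i r" unfolding dF_def using dgame_F[OF dtF dtW i] by simp
next
  fix c :: "bool list" assume c: "length c < m" show "dgame P (Pw n @ c) = 1" using dgame_cl[OF dtF dtW c] by simp
next
  fix c :: "bool list" and a assume ca: "length c = m" "a < m" show "dgame P (Pw n @ c @ replicate a True) = 2"
    using dgame_ch[OF dtF dtW ca] by simp
next
  fix c :: "bool list" and j r assume cj: "length c = m" "j < m" show "dgame P (Pw n @ c @ Pw j @ r) = dW j r"
    unfolding dW_def using dgame_W[OF dtF dtW cj] by simp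
next
  fix i assume "i < n" then show "\<exists>\<sigma>. win1 (dF i) (WF i) \<sigma>" using inF by blast
next
  fix j assume j: "j < m"
  have "\<forall>h. dW j h \<in> {1, 2}" using dtW[OF j] by (simp add: dW_def)
  moreover have "WW j \<in> cls \<delta>1" using nW[OF j] by (auto simp: cls_def)
  ultimately show "determined (dW j) (WW j)" using st unfolding standing_def by blast
qed

lemma gname: "game_name (gamma_full \<delta>1) (Hname P) 2 (m + 2) (dgame P) prefo (vout n m WF WW)"
  by (rule game_name_H) (use dtF dtW nF nW in auto)

lemma NE_nonempty: "NEap (gamma_full \<delta>1) (Hname P) \<noteq> {}"
proof -
  interpret g: gm n m dF dW WF WW "dgame P" by (rule is_gm)
  define S0 where "S0 z = (if g.s0 (wdecode z) then 1 else 0 :: nat)" for z :: nat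
  have pn: "prof_name S0" by (simp add: prof_name_def S0_def)
  have po: "prof_of S0 = g.s0" by (simp add: prof_of_def S0_def fun_eq_iff)
  have "prof_name S0 \<and> (\<exists>no d pref v. game_name (gamma_full \<delta>1) (Hname P) 2 no d pref v \<and>
      lin_antag no pref \<and> nash 2 d pref v (prof_of S0))"
    by (rule conjI[OF pn], rule exI[of _ "m + 2"], rule exI[of _ "dgame P"], rule exI[of _ prefo],
        rule exI[of _ "vout n m WF WW"], rule conjI[OF gname], rule conjI[OF lin_antag_prefo])
       (unfold po, rule g.nash_s0)
  then have "S0 \<in> NEap (gamma_full \<delta>1) (Hname P)" unfolding NEap_def by simp
  then show ?thesis by blast
qed

lemma NE_unique:
  assumes gn: "game_name (gamma_full \<delta>1) (Hname P) 2 no d pref v" and na: "nash 2 d pref v s"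
  shows "nash 2 (dgame P) prefo (vout n m WF WW) s"
proof -
  let ?v = "vout n m WF WW"
  have g2: "game_name (gamma_full \<delta>1) (Hname P) 2 (m + 2) (dgame P) prefo ?v" by (rule gname)
  have no: "no = m + 2" using gn_no[OF gn] gn_no[OF g2] by simp
  have dd: "d = dgame P" using gn_d[OF gn] gn_d[OF g2] by (simp add: fun_eq_iff)
  have pr: "pref a o1 o2 = prefo a o1 o2" if "a \<in> {1..2}" "o1 \<in> {1..no}" "o2 \<in> {1..no}" for a o1 o2
  proof -
    have "(if pref a o1 o2 then 1 else 0 :: nat) = (if prefo a o1 o2 then 1 else 0)"
      using gn_pref[OF gn that] gn_pref[OF g2 that(1)] that(2,3) no by simp
    then show ?thesis by (auto split: if_splits)
  qed
  have vr1: "v x \<in> {1..no}" for x by (rule gn_v[OF gn])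
  have vr2: "?v x \<in> {1..no}" for x using gn_v[OF g2, of x] no by simp
  have pre: "v -` {t..no} = ?v -` {t..no}" if t: "t \<in> {1..no}" for t
  proof -
    have a1: "(1::nat) \<in> {1..2}" by simp
    have u1: "upper no (pref 1) {t..no}" unfolding upper_def using t pr[OF a1] by (auto simp: prefo_def)
    have u2: "upper (m + 2) (prefo 1) {t..no}" unfolding upper_def using t no by (auto simp: prefo_def)
    have "gamma_full \<delta>1 (comp_b (comp_b (Hname P) 4) (prod_encode (1, set_encode {t..no}))) = Some (v -` {t..no})"
      by (rule gn_U[OF gn a1 u1])
    moreover have "gamma_full \<delta>1 (comp_b (comp_b (Hname P) 4) (prod_encode (1, set_encode {t..no}))) = Some (?v -` {t..no})"
      by (rule gn_U[OF g2 a1 u2])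
    ultimately show ?thesis by simp
  qed
  have vv: "v = ?v"
  proof
    fix x
    have "x \<in> v -` {v x..no}" using vr1[of x] by simp
    then have a: "v x \<le> ?v x" using pre[OF vr1[of x]] by auto
    have "x \<in> ?v -` {?v x..no}" using vr2[of x] by simp
    then have b: "?v x \<le> v x" using pre[OF vr2[of x]] by auto
    show "v x = ?v x" using a b by simp
  qed
  show ?thesis unfolding nash_def
  proof (intro ballI allI)
    fix a s' assume a: "a \<in> {1..2::nat}"
    have "\<not> pref a (v (play s)) (v (play (\<lambda>h. if d h = a then s' h else s h)))"
      using na a unfolding nash_def by blast
    then show "\<not> prefo a (?v (play s)) (?v (play (\<lambda>h. if dgame P h = a then s' h else s h)))"
      using pr[OF a vr1 vr1] unfolding dd vv by simp
  qed
qed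

lemma K_correct:
  assumes S: "S \<in> NEap (gamma_full \<delta>1) (Hname P)"
  shows "Kout P S \<in> prod_p (star_p (FindWS \<delta>1)) (star_p (Win \<delta>1)) P"
proof -
  interpret g: gm n m dF dW WF WW "dgame P" by (rule is_gm)
  obtain no d pref v where pn: "prof_name S" and gn: "game_name (gamma_full \<delta>1) (Hname P) 2 no d pref v"
    and na: "nash 2 d pref v (prof_of S)" using S unfolding NEap_def by blast
  have nash: "nash 2 (dgame P) prefo g.v (prof_of S)" by (rule NE_unique[OF gn na])
  have F: "fst_b (Kout P S) \<in> star_p (FindWS \<delta>1) (fst_b P)"
    unfolding star_p_def pow_char
  proof (intro conjI allI impI)
    fix i assume "i < fst_b P 0"
    then have i: "i < n" by (simp add: fst_b_def)
    define q where "q y = (if S (wcode (Pw i @ wdecode y)) = 1 then 1 else 0 :: nat)" for y :: nat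
    have qe: "fst_b ((snd_b ^^ i) (fst_b (Kout P S))) = q"
      using KF[where P=P and S=S, OF i] by (simp add: q_def fun_eq_iff)
    have pq: "prof_of q = (\<lambda>r. prof_of S (Pw i @ r))" by (simp add: prof_of_def q_def fun_eq_iff)
    have pnq: "prof_name q" by (simp add: prof_name_def q_def)
    have w1: "win1 (dtab (compF P i)) (WF i) (prof_of q)"
      using g.ne_F[OF nash i] unfolding pq dtab_compF dF_def[abs_def] .
    have "q \<in> FindWS \<delta>1 (compF P i)"
      unfolding FindWS_def using inF[OF i] pnq w1 unfolding dtab_compF dF_def[abs_def] by blast
    then show "fst_b ((snd_b ^^ i) (fst_b (Kout P S))) \<in> FindWS \<delta>1 (fst_b ((snd_b ^^ i) (\<lambda>k. fst_b P (Suc k))))"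
      unfolding qe compF_eq .
  next
    show "(snd_b ^^ fst_b P 0) (fst_b (Kout P S)) = (snd_b ^^ fst_b P 0) (\<lambda>k. fst_b P (Suc k))"
      using KFt[of P S] by (simp add: fst_b_def)
  qed
  have W: "snd_b (Kout P S) \<in> star_p (Win \<delta>1) (snd_b P)"
    unfolding star_p_def pow_char
  proof (intro conjI allI impI)
    fix j assume "j < snd_b P 0"
    then have j: "j < m" by (simp add: snd_b_def)
    define q where "q y = (if y = 0 then (if S (cn (pair_b P S) n j) = 1 then 1 else 2) else 0 :: nat)" for y :: nat
    have qe: "fst_b ((snd_b ^^ j) (snd_b (Kout P S))) = q"
      using KW[where P=P and S=S, OF j] by (simp add: q_def fun_eq_iff)
    have c: "S (cn (pair_b P S) n j) = 1 \<longleftrightarrow> g.T j"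
      using g.ne_claims[OF nash j] clist_nth[OF j, of "prof_of S" n]
      by (simp add: cn_eq prof_of_def)
    have dj: "g.T j \<or> (\<exists>\<sigma>. win2 (dW j) (WW j) \<sigma>)" using g.det[OF j] unfolding determined_def g.T_def by blast
    have wi: "win_input \<delta>1 (compW P j) (WW j)" by (rule inW[OF j])
    have "q \<in> Win \<delta>1 (compW P j)"
    proof (cases "g.T j")
      case True
      then have "q 0 = 1" using c by (simp add: q_def)
      moreover have "\<exists>\<sigma>. win1 (dtab (compW P j)) (WW j) \<sigma>" using True unfolding g.T_def dtab_compW dW_eq .
      ultimately show ?thesis unfolding Win_def mem_Collect_eq using wi by blast
    next
      case False
      then have "q 0 = 2" using c by (simp add: q_def)
      moreover have "\<exists>\<sigma>. win2 (dtab (compW P j)) (WW j) \<sigma>" using False dj unfolding dtab_compW dW_eq by blast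
      ultimately show ?thesis unfolding Win_def mem_Collect_eq using wi by blast
    qed
    then show "fst_b ((snd_b ^^ j) (snd_b (Kout P S))) \<in> Win \<delta>1 (fst_b ((snd_b ^^ j) (\<lambda>k. snd_b P (Suc k))))"
      unfolding qe compW_eq .
  next
    show "(snd_b ^^ snd_b P 0) (snd_b (Kout P S)) = (snd_b ^^ snd_b P 0) (\<lambda>k. snd_b P (Suc k))"
      using KWt[of P S] by (simp add: snd_b_def)
  qed
  show ?thesis using F W by (simp add: prod_p_iff)
qed

end



lemma rc_c2: "rc 2 (\<lambda>ys. f (ys ! 0) (ys ! 1)) \<Longrightarrow> rc n A \<Longrightarrow> rc n B \<Longrightarrow> rc n (\<lambda>xs. f (A xs) (B xs))"
  by (drule rc_comp2[of _ n A B]) simp_all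
lemma rc_c1: "rc 1 (\<lambda>ys. f (ys ! 0)) \<Longrightarrow> rc n A \<Longrightarrow> rc n (\<lambda>xs. f (A xs))"
  by (drule rc_comp1[of _ n A]) simp_all
lemma rc_c3: "rc 3 (\<lambda>ys. f (ys ! 0) (ys ! 1) (ys ! 2)) \<Longrightarrow> rc n A \<Longrightarrow> rc n B \<Longrightarrow> rc n C \<Longrightarrow> rc n (\<lambda>xs. f (A xs) (B xs) (C xs))"
  by (drule rc_comp3[of _ n A B C]) simp_all

lemma rc_comp4: "rc 4 g \<Longrightarrow> rc n F \<Longrightarrow> rc n G \<Longrightarrow> rc n K \<Longrightarrow> rc n L \<Longrightarrow> rc n (\<lambda>xs. g [F xs, G xs, K xs, L xs])"
  using rc_comp[of 4 g "[F, G, K, L]" n] by (simp add: less_Suc_eq numeral_eq_Suc)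
lemma rc_comp5: "rc 5 g \<Longrightarrow> rc n F \<Longrightarrow> rc n G \<Longrightarrow> rc n K \<Longrightarrow> rc n L \<Longrightarrow> rc n M \<Longrightarrow> rc n (\<lambda>xs. g [F xs, G xs, K xs, L xs, M xs])"
  using rc_comp[of 5 g "[F, G, K, L, M]" n] by (simp add: less_Suc_eq numeral_eq_Suc)

lemma rc_c4: "rc 4 (\<lambda>ys. f (ys ! 0) (ys ! 1) (ys ! 2) (ys ! 3)) \<Longrightarrow> rc n A \<Longrightarrow> rc n B \<Longrightarrow> rc n C \<Longrightarrow> rc n D
   \<Longrightarrow> rc n (\<lambda>xs. f (A xs) (B xs) (C xs) (D xs))"
  by (drule rc_comp4[of _ n A B C D]) simp_all
lemma rc_c5: "rc 5 (\<lambda>ys. f (ys ! 0) (ys ! 1) (ys ! 2) (ys ! 3) (ys ! 4)) \<Longrightarrow> rc n A \<Longrightarrow> rc n B \<Longrightarrow> rc n C \<Longrightarrow> rc n D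
   \<Longrightarrow> rc n E \<Longrightarrow> rc n (\<lambda>xs. f (A xs) (B xs) (C xs) (D xs) (E xs))"
  by (drule rc_comp5[of _ n A B C D E]) simp_all

declare rc_rec[rci] rc_lgenb[rci] rc_least[rci]

lemma rcb_if[rci]: "rcb n P \<Longrightarrow> rcb n Q \<Longrightarrow> rcb n R \<Longrightarrow> rcb n (\<lambda>xs. if P xs then Q xs else R xs)"
proof -
  assume "rcb n P" "rcb n Q" "rcb n R"
  then have "rc n (\<lambda>xs. if P xs then (if Q xs then 1 else 0) else (if R xs then 1 else 0))"
    unfolding rcb_def by (intro rc_if rc_const) (simp_all add: rcb_def)
  then show ?thesis unfolding rcb_def by (rule rc_cong) simp
qed

lemma tf_b: "rc 1 (\<lambda>ys. tf (ys ! 0))"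
  unfolding tf_def by (intro rci) simp_all
lemmas tf_r[rci] = rc_c1[OF tf_b]

lemma wD_b: "rc 1 (\<lambda>ys. wD (ys ! 0))"
  unfolding wD_def by (intro rci) simp_all
lemmas wD_r[rci] = rc_c1[OF wD_b]

lemma bitn_b: "rc 2 (\<lambda>ys. bitn (ys ! 0) (ys ! 1))"
  unfolding bitn_def by (intro rci) simp_all
lemmas bitn_r[rci] = rc_c2[OF bitn_b]

lemma wbits_b: "rc 2 (\<lambda>ys. wbits (ys ! 0) (ys ! 1))"
  unfolding wbits_def by (intro rci) simp_all
lemmas wbits_r[rci] = rc_c2[OF wbits_b]

lemma popc_b: "rc 2 (\<lambda>ys. popc (ys ! 0) (ys ! 1))"
  unfolding popc_def by (intro rci) simp_all
lemmas popc_r[rci] = rc_c2[OF popc_b]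

lemma cwd_b: "rc 4 (\<lambda>ys. cwd (ys ! 0) (ys ! 1) (ys ! 2) (ys ! 3))"
  unfolding cwd_def by (intro rci) simp_all
lemmas cwd_r[rci] = rc_c4[OF cwd_b]

lemma ewd_b: "rc 3 (\<lambda>ys. ewd (ys ! 0) (ys ! 1) (ys ! 2))"
  unfolding ewd_def by (intro rci) simp_all
lemmas ewd_r[rci] = rc_c3[OF ewd_b]

lemma cw_b: "rc 4 (\<lambda>ys. cw (ys ! 0) (ys ! 1) (ys ! 2) (ys ! 3))"
  unfolding cw_def Let_def by (intro rci) simp_all
lemmas cw_r[rci] = rc_c4[OF cw_b]

lemma ccode_b: "rc 3 (\<lambda>ys. ccode (ys ! 0) (ys ! 1) (ys ! 2))"
  unfolding ccode_def by (intro rci) simp_all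
lemmas ccode_r[rci] = rc_c3[OF ccode_b]

lemma pwc_b: "rc 3 (\<lambda>ys. pwc (ys ! 0) (ys ! 1) (ys ! 2))"
  unfolding pwc_def Let_def by (intro rci) simp_all
lemmas pwc_r[rci] = rc_c3[OF pwc_b]

lemma posF_b: "rc 2 (\<lambda>ys. posF (ys ! 0) (ys ! 1))"
  unfolding posF_def by (intro rci) simp_all
lemmas posF_r[rci] = rc_c2[OF posF_b]

lemma posW_b: "rc 2 (\<lambda>ys. posW (ys ! 0) (ys ! 1))"
  unfolding posW_def by (intro rci) simp_all
lemmas posW_r[rci] = rc_c2[OF posW_b]

lemma Gdig_b: "rc 5 (\<lambda>ys. Gdig (ys ! 0) (ys ! 1) (ys ! 2) (ys ! 3) (ys ! 4))"
  unfolding Gdig_def Let_def by (intro rci) simp_all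
lemmas Gdig_r[rci] = rc_c5[OF Gdig_b]

lemma Gpos_b: "rc 4 (\<lambda>ys. Gpos (ys ! 0) (ys ! 1) (ys ! 2) (ys ! 3))"
  unfolding Gpos_def Let_def by (intro rci) simp_all
lemmas Gpos_r[rci] = rc_c4[OF Gpos_b]

lemma rbc_b: "rc 2 (\<lambda>ys. rbc (ys ! 0) (ys ! 1))"
  unfolding rbc_def by (intro rci) simp_all
lemmas rbc_r[rci] = rc_c2[OF rbc_b]

lemma chc_b: "rc 2 (\<lambda>ys. chc (ys ! 0) (ys ! 1))"
  unfolding chc_def by (intro rci) simp_all
lemmas chc_r[rci] = rc_c2[OF chc_b]

lemma dpos_b: "rc 3 (\<lambda>ys. dpos (ys ! 0) (ys ! 1) (ys ! 2))"
  unfolding dpos_def Let_def by (intro rci) simp_all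
lemmas dpos_r[rci] = rc_c3[OF dpos_b]

lemma dfun_b: "rc 4 (\<lambda>ys. dfun (ys ! 0) (ys ! 1) (ys ! 2) (ys ! 3))"
  unfolding dfun_def Let_def by (intro rci) simp_all
lemmas dfun_r[rci] = rc_c4[OF dfun_b]

lemma setmin_b: "rc 1 (\<lambda>ys. setmin (ys ! 0))"
  unfolding setmin_def by (intro rci) simp_all
lemmas setmin_r[rci] = rc_c1[OF setmin_b]

lemma setmax_b: "rc 1 (\<lambda>ys. setmax (ys ! 0))"
  unfolding setmax_def by (intro rci) simp_all
lemmas setmax_r[rci] = rc_c1[OF setmax_b]

lemma thr_b: "rc 3 (\<lambda>ys. thr (ys ! 0) (ys ! 1) (ys ! 2))"
  unfolding thr_def by (intro rci) simp_all
lemmas thr_r[rci] = rc_c3[OF thr_b]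

lemma prefbit_b: "rc 1 (\<lambda>ys. prefbit (ys ! 0))"
  unfolding prefbit_def by (intro rci) simp_all
lemmas prefbit_r[rci] = rc_c1[OF prefbit_b]

lemma Hdig_b: "rc 4 (\<lambda>ys. Hdig (ys ! 0) (ys ! 1) (ys ! 2) (ys ! 3))"
  unfolding Hdig_def Let_def by (intro rci) simp_all
lemmas Hdig_r[rci] = rc_c4[OF Hdig_b]

lemma hpos_b: "rc 3 (\<lambda>ys. hpos (ys ! 0) (ys ! 1) (ys ! 2))"
  unfolding hpos_def Let_def by (intro rci) simp_all
lemmas hpos_r[rci] = rc_c3[OF hpos_b]



lemma val2_b: "rc 1 (\<lambda>ys. val2 (ys ! 0))"
  unfolding val2_def by (intro rci) simp_all
lemmas val2_r[rci] = rc_c1[OF val2_b]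

lemma wnorm_b: "rc 1 (\<lambda>ys. wnorm (ys ! 0))"
  unfolding wnorm_def by (intro rci) simp_all
lemmas wnorm_r[rci] = rc_c1[OF wnorm_b]

definition Hphi :: "(nat \<Rightarrow> nat) \<Rightarrow> nat \<Rightarrow> nat" where
  "Hphi f x = Hdig (f 0) (f 1) (f (hpos (f 0) (f 1) x)) x"
definition Huse :: "(nat \<Rightarrow> nat) \<Rightarrow> nat \<Rightarrow> nat" where
  "Huse f x = Suc (max 1 (hpos (f 0) (f 1) x))"

lemma Hname_Hphi: "Hname P = (\<lambda>x. Hphi P x)"
  by (simp add: Hname_def Hphi_def fun_eq_iff)

lemma comp_H: "comp_partial (\<lambda>p. Some (\<lambda>x. Hphi p x))"
proof (rule comp_partial_use)
  show "rc 1 (\<lambda>xs. Hphi (lnth (psnd (xs ! 0))) (pfst (xs ! 0)))"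
    unfolding Hphi_def by (intro rci) simp_all
  show "rc 1 (\<lambda>xs. Huse (lnth (psnd (xs ! 0))) (pfst (xs ! 0)))"
    unfolding Huse_def by (intro rci) simp_all
next
  fix f g :: "nat \<Rightarrow> nat" and x
  assume a: "\<forall>i < Huse f x. f i = g i"
  have l: "0 < Huse f x" "1 < Huse f x" "hpos (f 0) (f 1) x < Huse f x" unfolding Huse_def by simp_all
  have f0: "f 0 = g 0" "f 1 = g 1" using a l by blast+
  have f2: "f (hpos (f 0) (f 1) x) = g (hpos (f 0) (f 1) x)" using a l by blast
  show "Hphi f x = Hphi g x \<and> Huse f x = Huse g x"
    unfolding Hphi_def Huse_def f0[symmetric] f2 by simp
qed

definition kpos :: "(nat \<Rightarrow> nat) \<Rightarrow> nat \<Rightarrow> nat" where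
  "kpos f x = (let x' = x div 2; i = val2 (Suc x'); y = Suc x' div 2 ^ Suc i in
    if even x then (if i < f 0 then 2 * lapp (tf i) (wnorm y) + 1 else 2 * (2 * x' + 2))
    else (if i < f 2 then (if y = 0 then 2 * cn f (f 0) i + 1 else 0) else 2 * (2 * x' + 3)))"
definition Kuse :: "(nat \<Rightarrow> nat) \<Rightarrow> nat \<Rightarrow> nat" where
  "Kuse f x = Suc (max 2 (kpos f x))"

lemma list_encode_app_ge: "list_encode xs \<le> list_encode (xs @ ys)"
proof (induction xs)
  case (Cons x xs)
  have "prod_encode (x, list_encode xs) \<le> prod_encode (x, list_encode (xs @ ys))"
    using Cons triangle_mono[of "x + list_encode xs" "x + list_encode (xs @ ys)"]
    by (simp add: prod_encode_def)
  then show ?case by simp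
qed simp

lemma lapp_ge: "a \<le> lapp a b"
proof -
  obtain xs ys where "a = list_encode xs" "b = list_encode ys" by (metis list_decode_inverse)
  then show ?thesis by (simp add: list_encode_app_ge)
qed

lemma cn_step: "cn f n k \<le> cn f n (Suc k)"
  unfolding cn_Suc by (rule lapp_ge)

lemma cn_mono: "l \<le> k \<Longrightarrow> cn f n l \<le> cn f n k"
proof (induction k)
  case (Suc k)
  show ?case
  proof (cases "l = Suc k")
    case True then show ?thesis by simp
  next
    case False
    then have "cn f n l \<le> cn f n k" using Suc by simp
    then show ?thesis using cn_step[of f n k] by linarith
  qed
qed simp

lemma cn_use: "(\<forall>l<k. f (2 * cn f n l + 1) = g (2 * cn f n l + 1)) \<Longrightarrow> cn f n k = cn g n k"
  by (induction k) auto

lemma comp_K: "comp_partial (\<lambda>p. Some (\<lambda>x. Kphi p x))"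
proof (rule comp_partial_use)
  show "rc 1 (\<lambda>xs. Kphi (lnth (psnd (xs ! 0))) (pfst (xs ! 0)))"
    unfolding Kphi_def cn_def Let_def by (intro rci) simp_all
  show "rc 1 (\<lambda>xs. Kuse (lnth (psnd (xs ! 0))) (pfst (xs ! 0)))"
    unfolding Kuse_def kpos_def cn_def Let_def by (intro rci) simp_all
next
  fix f g :: "nat \<Rightarrow> nat" and x
  assume a: "\<forall>i < Kuse f x. f i = g i"
  have l: "0 < Kuse f x" "2 < Kuse f x" "kpos f x < Kuse f x" unfolding Kuse_def by simp_all
  have f0: "f 0 = g 0" "f 2 = g 2" using a l by blast+
  have fk: "f (kpos f x) = g (kpos f x)" using a l by blast
  define x' where "x' = x div 2"
  define i where "i = val2 (Suc x')"
  define y where "y = Suc x' div 2 ^ Suc i"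
  have kp: "kpos h x = (if even x then (if i < h 0 then 2 * lapp (tf i) (wnorm y) + 1 else 2 * (2 * x' + 2))
    else (if i < h 2 then (if y = 0 then 2 * cn h (h 0) i + 1 else 0) else 2 * (2 * x' + 3)))" for h
    unfolding kpos_def Let_def x'_def[symmetric] i_def[symmetric] y_def[symmetric] ..
  have kph: "Kphi h x = (if even x then (if i < h 0 then (if h (2 * lapp (tf i) (wnorm y) + 1) = 1 then 1 else 0) else h (2 * (2 * x' + 2)))
    else (if i < h 2 then (if y = 0 then (if h (2 * cn h (h 0) i + 1) = 1 then 1 else 2) else 0)
          else h (2 * (2 * x' + 3))))" for h
    unfolding Kphi_def Let_def x'_def[symmetric] i_def[symmetric] y_def[symmetric] ..
  have cnq: "cn f (f 0) i = cn g (g 0) i" if "\<not> even x" "i < f 2" "y = 0"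
  proof -
    have "\<forall>l<i. f (2 * cn f (f 0) l + 1) = g (2 * cn f (f 0) l + 1)"
    proof (intro allI impI)
      fix l assume "l < i"
      then have "cn f (f 0) l \<le> cn f (f 0) i" by (intro cn_mono) simp
      then have "2 * cn f (f 0) l + 1 < Kuse f x" using that unfolding Kuse_def kp by simp
      then show "f (2 * cn f (f 0) l + 1) = g (2 * cn f (f 0) l + 1)" using a by blast
    qed
    then show ?thesis using cn_use f0 by metis
  qed
  have kq: "kpos f x = kpos g x"
  proof (cases "even x")
    case True then show ?thesis unfolding kp f0 by simp
  next
    case False
    then show ?thesis using cnq unfolding kp f0 by simp
  qed
  have "Kphi f x = Kphi g x"
  proof (cases "even x")
    case True
    then show ?thesis using fk unfolding kph kp f0 by (cases "i < g 0") simp_all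
  next
    case False
    then show ?thesis using fk cnq unfolding kph kp f0 by (cases "i < g 2"; cases "y = 0") simp_all
  qed
  then show "Kphi f x = Kphi g x \<and> Kuse f x = Kuse g x" unfolding Kuse_def kq by simp
qed

theorem lemma27:
  fixes \<delta>1 :: pcls
  assumes "standing \<delta>1" and "standing (gamma_full \<delta>1)"
  shows "prod_p (star_p (FindWS \<delta>1)) (star_p (Win \<delta>1)) \<le>\<^sub>W NEap (gamma_full \<delta>1)"
  unfolding wred_def
proof (intro exI conjI allI impI)
  show "comp_partial (\<lambda>p. Some (\<lambda>x. Kphi p x))" by (rule comp_K)
  show "comp_partial (\<lambda>p. Some (\<lambda>x. Hphi p x))" by (rule comp_H)
next
  fix G assume G: "realizes G (NEap (gamma_full \<delta>1))"
  show "realizes (\<lambda>p. case Some (\<lambda>x. Hphi p x) of None \<Rightarrow> None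
          | Some r \<Rightarrow> (case G r of None \<Rightarrow> None | Some s \<Rightarrow> Some (\<lambda>x. Kphi (pair_b p s) x)))
        (prod_p (star_p (FindWS \<delta>1)) (star_p (Win \<delta>1)))"
    unfolding realizes_def
  proof (intro allI impI)
    fix p assume ne: "prod_p (star_p (FindWS \<delta>1)) (star_p (Win \<delta>1)) p \<noteq> {}"
    interpret s: stp \<delta>1 p using assms(1) ne by unfold_locales
    have "NEap (gamma_full \<delta>1) (Hname p) \<noteq> {}" by (rule s.NE_nonempty)
    then obtain s where gs: "G (Hname p) = Some s" "s \<in> NEap (gamma_full \<delta>1) (Hname p)"
      using G unfolding realizes_def by blast
    have "Kout p s \<in> prod_p (star_p (FindWS \<delta>1)) (star_p (Win \<delta>1)) p" by (rule s.K_correct[OF gs(2)])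
    moreover have "G (\<lambda>x. Hphi p x) = Some s" using gs(1) by (simp add: Hname_Hphi)
    ultimately show "\<exists>q. (case Some (\<lambda>x. Hphi p x) of None \<Rightarrow> None
          | Some r \<Rightarrow> (case G r of None \<Rightarrow> None | Some s \<Rightarrow> Some (\<lambda>x. Kphi (pair_b p s) x))) = Some q
        \<and> q \<in> prod_p (star_p (FindWS \<delta>1)) (star_p (Win \<delta>1)) p"
      by (simp add: Kout_def)
  qed
qed



end
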